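(* Let $\Lambda=(\Delta,R)$ be a gentle bound quiver over an algebraically closed field $k$. If $\|\phi_\Lambda\|=1$, then the global dimension of $\Lambda$ (i.e. of the algebra $k\Delta/\langle R\rangle$, equivalently of $\mathrm{rep}\,\Lambda$) is finite.
   Context: Conventions: a path $\alpha_1\cdots\alpha_l$ ($l\ge1$) in a quiver satisfies $s\alpha_i=t\alpha_{i+1}$; it starts at $s\alpha_l$, terminates at $t\alpha_1$; $\alpha_1$ is its terminating arrow and $\alpha_l$ its starting arrow; for each vertex $x$ there is a trivial path $\mathbf{1}_x$ of length $0$. A bound quiver $(\Delta,R)$: finite quiver without isolated vertices, $R$ a set of paths of length $\ge2$, such that for some $n$ every path of length $n$ contains a subpath in $R$. It is gentle if connected and: $R$ consists of paths of length 2; each vertex is start of at most two arrows and target of at most two arrows; for each arrow $\alpha$ there is at most one arrow $\alpha'$ with $s\alpha'=t\alpha$, $\alpha'\alpha\notin R$ and at most one with $t\alpha'=s\alpha$, $\alpha\alpha'\notin R$; and at most one arrow $\alpha'$ with $s\alpha'=t\alpha$, $\alpha'\alpha\in R$ and at most one with $t\alpha'=s\alpha$, $\alpha\alpha'\in R$. For gentle $\Lambda$: a path in $\Lambda$ is a path $\alpha_1\cdots\alpha_l$ with all $\alpha_i\alpha_{i+1}\notin R$; an antipath is one with all $\alpha_i\alpha_{i+1}\in R$; "maximal" means not a subpath of a longer one. Permitted threads: maximal paths in $\Lambda$, and $\mathbf{1}_x$ for vertices $x$ with at most one outgoing arrow $\alpha$, at most one incoming arrow $\beta$, and $\alpha\beta\notin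 R$ if both exist. Forbidden threads: maximal antipaths, and $\mathbf{1}_x$ for $x$ with at most one outgoing $\alpha$, at most one incoming $\beta$, and $\alpha\beta\in R$ if both exist. Let $\mathcal{P},\mathcal{F}$ be the sets of permitted, forbidden threads. Define $\Phi_1\colon\mathcal{P}\to\mathcal{F}$: for a maximal path $\sigma$, $\Phi_1(\sigma)$ is the unique forbidden thread $\omega$ with $t\omega=t\sigma$ and either $\ell(\omega)=0$ or the terminating arrows of $\sigma,\omega$ differ; for a permitted $\mathbf{1}_x$, if an arrow $\beta$ with $t\beta=x$ exists, $\Phi_1(\mathbf{1}_x)$ is the forbidden thread with terminating arrow $\beta$, else $\Phi_1(\mathbf{1}_x)=\mathbf{1}_x$. Dually $\Phi_2\colon\mathcal{F}\to\mathcal{P}$: for a maximal antipath $\omega$, $\Phi_2(\omega)$ is the permitted thread $\sigma$ with $s\sigma=s\omega$ and either $\ell(\sigma)=0$ or the starting arrows differ; for a forbidden $\mathbf{1}_x$, if an arrow $\alpha$ with $s\alpha=x$ exists, $\Phi_2(\mathbf{1}_x)$ is the permitted thread with starting arrow $\alpha$, else $\mathbf{1}_x$. Put $\Phi=\Phi_1\Phi_2\colon\mathcal{F}\to\mathcal{F}$. Let $\mathcal{F}'$ be the set of arrows not contained in any maximal antipath; for $\alpha\in\mathcal{F}'$ there is a unique $\alpha'\in\mathcal{F}'$ with $\alpha\alpha'\in R$, and $\Phi'(\alpha):=\alpha'$ is a bijection of $\mathcal{F}'$. For an orbit $\mathcal{O}\in\mathcal{F}/\Phi$ put $n_\mathcal{O}=|\mathcal{O}|$,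 $m_\mathcal{O}=\sum_{\omega\in\mathcal{O}}\ell(\omega)$; for $\mathcal{O}\in\mathcal{F}'/\Phi'$ put $n_\mathcal{O}=0$, $m_\mathcal{O}=|\mathcal{O}|$. The Avella-Alaminos–Geiss function is $\phi_\Lambda(n,m)=|\{\mathcal{O}\in\mathcal{F}/\Phi\cup\mathcal{F}'/\Phi': (n_\mathcal{O},m_\mathcal{O})=(n,m)\}|$, and $\|\phi_\Lambda\|:=\sum_{(n,m)\in\mathbb{N}^2}\phi_\Lambda(n,m)$ (which equals $|\mathcal{F}/\Phi|+|\mathcal{F}'/\Phi'|$). *)

theory Defs
  imports "HOL-Computational_Algebra.Polynomial" "Jordan_Normal_Form.Matrix"
begin

record ('v,'a) bquiver =
  verts :: "'v set"
  arrs :: "'a set"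
  src :: "'a \<Rightarrow> 'v"
  tgt :: "'a \<Rightarrow> 'v"
  rels :: "'a list set"

text \<open>A nontrivial path alpha_1 ... alpha_l is the list [alpha_1, ..., alpha_l] with
  src alpha_i = tgt alpha_(i+1); it starts at src alpha_l and terminates at tgt alpha_1.\<close>

definition is_qpath :: "('v,'a,'b) bquiver_scheme \<Rightarrow> 'a list \<Rightarrow> bool" where
  "is_qpath L xs \<longleftrightarrow> xs \<noteq> [] \<and> set xs \<subseteq> arrs L \<and>
     (\<forall>i. Suc i < length xs \<longrightarrow> src L (xs ! i) = tgt L (xs ! Suc i))"

definition is_subpath :: "'a list \<Rightarrow> 'a list \<Rightarrow> bool" where
  "is_subpath xs ys \<longleftrightarrow> (\<exists>ps ss. ys = ps @ xs @ ss)"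

definition bound_quiver :: "('v,'a,'b) bquiver_scheme \<Rightarrow> bool" where
  "bound_quiver L \<longleftrightarrow> finite (verts L) \<and> finite (arrs L) \<and>
     (\<forall>a\<in>arrs L. src L a \<in> verts L \<and> tgt L a \<in> verts L) \<and>
     (\<forall>x\<in>verts L. \<exists>a\<in>arrs L. src L a = x \<or> tgt L a = x) \<and>
     (\<forall>r\<in>rels L. is_qpath L r \<and> length r \<ge> 2) \<and>
     (\<exists>n>0. \<forall>p. is_qpath L p \<and> length p = n \<longrightarrow> (\<exists>r\<in>rels L. is_subpath r p))"

definition quiver_connected :: "('v,'a,'b) bquiver_scheme \<Rightarrow> bool" where
  "quiver_connected L \<longleftrightarrow>
     (let E = {(src L a, tgt L a) | a. a \<in> arrs L} in
      \<forall>x\<in>verts L. \<forall>y\<in>verts L. (x, y) \<in> (E \<union> E\<inverse>)\<^sup>*)"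

definition gentle :: "('v,'a,'b) bquiver_scheme \<Rightarrow> bool" where
  "gentle L \<longleftrightarrow> bound_quiver L \<and> quiver_connected L \<and>
     (\<forall>r\<in>rels L. length r = 2) \<and>
     (\<forall>x\<in>verts L. card {a\<in>arrs L. src L a = x} \<le> 2 \<and> card {a\<in>arrs L. tgt L a = x} \<le> 2) \<and>
     (\<forall>a\<in>arrs L.
        card {b\<in>arrs L. src L b = tgt L a \<and> [b, a] \<notin> rels L} \<le> 1 \<and>
        card {b\<in>arrs L. tgt L b = src L a \<and> [a, b] \<notin> rels L} \<le> 1 \<and>
        card {b\<in>arrs L. src L b = tgt L a \<and> [b, a] \<in> rels L} \<le> 1 \<and>
        card {b\<in>arrs L. tgt L b = src L a \<and> [a, b] \<in> rels L} \<le> 1)"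

definition Lpath :: "('v,'a,'b) bquiver_scheme \<Rightarrow> 'a list \<Rightarrow> bool" where
  "Lpath L xs \<longleftrightarrow> is_qpath L xs \<and>
     (\<forall>i. Suc i < length xs \<longrightarrow> [xs ! i, xs ! Suc i] \<notin> rels L)"

definition Lantipath :: "('v,'a,'b) bquiver_scheme \<Rightarrow> 'a list \<Rightarrow> bool" where
  "Lantipath L xs \<longleftrightarrow> is_qpath L xs \<and>
     (\<forall>i. Suc i < length xs \<longrightarrow> [xs ! i, xs ! Suc i] \<in> rels L)"

definition max_path :: "('v,'a,'b) bquiver_scheme \<Rightarrow> 'a list \<Rightarrow> bool" where
  "max_path L xs \<longleftrightarrow> Lpath L xs \<and> \<not> (\<exists>ys. Lpath L ys \<and> is_subpath xs ys \<and> ys \<noteq> xs)"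

definition max_antipath :: "('v,'a,'b) bquiver_scheme \<Rightarrow> 'a list \<Rightarrow> bool" where
  "max_antipath L xs \<longleftrightarrow> Lantipath L xs \<and> \<not> (\<exists>ys. Lantipath L ys \<and> is_subpath xs ys \<and> ys \<noteq> xs)"

datatype ('v,'a) thread = Triv 'v | Nontriv "'a list"

fun thr_tgt :: "('v,'a,'b) bquiver_scheme \<Rightarrow> ('v,'a) thread \<Rightarrow> 'v" where
  "thr_tgt L (Triv x) = x"
| "thr_tgt L (Nontriv xs) = tgt L (hd xs)"

fun thr_src :: "('v,'a,'b) bquiver_scheme \<Rightarrow> ('v,'a) thread \<Rightarrow> 'v" where
  "thr_src L (Triv x) = x"
| "thr_src L (Nontriv xs) = src L (last xs)"

definition permitted :: "('v,'a,'b) bquiver_scheme \<Rightarrow> ('v,'a) thread set" where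
  "permitted L = {Nontriv xs | xs. max_path L xs} \<union>
     {Triv x | x. x \<in> verts L \<and> card {a\<in>arrs L. src L a = x} \<le> 1 \<and> card {b\<in>arrs L. tgt L b = x} \<le> 1 \<and>
        (\<forall>a\<in>arrs L. \<forall>b\<in>arrs L. src L a = x \<and> tgt L b = x \<longrightarrow> [a, b] \<notin> rels L)}"

definition forbidden :: "('v,'a,'b) bquiver_scheme \<Rightarrow> ('v,'a) thread set" where
  "forbidden L = {Nontriv xs | xs. max_antipath L xs} \<union>
     {Triv x | x. x \<in> verts L \<and> card {a\<in>arrs L. src L a = x} \<le> 1 \<and> card {b\<in>arrs L. tgt L b = x} \<le> 1 \<and>
        (\<forall>a\<in>arrs L. \<forall>b\<in>arrs L. src L a = x \<and> tgt L b = x \<longrightarrow> [a, b] \<in> rels L)}"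

definition Phi1 :: "('v,'a,'b) bquiver_scheme \<Rightarrow> ('v,'a) thread \<Rightarrow> ('v,'a) thread" where
  "Phi1 L \<sigma> = (case \<sigma> of
      Nontriv xs \<Rightarrow> (THE \<omega>. \<omega> \<in> forbidden L \<and> thr_tgt L \<omega> = tgt L (hd xs) \<and>
                        (case \<omega> of Triv _ \<Rightarrow> True | Nontriv ys \<Rightarrow> hd ys \<noteq> hd xs))
    | Triv x \<Rightarrow> (if \<exists>b\<in>arrs L. tgt L b = x
                 then (THE \<omega>. \<omega> \<in> forbidden L \<and>
                        (\<exists>ys. \<omega> = Nontriv ys \<and> hd ys = (THE b. b \<in> arrs L \<and> tgt L b = x)))
                 else Triv x))"

definition Phi2 :: "('v,'a,'b) bquiver_scheme \<Rightarrow> ('v,'a) thread \<Rightarrow> ('v,'a) thread" where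
  "Phi2 L \<omega> = (case \<omega> of
      Nontriv xs \<Rightarrow> (THE \<sigma>. \<sigma> \<in> permitted L \<and> thr_src L \<sigma> = src L (last xs) \<and>
                        (case \<sigma> of Triv _ \<Rightarrow> True | Nontriv ys \<Rightarrow> last ys \<noteq> last xs))
    | Triv x \<Rightarrow> (if \<exists>a\<in>arrs L. src L a = x
                 then (THE \<sigma>. \<sigma> \<in> permitted L \<and>
                        (\<exists>ys. \<sigma> = Nontriv ys \<and> last ys = (THE a. a \<in> arrs L \<and> src L a = x)))
                 else Triv x))"

definition Phi :: "('v,'a,'b) bquiver_scheme \<Rightarrow> ('v,'a) thread \<Rightarrow> ('v,'a) thread" where
  "Phi L = Phi1 L \<circ> Phi2 L"

definition Fprime :: "('v,'a,'b) bquiver_scheme \<Rightarrow> 'a set" where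
  "Fprime L = {a \<in> arrs L. \<not> (\<exists>xs. max_antipath L xs \<and> a \<in> set xs)}"

definition Phi' :: "('v,'a,'b) bquiver_scheme \<Rightarrow> 'a \<Rightarrow> 'a" where
  "Phi' L a = (THE a'. a' \<in> Fprime L \<and> [a, a'] \<in> rels L)"

definition orbits :: "('c \<Rightarrow> 'c) \<Rightarrow> 'c set \<Rightarrow> 'c set set" where
  "orbits f A = (\<lambda>x. {(f ^^ n) x | n. True}) ` A"

text \<open>The norm of the Avella-Alaminos--Geiss function: number of orbits of Phi on
  forbidden threads plus number of orbits of Phi' on F'.\<close>
definition AG_norm :: "('v,'a,'b) bquiver_scheme \<Rightarrow> nat" where
  "AG_norm L = card (orbits (Phi L) (forbidden L)) + card (orbits (Phi' L) (Fprime L))"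

text \<open>A representation: dimension vector d and a matrix for each arrow
  (vector space at vertex x is 'k^(d x)).\<close>
type_synonym ('v,'a,'k) qrep = "('v \<Rightarrow> nat) \<times> ('a \<Rightarrow> 'k mat)"

fun comp_path :: "('a \<Rightarrow> 'k::semiring_1 mat) \<Rightarrow> 'a list \<Rightarrow> 'k mat" where
  "comp_path m [] = 1\<^sub>m 0"
| "comp_path m [a] = m a"
| "comp_path m (a # b # as) = m a * comp_path m (b # as)"

definition is_rep :: "('v,'a,'b) bquiver_scheme \<Rightarrow> ('v,'a,'k::field) qrep \<Rightarrow> bool" where
  "is_rep L M \<longleftrightarrow>
     (\<forall>a\<in>arrs L. snd M a \<in> carrier_mat (fst M (tgt L a)) (fst M (src L a))) \<and>
     (\<forall>r\<in>rels L. comp_path (snd M) r = 0\<^sub>m (fst M (tgt L (hd r))) (fst M (src L (last r))))"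

definition is_hom :: "('v,'a,'b) bquiver_scheme \<Rightarrow> ('v,'a,'k::field) qrep \<Rightarrow> ('v,'a,'k) qrep
    \<Rightarrow> ('v \<Rightarrow> 'k mat) \<Rightarrow> bool" where
  "is_hom L M N f \<longleftrightarrow>
     (\<forall>x\<in>verts L. f x \<in> carrier_mat (fst N x) (fst M x)) \<and>
     (\<forall>a\<in>arrs L. f (tgt L a) * snd M a = snd N a * f (src L a))"

definition surj_hom :: "('v,'a,'b) bquiver_scheme \<Rightarrow> ('v,'a,'k::field) qrep \<Rightarrow> ('v,'a,'k) qrep
    \<Rightarrow> ('v \<Rightarrow> 'k mat) \<Rightarrow> bool" where
  "surj_hom L M N f \<longleftrightarrow> is_hom L M N f \<and>
     (\<forall>x\<in>verts L. \<forall>w\<in>carrier_vec (fst N x). \<exists>v\<in>carrier_vec (fst M x). f x *\<^sub>v v = w)"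

definition inj_hom :: "('v,'a,'b) bquiver_scheme \<Rightarrow> ('v,'a,'k::field) qrep \<Rightarrow> ('v,'a,'k) qrep
    \<Rightarrow> ('v \<Rightarrow> 'k mat) \<Rightarrow> bool" where
  "inj_hom L M N f \<longleftrightarrow> is_hom L M N f \<and>
     (\<forall>x\<in>verts L. \<forall>v\<in>carrier_vec (fst M x). f x *\<^sub>v v = 0\<^sub>v (fst N x) \<longrightarrow> v = 0\<^sub>v (fst M x))"

definition exact_at :: "('v,'a,'b) bquiver_scheme \<Rightarrow> ('v,'a,'k::field) qrep \<Rightarrow> ('v,'a,'k) qrep
    \<Rightarrow> ('v,'a,'k) qrep \<Rightarrow> ('v \<Rightarrow> 'k mat) \<Rightarrow> ('v \<Rightarrow> 'k mat) \<Rightarrow> bool" where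
  "exact_at L A B C f g \<longleftrightarrow>
     (\<forall>x\<in>verts L. \<forall>v\<in>carrier_vec (fst B x).
        g x *\<^sub>v v = 0\<^sub>v (fst C x) \<longleftrightarrow> (\<exists>u\<in>carrier_vec (fst A x). f x *\<^sub>v u = v))"

definition projective_rep :: "('v,'a,'b) bquiver_scheme \<Rightarrow> ('v,'a,'k::field) qrep \<Rightarrow> bool" where
  "projective_rep L P \<longleftrightarrow> is_rep L P \<and>
     (\<forall>X Y g f. is_rep L X \<and> is_rep L Y \<and> surj_hom L X Y g \<and> is_hom L P Y f \<longrightarrow>
        (\<exists>h. is_hom L P X h \<and> (\<forall>x\<in>verts L. g x * h x = f x)))"

definition pd_le :: "('v,'a,'b) bquiver_scheme \<Rightarrow> ('v,'a,'k::field) qrep \<Rightarrow> nat \<Rightarrow> bool" where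
  "pd_le L M n \<longleftrightarrow> (\<exists>(P :: nat \<Rightarrow> ('v,'a,'k) qrep) dd \<epsilon>.
     (\<forall>i\<le>n. projective_rep L (P i)) \<and>
     surj_hom L (P 0) M \<epsilon> \<and>
     (\<forall>i. 1 \<le> i \<and> i \<le> n \<longrightarrow> is_hom L (P i) (P (i - 1)) (dd i)) \<and>
     (if n = 0 then inj_hom L (P 0) M \<epsilon>
      else inj_hom L (P n) (P (n - 1)) (dd n) \<and>
           exact_at L (P 1) (P 0) M (dd 1) \<epsilon> \<and>
           (\<forall>i. 1 \<le> i \<and> i < n \<longrightarrow> exact_at L (P (i + 1)) (P i) (P (i - 1)) (dd (i + 1)) (dd i))))"

definition finite_gldim :: "('v,'a,'b) bquiver_scheme \<Rightarrow> 'k::field itself \<Rightarrow> bool" where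
  "finite_gldim L K \<longleftrightarrow> (\<exists>n. \<forall>M :: ('v,'a,'k) qrep. is_rep L M \<longrightarrow> pd_le L M n)"

definition alg_closed :: "'k::field itself \<Rightarrow> bool" where
  "alg_closed K \<longleftrightarrow> (\<forall>p :: 'k poly. degree p \<ge> 1 \<longrightarrow> (\<exists>x. poly p x = 0))"

end

theory Submission
  imports Defs
begin

section \<open>Combinatorics of gentle quivers\<close>

lemma gentle_bq: "gentle L \<Longrightarrow> bound_quiver L" by (simp add: gentle_def)

lemma gentle_finite_arrs: "gentle L \<Longrightarrow> finite (arrs L)"
  by (simp add: gentle_def bound_quiver_def)

lemma rel_shape:
  assumes "gentle L" "r \<in> rels L"
  shows "\<exists>a b. r = [a,b] \<and> a \<in> arrs L \<and> b \<in> arrs L \<and> src L a = tgt L b"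
proof -
  have "is_qpath L r" "length r = 2" using assms by (auto simp: gentle_def bound_quiver_def)
  then obtain a b where "r = [a,b]" by (auto simp: numeral_2_eq_2 length_Suc_conv)
  then show ?thesis using \<open>is_qpath L r\<close> by (auto simp: is_qpath_def)
qed

lemma rel_arrs:
  assumes "gentle L" "[a,b] \<in> rels L"
  shows "a \<in> arrs L" "b \<in> arrs L" "src L a = tgt L b"
  using rel_shape[OF assms] by auto

lemma card_le1_eq:
  assumes "card S \<le> 1" "finite S" "x \<in> S" "y \<in> S"
  shows "x = y"
  using assms by (metis card_le_Suc0_iff_eq One_nat_def)

lemma rsucc_unique:
  assumes g: "gentle L" and r1: "[a,b] \<in> rels L" and r2: "[a,c] \<in> rels L"
  shows "b = c"
proof -
  let ?S = "{b\<in>arrs L. tgt L b = src L a \<and> [a, b] \<in> rels L}"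
  have a: "a \<in> arrs L" using rel_arrs[OF g r1] by simp
  have "card ?S \<le> 1" using g a unfolding gentle_def by blast
  moreover have "finite ?S" using gentle_finite_arrs[OF g] by simp
  moreover have "b \<in> ?S" using rel_arrs(2,3)[OF g r1] r1 by simp
  moreover have "c \<in> ?S" using rel_arrs(2,3)[OF g r2] r2 by simp
  ultimately show ?thesis by (rule card_le1_eq)
qed

lemma rpred_unique:
  assumes g: "gentle L" and r1: "[b,a] \<in> rels L" and r2: "[c,a] \<in> rels L"
  shows "b = c"
proof -
  let ?S = "{b\<in>arrs L. src L b = tgt L a \<and> [b, a] \<in> rels L}"
  have a: "a \<in> arrs L" using rel_arrs[OF g r1] by simp
  have "card ?S \<le> 1" using g a unfolding gentle_def by blast
  moreover have "finite ?S" using gentle_finite_arrs[OF g] by simp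
  moreover have "b \<in> ?S" using rel_arrs(1,3)[OF g r1] r1 by simp
  moreover have "c \<in> ?S" using rel_arrs(1,3)[OF g r2] r2 by simp
  ultimately show ?thesis by (rule card_le1_eq)
qed

lemma antipath_rel:
  "Lantipath L xs \<Longrightarrow> Suc i < length xs \<Longrightarrow> [xs!i, xs!Suc i] \<in> rels L"
  by (simp add: Lantipath_def)

lemma antipath_shift:
  assumes g: "gentle L" and ap: "Lantipath L xs" and ij: "i < j" and eq: "xs!i = xs!j"
  shows "j + t < length xs \<Longrightarrow> xs!(i+t) = xs!(j+t)"
proof (induction t)
  case 0 then show ?case using eq by simp
next
  case (Suc t)
  then have IH: "xs!(i+t) = xs!(j+t)" by simp
  have "[xs!(i+t), xs!Suc (i+t)] \<in> rels L" using antipath_rel[OF ap] Suc.prems ij by simp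
  moreover have "[xs!(j+t), xs!Suc (j+t)] \<in> rels L" using antipath_rel[OF ap] Suc.prems by simp
  ultimately show ?case using rsucc_unique[OF g] IH by simp
qed

lemma antipath_snoc:
  assumes g: "gentle L" and ap: "Lantipath L xs" and r: "[last xs, b] \<in> rels L"
  shows "Lantipath L (xs @ [b])"
proof -
  have ne: "xs \<noteq> []" using ap by (simp add: Lantipath_def is_qpath_def)
  have b: "b \<in> arrs L" "src L (last xs) = tgt L b" using rel_arrs[OF g r] by auto
  have last: "xs ! (length xs - 1) = last xs" using ne by (simp add: last_conv_nth)
  show ?thesis
    unfolding Lantipath_def is_qpath_def
  proof (intro conjI allI impI)
    show "xs @ [b] \<noteq> []" by simp
    show "set (xs @ [b]) \<subseteq> arrs L" using ap b by (auto simp: Lantipath_def is_qpath_def)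
    fix i assume i: "Suc i < length (xs @ [b])"
    show "src L ((xs @ [b]) ! i) = tgt L ((xs @ [b]) ! Suc i)"
    proof (cases "Suc i < length xs")
      case True then show ?thesis using ap by (simp add: nth_append Lantipath_def is_qpath_def)
    next
      case False then have "i = length xs - 1" using i by simp
      then show ?thesis using b last ne by (simp add: nth_append)
    qed
    show "[(xs @ [b]) ! i, (xs @ [b]) ! Suc i] \<in> rels L"
    proof (cases "Suc i < length xs")
      case True then show ?thesis using ap by (simp add: nth_append Lantipath_def)
    next
      case False then have "i = length xs - 1" using i by simp
      then show ?thesis using r last ne by (simp add: nth_append)
    qed
  qed
qed

lemma not_distinct_conv:
  assumes "\<not> distinct xs"
  shows "\<exists>i j. i < j \<and> j < length xs \<and> xs!i = xs!j"
  using assms by (metis distinct_conv_nth linorder_neqE_nat)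

lemma antipath_repeat_ext:
  assumes g: "gentle L" and ap: "Lantipath L xs" and nd: "\<not> distinct xs"
  shows "\<exists>b. [last xs, b] \<in> rels L"
proof -
  obtain i j where ij: "i < j" "j < length xs" "xs!i = xs!j" using not_distinct_conv[OF nd] by blast
  let ?n = "length xs"
  have sh: "xs!(i + (?n - 1 - j)) = xs!(j + (?n - 1 - j))"
    using antipath_shift[OF g ap ij(1) ij(3), of "?n - 1 - j"] ij by simp
  have e1: "j + (?n - 1 - j) = ?n - 1" using ij by simp
  have "xs \<noteq> []" using ij by auto
  then have lst: "last xs = xs!(?n - 1)" by (simp add: last_conv_nth)
  have "Suc (i + (?n - 1 - j)) < ?n" using ij by simp
  then have "[xs!(i + (?n - 1 - j)), xs!Suc (i + (?n - 1 - j))] \<in> rels L"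
    using antipath_rel[OF ap] by blast
  then show ?thesis using sh e1 lst by auto
qed

lemma max_antipath_distinct:
  assumes g: "gentle L" and m: "max_antipath L xs"
  shows "distinct xs"
proof (rule ccontr)
  assume nd: "\<not> distinct xs"
  have ap: "Lantipath L xs" using m by (simp add: max_antipath_def)
  obtain b where b: "[last xs, b] \<in> rels L" using antipath_repeat_ext[OF g ap nd] by blast
  have "Lantipath L (xs @ [b])" by (rule antipath_snoc[OF g ap b])
  moreover have "is_subpath xs (xs @ [b])" unfolding is_subpath_def by (rule exI[of _ "[]"]) auto
  ultimately show False using m by (auto simp: max_antipath_def)
qed

lemma antipath_arrs: "Lantipath L xs \<Longrightarrow> set xs \<subseteq> arrs L"
  by (simp add: Lantipath_def is_qpath_def)

lemma max_antipath_length: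
  assumes g: "gentle L" and m: "max_antipath L xs"
  shows "length xs \<le> card (arrs L)"
proof -
  have "distinct xs" by (rule max_antipath_distinct[OF g m])
  then have "length xs = card (set xs)" by (simp add: distinct_card)
  also have "\<dots> \<le> card (arrs L)"
    using antipath_arrs[of L xs] m gentle_finite_arrs[OF g] by (intro card_mono) (auto simp: max_antipath_def)
  finally show ?thesis .
qed

lemma antipath_bounded:
  assumes g: "gentle L" and F: "Fprime L = {}" and ap: "Lantipath L xs"
  shows "length xs \<le> card (arrs L)"
proof -
  have ne: "xs \<noteq> []" using ap by (simp add: Lantipath_def is_qpath_def)
  have a: "xs!0 \<in> arrs L" using antipath_arrs[OF ap] ne by auto
  then obtain ys where ys: "max_antipath L ys" "xs!0 \<in> set ys" using F unfolding Fprime_def by blast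
  then obtain k where k: "k < length ys" "ys!k = xs!0" by (metis in_set_conv_nth)
  have apy: "Lantipath L ys" using ys by (simp add: max_antipath_def)
  have claim: "t < length xs \<Longrightarrow> k + t < length ys \<and> ys!(k+t) = xs!t" for t
  proof (induction t)
    case 0 then show ?case using k by simp
  next
    case (Suc t)
    then have IH: "k + t < length ys" "ys!(k+t) = xs!t" by auto
    have rx: "[xs!t, xs!Suc t] \<in> rels L" using antipath_rel[OF ap] Suc.prems by simp
    show ?case
    proof (cases "Suc (k+t) < length ys")
      case True
      then have "[ys!(k+t), ys!Suc (k+t)] \<in> rels L" using antipath_rel[OF apy] by simp
      then have "ys!Suc (k+t) = xs!Suc t" using rsucc_unique[OF g] rx IH by metis
      then show ?thesis using True by simp
    next
      case False
      then have "k + t = length ys - 1" using IH by simp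
      then have "last ys = xs!t" using IH by (metis last_conv_nth list.size(3) not_less_zero)
      then have "Lantipath L (ys @ [xs!Suc t])" using antipath_snoc[OF g apy] rx by simp
      moreover have "is_subpath ys (ys @ [xs!Suc t])" unfolding is_subpath_def by (rule exI[of _ "[]"]) auto
      ultimately show ?thesis using ys(1) by (auto simp: max_antipath_def)
    qed
  qed
  have "k + (length xs - 1) < length ys" using claim[of "length xs - 1"] ne by simp
  then have "length xs \<le> length ys" by simp
  also have "\<dots> \<le> card (arrs L)" by (rule max_antipath_length[OF g ys(1)])
  finally show ?thesis .
qed

lemma forbidden_finite:
  assumes g: "gentle L"
  shows "finite (forbidden L)"
proof -
  have fa: "finite (arrs L)" using g by (rule gentle_finite_arrs)
  have fv: "finite (verts L)" using g by (simp add: gentle_def bound_quiver_def)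
  have "{Nontriv xs | xs. max_antipath L xs} \<subseteq> Nontriv ` {xs. set xs \<subseteq> arrs L \<and> length xs \<le> card (arrs L)}"
  proof
    fix t assume "t \<in> {Nontriv xs | xs. max_antipath L xs}"
    then obtain xs where xs: "t = Nontriv xs" "max_antipath L xs" by blast
    have "set xs \<subseteq> arrs L" using xs(2) antipath_arrs by (auto simp: max_antipath_def)
    moreover have "length xs \<le> card (arrs L)" by (rule max_antipath_length[OF g xs(2)])
    ultimately show "t \<in> Nontriv ` {xs. set xs \<subseteq> arrs L \<and> length xs \<le> card (arrs L)}"
      using xs(1) by blast
  qed
  moreover have "finite (Nontriv ` {xs. set xs \<subseteq> arrs L \<and> length xs \<le> card (arrs L)})"
    using finite_lists_length_le[OF fa] by simp
  ultimately have f1: "finite {Nontriv xs | xs. max_antipath L xs}" by (rule finite_subset)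
  have "{Triv x | x. x \<in> verts L \<and> card {a\<in>arrs L. src L a = x} \<le> 1 \<and> card {b\<in>arrs L. tgt L b = x} \<le> 1 \<and>
        (\<forall>a\<in>arrs L. \<forall>b\<in>arrs L. src L a = x \<and> tgt L b = x \<longrightarrow> [a, b] \<in> rels L)} \<subseteq> Triv ` verts L"
    by auto
  from finite_subset[OF this finite_imageI[OF fv]] have f2: "finite {Triv x | x. x \<in> verts L \<and> card {a\<in>arrs L. src L a = x} \<le> 1 \<and> card {b\<in>arrs L. tgt L b = x} \<le> 1 \<and>
        (\<forall>a\<in>arrs L. \<forall>b\<in>arrs L. src L a = x \<and> tgt L b = x \<longrightarrow> [a, b] \<in> rels L)}" .
  show ?thesis unfolding forbidden_def using f1 f2 by simp
qed


lemma consec_in_append: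
  assumes "ss \<noteq> []" "xs \<noteq> []"
  shows "(ps @ xs @ ss) ! (length ps + length xs - 1) = last xs"
    "(ps @ xs @ ss) ! Suc (length ps + length xs - 1) = hd ss"
proof -
  have l: "length xs > 0" using assms by simp
  have nl: "\<not> (length ps + length xs - 1 < length ps)" using l by arith
  have "(ps @ xs @ ss) ! (length ps + length xs - 1) = (xs @ ss) ! (length xs - 1)"
    using nl l by (simp add: nth_append)
  also have "\<dots> = last xs" using l assms by (simp add: nth_append last_conv_nth)
  finally show "(ps @ xs @ ss) ! (length ps + length xs - 1) = last xs" .
  show "(ps @ xs @ ss) ! Suc (length ps + length xs - 1) = hd ss"
    using l assms by (simp add: nth_append hd_conv_nth)
qed

lemma rsucc_exists:
  assumes g: "gentle L" and nomax: "\<And>xs. \<not> max_antipath L xs" and a: "a \<in> arrs L"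
  shows "\<exists>b. [a,b] \<in> rels L"
proof (rule ccontr)
  assume nb: "\<not> (\<exists>b. [a,b] \<in> rels L)"
  let ?AE = "{xs. Lantipath L xs \<and> last xs = a}"
  show False
  proof (cases "\<exists>xs\<in>?AE. length xs > card (arrs L)")
    case True
    then obtain xs where xs: "Lantipath L xs" "last xs = a" "length xs > card (arrs L)" by auto
    have "\<not> distinct xs"
    proof
      assume "distinct xs"
      then have "length xs = card (set xs)" by (simp add: distinct_card)
      also have "\<dots> \<le> card (arrs L)" using antipath_arrs[OF xs(1)] gentle_finite_arrs[OF g] by (rule card_mono[rotated])
      finally show False using xs(3) by simp
    qed
    then show False using antipath_repeat_ext[OF g xs(1)] xs(2) nb by auto
  next
    case False
    have a1: "[a] \<in> ?AE" using a by (simp add: Lantipath_def is_qpath_def)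
    obtain xs where xs: "xs \<in> ?AE" and mx: "\<forall>ys. ys \<in> ?AE \<longrightarrow> length ys \<le> length xs"
      using ex_has_greatest_nat[of "\<lambda>xs. xs \<in> ?AE" "[a]" length "Suc (card (arrs L))"] a1 False
      by (auto simp: not_less less_Suc_eq_le)
    have "max_antipath L xs"
      unfolding max_antipath_def
    proof (intro conjI notI)
      show "Lantipath L xs" using xs by simp
      assume "\<exists>ys. Lantipath L ys \<and> is_subpath xs ys \<and> ys \<noteq> xs"
      then obtain ys ps ss where ys: "Lantipath L ys" "ys = ps @ xs @ ss" "ys \<noteq> xs"
        by (auto simp: is_subpath_def)
      have xne: "xs \<noteq> []" using xs by (simp add: Lantipath_def is_qpath_def)
      show False
      proof (cases "ss = []")
        case False
        have "Suc (length ps + length xs - 1) < length ys" using ys(2) False xne by (simp add: length_greater_0_conv)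
        then have "[ys ! (length ps + length xs - 1), ys ! Suc (length ps + length xs - 1)] \<in> rels L"
          using antipath_rel[OF ys(1)] by blast
        then show False using consec_in_append[OF False xne, of ps] ys(2) xs nb by auto
      next
        case True
        then have "ps \<noteq> []" using ys by auto
        moreover have "last ys = a" using True ys(2) xs xne by simp
        then have "length ys \<le> length xs" using mx ys(1) by auto
        ultimately show False using ys(2) True by simp
      qed
    qed
    then show False using nomax by blast
  qed
qed

lemma Lpath_pred_exists:
  assumes g: "gentle L" and nofb: "forbidden L = {}" and al: "\<alpha> \<in> arrs L"
  shows "\<exists>\<gamma>\<in>arrs L. tgt L \<gamma> = src L \<alpha> \<and> [\<alpha>,\<gamma>] \<notin> rels L"
proof (rule ccontr)
  assume H: "\<not> ?thesis"
  then have H': "\<And>\<gamma>. \<gamma>\<in>arrs L \<Longrightarrow> tgt L \<gamma> = src L \<alpha> \<Longrightarrow> [\<alpha>,\<gamma>] \<in> rels L" by blast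
  have nomax: "\<And>xs. \<not> max_antipath L xs" using nofb unfolding forbidden_def by blast
  let ?y = "src L \<alpha>"
  have fa: "finite (arrs L)" using g by (rule gentle_finite_arrs)
  have y: "?y \<in> verts L" using g al by (simp add: gentle_def bound_quiver_def)
  have cin: "card {b\<in>arrs L. tgt L b = ?y} \<le> 1"
  proof -
    have sub: "{b\<in>arrs L. tgt L b = ?y} \<subseteq> {b\<in>arrs L. tgt L b = src L \<alpha> \<and> [\<alpha>, b] \<in> rels L}" using H' by auto
    have c: "card {b\<in>arrs L. tgt L b = src L \<alpha> \<and> [\<alpha>, b] \<in> rels L} \<le> 1" using g al unfolding gentle_def by blast
    have fin: "finite {b\<in>arrs L. tgt L b = src L \<alpha> \<and> [\<alpha>, b] \<in> rels L}" using fa by simp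
    from card_mono[OF fin sub] c show ?thesis by linarith
  qed
  obtain \<gamma>0 where r0: "[\<alpha>,\<gamma>0] \<in> rels L" using rsucc_exists[OF g nomax al] by blast
  have cout: "card {a\<in>arrs L. src L a = ?y} \<le> 1"
  proof -
    have "{a\<in>arrs L. src L a = ?y} \<subseteq> {\<alpha>}"
    proof
      fix a' assume a': "a' \<in> {a\<in>arrs L. src L a = ?y}"
      obtain \<gamma>' where r': "[a',\<gamma>'] \<in> rels L" using rsucc_exists[OF g nomax] a' by blast
      have "\<gamma>' \<in> {b\<in>arrs L. tgt L b = ?y}" "\<gamma>0 \<in> {b\<in>arrs L. tgt L b = ?y}"
        using rel_arrs[OF g r'] rel_arrs[OF g r0] a' by auto
      then have "\<gamma>' = \<gamma>0" using card_le1_eq[OF cin] fa by auto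
      then show "a' \<in> {\<alpha>}" using rpred_unique[OF g r' ] r0 by auto
    qed
    then show ?thesis by (metis card.empty card.insert card_mono empty_iff finite.emptyI finite.insertI le_0_eq le_SucE One_nat_def)
  qed
  have rel: "\<forall>a\<in>arrs L. \<forall>b\<in>arrs L. src L a = ?y \<and> tgt L b = ?y \<longrightarrow> [a, b] \<in> rels L"
  proof (intro ballI impI)
    fix a b assume ab: "a \<in> arrs L" "b \<in> arrs L" "src L a = ?y \<and> tgt L b = ?y"
    have "a \<in> {a\<in>arrs L. src L a = ?y}" "\<alpha> \<in> {a\<in>arrs L. src L a = ?y}" using ab al by auto
    then have "a = \<alpha>" using card_le1_eq[OF cout] fa by auto
    then show "[a,b] \<in> rels L" using H' ab by auto
  qed
  have "Triv ?y \<in> forbidden L" unfolding forbidden_def using y cin cout rel by blast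
  then show False using nofb by simp
qed

lemma forbidden_nonempty:
  assumes g: "gentle L" and ne: "arrs L \<noteq> {}"
  shows "forbidden L \<noteq> {}"
proof
  assume nofb: "forbidden L = {}"
  define f where "f \<alpha> = (SOME \<gamma>. \<gamma>\<in>arrs L \<and> tgt L \<gamma> = src L \<alpha> \<and> [\<alpha>,\<gamma>] \<notin> rels L)" for \<alpha>
  have f: "\<And>\<alpha>. \<alpha> \<in> arrs L \<Longrightarrow> f \<alpha> \<in> arrs L \<and> tgt L (f \<alpha>) = src L \<alpha> \<and> [\<alpha>, f \<alpha>] \<notin> rels L"
  proof -
    fix \<alpha> assume "\<alpha> \<in> arrs L"
    then have "\<exists>\<gamma>. \<gamma>\<in>arrs L \<and> tgt L \<gamma> = src L \<alpha> \<and> [\<alpha>,\<gamma>] \<notin> rels L"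
      using Lpath_pred_exists[OF g nofb] by blast
    then show "f \<alpha> \<in> arrs L \<and> tgt L (f \<alpha>) = src L \<alpha> \<and> [\<alpha>, f \<alpha>] \<notin> rels L"
      unfolding f_def by (rule someI_ex)
  qed
  obtain a0 where a0: "a0 \<in> arrs L" using ne by blast
  have fk: "(f ^^ k) a0 \<in> arrs L" for k by (induction k) (auto simp: a0 f)
  obtain n where n: "n > 0" "\<forall>p. is_qpath L p \<and> length p = n \<longrightarrow> (\<exists>r\<in>rels L. is_subpath r p)"
    using g by (auto simp: gentle_def bound_quiver_def)
  define p where "p = map (\<lambda>k. (f ^^ k) a0) [0..<n]"
  have pn: "length p = n" by (simp add: p_def)
  have pi: "\<And>i. i < n \<Longrightarrow> p ! i = (f ^^ i) a0" by (simp add: p_def)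
  have qp: "is_qpath L p"
    unfolding is_qpath_def using n(1) fk f by (auto simp: p_def)
  then obtain r where r: "r \<in> rels L" "is_subpath r p" using n pn by blast
  obtain u v where uv: "r = [u,v]" using rel_shape[OF g r(1)] by blast
  obtain ps ss where pss: "p = ps @ [u,v] @ ss" using r(2) uv by (auto simp: is_subpath_def)
  let ?i = "length ps"
  have i: "Suc ?i < n" using pss pn by simp
  have "p ! ?i = u" "p ! Suc ?i = v" using pss by (auto simp: nth_append)
  then have "u = (f ^^ ?i) a0" "v = f ((f ^^ ?i) a0)" using pi i by auto
  then show False using f[OF fk[of ?i]] r(1) uv by simp
qed

theorem AG_bounded:
  assumes g: "gentle L" and ag: "AG_norm L = 1"
  shows "\<And>xs. Lantipath L xs \<Longrightarrow> length xs \<le> card (arrs L)"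
proof -
  have "Fprime L = {}"
  proof (rule ccontr)
    assume ne: "Fprime L \<noteq> {}"
    have fF: "finite (Fprime L)" using gentle_finite_arrs[OF g] by (simp add: Fprime_def)
    have "arrs L \<noteq> {}" using ne by (auto simp: Fprime_def)
    then have "forbidden L \<noteq> {}" by (rule forbidden_nonempty[OF g])
    moreover have "finite (forbidden L)" by (rule forbidden_finite[OF g])
    ultimately have c1: "card (orbits (Phi L) (forbidden L)) \<ge> 1"
      unfolding orbits_def by (simp add: Suc_le_eq card_gt_0_iff)
    have c2: "card (orbits (Phi' L) (Fprime L)) \<ge> 1"
      unfolding orbits_def using ne fF by (simp add: Suc_le_eq card_gt_0_iff)
    show False using c1 c2 ag by (simp add: AG_norm_def)
  qed
  then show "\<And>xs. Lantipath L xs \<Longrightarrow> length xs \<le> card (arrs L)" using antipath_bounded[OF g] by blast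
qed


definition mkl :: "'c list \<Rightarrow> 'b list \<Rightarrow> ('c \<Rightarrow> 'b \<Rightarrow> 'k::comm_ring_1) \<Rightarrow> 'k mat" where
  "mkl cs bs K = mat (length cs) (length bs) (\<lambda>(r,s). K (cs!r) (bs!s))"

definition vecf :: "'b list \<Rightarrow> ('b \<Rightarrow> 'k::comm_ring_1) \<Rightarrow> 'k vec" where
  "vecf bs \<phi> = vec (length bs) (\<lambda>r. \<phi> (bs!r))"

lemma mkl_carrier[simp]: "mkl cs bs K \<in> carrier_mat (length cs) (length bs)"
  by (simp add: mkl_def)

lemma mkl_dims[simp]: "dim_row (mkl cs bs K) = length cs" "dim_col (mkl cs bs K) = length bs"
  by (simp_all add: mkl_def)

lemma vecf_carrier[simp]: "vecf bs f \<in> carrier_vec (length bs)" "dim_vec (vecf bs f) = length bs"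
  unfolding vecf_def by (rule vec_carrier, rule dim_vec)

lemma mkl_carrier'[simp]: "length cs = n \<Longrightarrow> length bs = m \<Longrightarrow> mkl cs bs K \<in> carrier_mat n m"
  by (simp add: mkl_def)

lemma vecf_carrier'[simp]: "length bs = n \<Longrightarrow> vecf bs f \<in> carrier_vec n"
  using vecf_carrier(1) by blast

lemma sum_nth_distinct:
  assumes "distinct bs"
  shows "(\<Sum>t\<in>{0..<length bs}. f (bs!t)) = (\<Sum>b\<in>set bs. f b)"
proof -
  have "bij_betw ((!) bs) {..<length bs} (set bs)"
    by (rule bij_betw_nth[OF assms]) auto
  then have "(\<Sum>t\<in>{..<length bs}. f (bs!t)) = (\<Sum>b\<in>set bs. f b)"
    by (rule sum.reindex_bij_betw)
  then show ?thesis by (simp add: atLeast0LessThan)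
qed

lemma mkl_mult:
  assumes "distinct bs"
  shows "mkl cs bs L * mkl bs as K = mkl cs as (\<lambda>c a. \<Sum>b\<in>set bs. L c b * K b a)"
proof (rule eq_matI)
  fix i j assume i: "i < dim_row (mkl cs as (\<lambda>c a. \<Sum>b\<in>set bs. L c b * K b a))"
    and j: "j < dim_col (mkl cs as (\<lambda>c a. \<Sum>b\<in>set bs. L c b * K b a))"
  then have i': "i < length cs" and j': "j < length as" by auto
  have "(mkl cs bs L * mkl bs as K) $$ (i,j) = (\<Sum>t\<in>{0..<length bs}. L (cs!i) (bs!t) * K (bs!t) (as!j))"
    using i' j' by (simp add: mkl_def scalar_prod_def)
  also have "\<dots> = (\<Sum>b\<in>set bs. L (cs!i) b * K b (as!j))"
    by (rule sum_nth_distinct[OF assms])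
  finally show "(mkl cs bs L * mkl bs as K) $$ (i,j) = mkl cs as (\<lambda>c a. \<Sum>b\<in>set bs. L c b * K b a) $$ (i,j)"
    using i' j' by (simp add: mkl_def)
qed auto

lemma mkl_mult_vecf:
  assumes "distinct bs"
  shows "mkl cs bs K *\<^sub>v vecf bs \<phi> = vecf cs (\<lambda>c. \<Sum>b\<in>set bs. K c b * \<phi> b)"
proof (rule eq_vecI)
  fix i assume "i < dim_vec (vecf cs (\<lambda>c. \<Sum>b\<in>set bs. K c b * \<phi> b))"
  then have i: "i < length cs" by simp
  have "(mkl cs bs K *\<^sub>v vecf bs \<phi>) $ i = (\<Sum>t\<in>{0..<length bs}. K (cs!i) (bs!t) * \<phi> (bs!t))"
    using i by (simp add: mkl_def vecf_def scalar_prod_def)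
  also have "\<dots> = (\<Sum>b\<in>set bs. K (cs!i) b * \<phi> b)" by (rule sum_nth_distinct[OF assms])
  finally show "(mkl cs bs K *\<^sub>v vecf bs \<phi>) $ i = vecf cs (\<lambda>c. \<Sum>b\<in>set bs. K c b * \<phi> b) $ i"
    using i by (simp add: vecf_def)
qed simp

lemma mkl_cong:
  assumes "\<And>c a. c \<in> set cs \<Longrightarrow> a \<in> set as \<Longrightarrow> K c a = K' c a"
  shows "mkl cs as K = mkl cs as K'"
  using assms by (auto simp: mkl_def intro!: eq_matI)

lemma vecf_cong:
  assumes "\<And>c. c \<in> set cs \<Longrightarrow> f c = g c"
  shows "vecf cs f = vecf cs g"
  using assms by (auto simp: vecf_def intro!: eq_vecI)

lemma mkl_one:
  assumes "distinct bs"
  shows "mkl bs bs (\<lambda>c a. if c = a then 1 else 0) = 1\<^sub>m (length bs)"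
  using assms by (auto simp: mkl_def nth_eq_iff_index_eq intro!: eq_matI)

lemma mkl_add:
  "mkl cs as K + mkl cs as K' = mkl cs as (\<lambda>c a. K c a + K' c a)"
  by (auto simp: mkl_def intro!: eq_matI)

lemma mkl_zero:
  "mkl cs as (\<lambda>c a. 0) = 0\<^sub>m (length cs) (length as)"
  by (auto simp: mkl_def intro!: eq_matI)

lemma mat_as_mkl:
  assumes "A \<in> carrier_mat n m"
  shows "A = mkl [0..<n] [0..<m] (\<lambda>i j. A $$ (i,j))"
  using assms by (auto simp: mkl_def intro!: eq_matI)

lemma vec_as_vecf:
  assumes "v \<in> carrier_vec n"
  shows "v = vecf [0..<n] (\<lambda>i. v $ i)"
  using assms by (auto simp: vecf_def intro!: eq_vecI)

lemma vecf_delta_unit: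
  assumes "distinct bs" "s < length bs"
  shows "vecf bs (\<lambda>b. if b = bs!s then 1 else 0) = unit_vec (length bs) s"
  using assms by (auto simp: vecf_def unit_vec_def nth_eq_iff_index_eq intro!: eq_vecI)

lemma mat_col_unit:
  fixes A :: "'k::comm_ring_1 mat"
  assumes "A \<in> carrier_mat n m" "j < m" "i < n"
  shows "(A *\<^sub>v unit_vec m j) $ i = A $$ (i,j)"
proof -
  have "(A *\<^sub>v unit_vec m j) $ i = (\<Sum>ia = 0..<m. A $$ (i, ia) * (if ia = j then 1 else 0))"
    using assms by (simp add: scalar_prod_def unit_vec_def)
  also have "\<dots> = (\<Sum>ia = 0..<m. if ia = j then A $$ (i, ia) else 0)"
    by (rule sum.cong) auto
  also have "\<dots> = A $$ (i,j)" using assms by simp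
  finally show ?thesis .
qed

lemma mat_eq_by_cols:
  fixes A :: "'k::comm_ring_1 mat"
  assumes "A \<in> carrier_mat n m" "B \<in> carrier_mat n m"
    and "\<And>j. j < m \<Longrightarrow> A *\<^sub>v unit_vec m j = B *\<^sub>v unit_vec m j"
  shows "A = B"
proof (rule eq_matI)
  fix i j assume "i < dim_row B" "j < dim_col B"
  then have "i < n" "j < m" using assms by auto
  then show "A $$ (i,j) = B $$ (i,j)" using assms mat_col_unit by metis
qed (use assms in auto)

lemma zero_mat_mult_vec[simp]:
  "(u :: 'k::comm_ring_1 vec) \<in> carrier_vec m \<Longrightarrow> 0\<^sub>m n m *\<^sub>v u = 0\<^sub>v n"
  by (auto intro!: eq_vecI simp: scalar_prod_def)

lemma mat_mult_zero_vec[simp]: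
  "(A :: 'k::comm_ring_1 mat) \<in> carrier_mat n m \<Longrightarrow> A *\<^sub>v 0\<^sub>v m = 0\<^sub>v n"
  by (auto intro!: eq_vecI simp: scalar_prod_def)

definition enum :: "'b set \<Rightarrow> 'b list" where
  "enum B = (SOME xs. set xs = B \<and> distinct xs)"

lemma enum_props:
  assumes "finite B"
  shows "set (enum B) = B" "distinct (enum B)" "length (enum B) = card B"
proof -
  have "\<exists>xs. set xs = B \<and> distinct xs" using finite_distinct_list[OF assms] by blast
  then have *: "set (enum B) = B \<and> distinct (enum B)" unfolding enum_def by (rule someI_ex)
  then show "set (enum B) = B" "distinct (enum B)" by auto
  then show "length (enum B) = card B" using distinct_card by fastforce
qed

lemma sum_delta_r:
  fixes f :: "'b \<Rightarrow> 'k::comm_ring_1"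
  assumes "finite B"
  shows "(\<Sum>b\<in>B. f b * (if b = \<beta> then x else 0)) = (if \<beta> \<in> B then f \<beta> * x else 0)"
proof -
  have "(\<Sum>b\<in>B. f b * (if b = \<beta> then x else 0)) = (\<Sum>b\<in>B. if b = \<beta> then f \<beta> * x else 0)"
    by (rule sum.cong) auto
  then show ?thesis using assms by simp
qed

lemma sum_delta_l:
  fixes f :: "'b \<Rightarrow> 'k::comm_ring_1"
  assumes "finite B"
  shows "(\<Sum>b\<in>B. (if b = \<beta> then x else 0) * f b) = (if \<beta> \<in> B then x * f \<beta> else 0)"
proof -
  have "(\<Sum>b\<in>B. (if b = \<beta> then x else 0) * f b) = (\<Sum>b\<in>B. if b = \<beta> then x * f \<beta> else 0)"
    by (rule sum.cong) auto
  then show ?thesis using assms by simp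
qed


lemma homotopy_pd_le:
  fixes L :: "('v,'a,'b) bquiver_scheme" and M :: "('v,'a,'k::field) qrep"
    and P :: "nat \<Rightarrow> ('v,'a,'k) qrep"
  assumes n: "n \<ge> 1"
    and proj: "\<And>i. i \<le> n \<Longrightarrow> projective_rep L (P i)"
    and eps_hom: "is_hom L (P 0) M \<epsilon>"
    and d_hom: "\<And>i. 1 \<le> i \<Longrightarrow> i \<le> n \<Longrightarrow> is_hom L (P i) (P (i-1)) (dd i)"
    and Sm_car: "\<And>x. x\<in>verts L \<Longrightarrow> Sm x \<in> carrier_mat (fst (P 0) x) (fst M x)"
    and S_car: "\<And>x i. x\<in>verts L \<Longrightarrow> i < n \<Longrightarrow> S i x \<in> carrier_mat (fst (P (Suc i)) x) (fst (P i) x)"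
    and h_m: "\<And>x. x\<in>verts L \<Longrightarrow> \<epsilon> x * Sm x = 1\<^sub>m (fst M x)"
    and z0: "\<And>x. x\<in>verts L \<Longrightarrow> \<epsilon> x * dd 1 x = 0\<^sub>m (fst M x) (fst (P 1) x)"
    and zi: "\<And>x i. x\<in>verts L \<Longrightarrow> 1 \<le> i \<Longrightarrow> i < n \<Longrightarrow>
                dd i x * dd (Suc i) x = 0\<^sub>m (fst (P (i-1)) x) (fst (P (Suc i)) x)"
    and h0: "\<And>x. x\<in>verts L \<Longrightarrow> dd 1 x * S 0 x + Sm x * \<epsilon> x = 1\<^sub>m (fst (P 0) x)"
    and hi: "\<And>x i. x\<in>verts L \<Longrightarrow> 1 \<le> i \<Longrightarrow> i < n \<Longrightarrow>
                dd (Suc i) x * S i x + S (i-1) x * dd i x = 1\<^sub>m (fst (P i) x)"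
    and htop: "\<And>x. x\<in>verts L \<Longrightarrow> S (n-1) x * dd n x = 1\<^sub>m (fst (P n) x)"
  shows "pd_le L M n"
proof -
  have eps_car: "\<And>x. x\<in>verts L \<Longrightarrow> \<epsilon> x \<in> carrier_mat (fst M x) (fst (P 0) x)"
    using eps_hom by (simp add: is_hom_def)
  have d_car: "\<And>x i. x\<in>verts L \<Longrightarrow> 1 \<le> i \<Longrightarrow> i \<le> n \<Longrightarrow> dd i x \<in> carrier_mat (fst (P (i-1)) x) (fst (P i) x)"
    using d_hom by (simp add: is_hom_def)
  have surj: "surj_hom L (P 0) M \<epsilon>"
    unfolding surj_hom_def
  proof (intro conjI ballI)
    fix x and w :: "'k vec" assume x: "x \<in> verts L" and w: "w \<in> carrier_vec (fst M x)"
    show "\<exists>v\<in>carrier_vec (fst (P 0) x). \<epsilon> x *\<^sub>v v = w"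
    proof (intro bexI)
      have "\<epsilon> x *\<^sub>v (Sm x *\<^sub>v w) = (\<epsilon> x * Sm x) *\<^sub>v w"
        using assoc_mult_mat_vec[OF eps_car[OF x] Sm_car[OF x] w] by simp
      then show "\<epsilon> x *\<^sub>v (Sm x *\<^sub>v w) = w" using h_m[OF x] w by simp
      show "Sm x *\<^sub>v w \<in> carrier_vec (fst (P 0) x)" using Sm_car[OF x] w by simp
    qed
  qed (rule eps_hom)
  have inj: "inj_hom L (P n) (P (n - 1)) (dd n)"
    unfolding inj_hom_def
  proof (intro conjI ballI impI)
    show "is_hom L (P n) (P (n - 1)) (dd n)" using d_hom n by simp
    fix x and v :: "'k vec" assume x: "x \<in> verts L" and v: "v \<in> carrier_vec (fst (P n) x)"
      and z: "dd n x *\<^sub>v v = 0\<^sub>v (fst (P (n - 1)) x)"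
    have Sc: "S (n-1) x \<in> carrier_mat (fst (P n) x) (fst (P (n-1)) x)"
      using S_car[OF x, of "n-1"] n by simp
    have "v = (S (n-1) x * dd n x) *\<^sub>v v" using htop[OF x] v by simp
    also have "\<dots> = S (n-1) x *\<^sub>v (dd n x *\<^sub>v v)"
      using Sc d_car[OF x, of n] n v by simp
    also have "\<dots> = 0\<^sub>v (fst (P n) x)" using z Sc by (auto intro!: eq_vecI)
    finally show "v = 0\<^sub>v (fst (P n) x)" .
  qed
  have ex0: "exact_at L (P 1) (P 0) M (dd 1) \<epsilon>"
    unfolding exact_at_def
  proof (intro ballI iffI)
    fix x and v :: "'k vec" assume x: "x \<in> verts L" and v: "v \<in> carrier_vec (fst (P 0) x)"
    have D: "dd 1 x \<in> carrier_mat (fst (P 0) x) (fst (P 1) x)" using d_car[OF x, of 1] n by simp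
    have S0: "S 0 x \<in> carrier_mat (fst (P 1) x) (fst (P 0) x)" using S_car[OF x, of 0] n by simp
    {
      assume z: "\<epsilon> x *\<^sub>v v = 0\<^sub>v (fst M x)"
      have "v = (dd 1 x * S 0 x + Sm x * \<epsilon> x) *\<^sub>v v" using h0[OF x] v by simp
      also have "\<dots> = dd 1 x *\<^sub>v (S 0 x *\<^sub>v v) + Sm x *\<^sub>v (\<epsilon> x *\<^sub>v v)"
        using D S0 Sm_car[OF x] eps_car[OF x] v by (simp add: add_mult_distrib_mat_vec[of _ "fst (P 0) x" "fst (P 0) x"])
      also have "Sm x *\<^sub>v (\<epsilon> x *\<^sub>v v) = 0\<^sub>v (fst (P 0) x)" using z Sm_car[OF x] by (auto intro!: eq_vecI)
      finally have eq: "v = dd 1 x *\<^sub>v (S 0 x *\<^sub>v v) + 0\<^sub>v (fst (P 0) x)" .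
      have c: "dd 1 x *\<^sub>v (S 0 x *\<^sub>v v) \<in> carrier_vec (fst (P 0) x)" using D S0 v by simp
      from eq c have "v = dd 1 x *\<^sub>v (S 0 x *\<^sub>v v)" by (metis right_zero_vec)
      then show "\<exists>u\<in>carrier_vec (fst (P 1) x). dd 1 x *\<^sub>v u = v" using S0 v by (intro bexI[of _ "S 0 x *\<^sub>v v"]) auto
    }
    {
      assume "\<exists>u\<in>carrier_vec (fst (P 1) x). dd 1 x *\<^sub>v u = v"
      then obtain u where u: "u \<in> carrier_vec (fst (P 1) x)" and uv: "dd 1 x *\<^sub>v u = v" by blast
      have "\<epsilon> x *\<^sub>v v = (\<epsilon> x * dd 1 x) *\<^sub>v u" using uv eps_car[OF x] D u by simp
      then show "\<epsilon> x *\<^sub>v v = 0\<^sub>v (fst M x)" using z0[OF x] u by simp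
    }
  qed
  have exi: "exact_at L (P (i + 1)) (P i) (P (i - 1)) (dd (i + 1)) (dd i)" if i: "1 \<le> i" "i < n" for i
    unfolding exact_at_def
  proof (intro ballI iffI)
    fix x and v :: "'k vec" assume x: "x \<in> verts L" and v: "v \<in> carrier_vec (fst (P i) x)"
    have D: "dd i x \<in> carrier_mat (fst (P (i-1)) x) (fst (P i) x)" using d_car[OF x, of i] i by simp
    have D': "dd (Suc i) x \<in> carrier_mat (fst (P i) x) (fst (P (Suc i)) x)" using d_car[OF x, of "Suc i"] i by simp
    have S1: "S i x \<in> carrier_mat (fst (P (Suc i)) x) (fst (P i) x)" using S_car[OF x, of i] i by simp
    have S2: "S (i-1) x \<in> carrier_mat (fst (P i) x) (fst (P (i-1)) x)" using S_car[OF x, of "i-1"] i by simp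
    {
      assume z: "dd i x *\<^sub>v v = 0\<^sub>v (fst (P (i-1)) x)"
      have "v = (dd (Suc i) x * S i x + S (i-1) x * dd i x) *\<^sub>v v" using hi[OF x i] v by simp
      also have "\<dots> = dd (Suc i) x *\<^sub>v (S i x *\<^sub>v v) + S (i-1) x *\<^sub>v (dd i x *\<^sub>v v)"
        using D D' S1 S2 v by (simp add: add_mult_distrib_mat_vec[of _ "fst (P i) x" "fst (P i) x"])
      also have "S (i-1) x *\<^sub>v (dd i x *\<^sub>v v) = 0\<^sub>v (fst (P i) x)" using z S2 by (auto intro!: eq_vecI)
      finally have eq: "v = dd (Suc i) x *\<^sub>v (S i x *\<^sub>v v) + 0\<^sub>v (fst (P i) x)" .
      have c: "dd (Suc i) x *\<^sub>v (S i x *\<^sub>v v) \<in> carrier_vec (fst (P i) x)" using D' S1 v by simp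
      from eq c have "v = dd (Suc i) x *\<^sub>v (S i x *\<^sub>v v)" by (metis right_zero_vec)
      then show "\<exists>u\<in>carrier_vec (fst (P (i+1)) x). dd (i+1) x *\<^sub>v u = v" using S1 v
        by (intro bexI[of _ "S i x *\<^sub>v v"]) auto
    }
    {
      assume "\<exists>u\<in>carrier_vec (fst (P (i+1)) x). dd (i+1) x *\<^sub>v u = v"
      then obtain u where u: "u \<in> carrier_vec (fst (P (Suc i)) x)" and uv: "dd (Suc i) x *\<^sub>v u = v" by auto
      have "dd i x *\<^sub>v v = (dd i x * dd (Suc i) x) *\<^sub>v u" using uv D D' u by simp
      then show "dd i x *\<^sub>v v = 0\<^sub>v (fst (P (i-1)) x)" using zi[OF x i] u by simp
    }
  qed
  have nz: "n \<noteq> 0" using n by simp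
  show ?thesis
    unfolding pd_le_def
    apply (rule exI[of _ P], rule exI[of _ dd], rule exI[of _ \<epsilon>])
    apply (intro conjI)
    subgoal using proj by blast
    subgoal by (rule surj)
    subgoal using d_hom by blast
    subgoal using nz inj ex0 exi by simp
    done
qed


definition qchain :: "('v,'a,'b) bquiver_scheme \<Rightarrow> 'v \<Rightarrow> 'v \<Rightarrow> 'a list \<Rightarrow> bool" where
  "qchain L x y ps \<longleftrightarrow> (ps = [] \<and> x = y \<and> x \<in> verts L) \<or>
     (is_qpath L ps \<and> src L (last ps) = x \<and> tgt L (hd ps) = y)"

definition NP :: "('v,'a,'b) bquiver_scheme \<Rightarrow> 'v \<Rightarrow> 'v \<Rightarrow> 'a list \<Rightarrow> bool" where
  "NP L x y ps \<longleftrightarrow> qchain L x y ps \<and> (\<forall>i. Suc i < length ps \<longrightarrow> [ps ! i, ps ! Suc i] \<notin> rels L)"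

definition pm :: "('v,'a,'k::field) qrep \<Rightarrow> 'v \<Rightarrow> 'a list \<Rightarrow> 'k mat" where
  "pm M x ps = (if ps = [] then 1\<^sub>m (fst M x) else comp_path (snd M) ps)"

lemma chain_Nil[simp]: "qchain L x y [] \<longleftrightarrow> x = y \<and> x \<in> verts L"
  by (simp add: qchain_def is_qpath_def)

lemma chain_Cons:
  assumes bq: "bound_quiver L"
  shows "qchain L x z (\<gamma> # ps) \<longleftrightarrow> \<gamma> \<in> arrs L \<and> tgt L \<gamma> = z \<and> qchain L x (src L \<gamma>) ps"
proof
  assume c: "qchain L x z (\<gamma> # ps)"
  then have q: "is_qpath L (\<gamma> # ps)" "src L (last (\<gamma>#ps)) = x" "tgt L \<gamma> = z" by (auto simp: qchain_def)
  then have g: "\<gamma> \<in> arrs L" by (simp add: is_qpath_def)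
  show "\<gamma> \<in> arrs L \<and> tgt L \<gamma> = z \<and> qchain L x (src L \<gamma>) ps"
  proof (cases ps)
    case Nil then show ?thesis using q g bq by (auto simp: bound_quiver_def)
  next
    case (Cons \<delta> qs)
    have "is_qpath L ps" using q Cons
      by (auto simp: is_qpath_def)
    moreover have "src L \<gamma> = tgt L \<delta>" using q Cons by (auto simp: is_qpath_def)
    ultimately show ?thesis using q g Cons by (auto simp: qchain_def)
  qed
next
  assume H: "\<gamma> \<in> arrs L \<and> tgt L \<gamma> = z \<and> qchain L x (src L \<gamma>) ps"
  show "qchain L x z (\<gamma> # ps)"
  proof (cases ps)
    case Nil then show ?thesis using H by (simp add: qchain_def is_qpath_def)
  next
    case (Cons \<delta> qs)
    then have q: "is_qpath L ps" "src L (last ps) = x" "tgt L \<delta> = src L \<gamma>" using H by (auto simp: qchain_def)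
    have "is_qpath L (\<gamma> # ps)"
      unfolding is_qpath_def
    proof (intro conjI allI impI)
      show "set (\<gamma> # ps) \<subseteq> arrs L" using q H by (auto simp: is_qpath_def)
      fix i assume "Suc i < length (\<gamma> # ps)"
      then show "src L ((\<gamma> # ps) ! i) = tgt L ((\<gamma> # ps) ! Suc i)"
        using q Cons by (cases i) (auto simp: is_qpath_def)
    qed simp
    then show ?thesis using q H Cons by (simp add: qchain_def)
  qed
qed

lemma NP_Cons:
  assumes bq: "bound_quiver L"
  shows "NP L x z (\<gamma> # ps) \<longleftrightarrow> \<gamma> \<in> arrs L \<and> tgt L \<gamma> = z \<and> NP L x (src L \<gamma>) ps \<and>
            (ps = [] \<or> [\<gamma>, hd ps] \<notin> rels L)"
proof -
  have "(\<forall>i. Suc i < length (\<gamma>#ps) \<longrightarrow> [(\<gamma>#ps) ! i, (\<gamma>#ps) ! Suc i] \<notin> rels L) \<longleftrightarrow>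
        (\<forall>i. Suc i < length ps \<longrightarrow> [ps ! i, ps ! Suc i] \<notin> rels L) \<and> (ps = [] \<or> [\<gamma>, hd ps] \<notin> rels L)"
    (is "?A \<longleftrightarrow> ?B \<and> ?C")
  proof
    assume A: ?A
    have B: ?B
    proof (intro allI impI)
      fix i assume "Suc i < length ps"
      then show "[ps ! i, ps ! Suc i] \<notin> rels L" using A[rule_format, of "Suc i"] by simp
    qed
    have C: ?C using A[rule_format, of 0] by (cases ps) auto
    show "?B \<and> ?C" using B C by simp
  next
    assume BC: "?B \<and> ?C"
    show ?A
    proof (intro allI impI)
      fix i assume i: "Suc i < length (\<gamma>#ps)"
      show "[(\<gamma>#ps) ! i, (\<gamma>#ps) ! Suc i] \<notin> rels L"
      proof (cases i)
        case 0 then show ?thesis using BC i by (cases ps) auto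
      next
        case (Suc j) then show ?thesis using BC i by auto
      qed
    qed
  qed
  then show ?thesis unfolding NP_def using chain_Cons[OF bq] by blast
qed

lemma NP_Nil[simp]: "NP L x y [] \<longleftrightarrow> x = y \<and> x \<in> verts L"
  by (simp add: NP_def)

lemma chain_src_verts:
  assumes bq: "bound_quiver L" and c: "qchain L x y ps"
  shows "x \<in> verts L"
proof (cases "ps = []")
  case True then show ?thesis using c by auto
next
  case False
  then have "src L (last ps) = x" "last ps \<in> arrs L" using c by (auto simp: qchain_def is_qpath_def)
  then show ?thesis using bq by (auto simp: bound_quiver_def)
qed

lemma chain_carrier:
  assumes bq: "bound_quiver L" and M: "is_rep L M" and c: "qchain L x y ps"
  shows "pm M x ps \<in> carrier_mat (fst M y) (fst M x)"
  using c
proof (induction ps arbitrary: y)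
  case Nil then show ?case by (auto simp: pm_def)
next
  case (Cons \<gamma> ps)
  then have h: "\<gamma> \<in> arrs L" "tgt L \<gamma> = y" "qchain L x (src L \<gamma>) ps" using chain_Cons[OF bq] by auto
  have g: "snd M \<gamma> \<in> carrier_mat (fst M y) (fst M (src L \<gamma>))" using M h by (auto simp: is_rep_def)
  show ?case
  proof (cases ps)
    case Nil then show ?thesis using g h by (simp add: pm_def)
  next
    case (Cons \<delta> qs)
    have "pm M x (\<gamma> # ps) = snd M \<gamma> * pm M x ps" using Cons by (simp add: pm_def)
    then show ?thesis using g Cons.IH[OF h(3)] by simp
  qed
qed

lemma pm_Cons:
  assumes bq: "bound_quiver L" and M: "is_rep L M" and c: "qchain L x (src L \<gamma>) ps" and g: "\<gamma> \<in> arrs L"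
  shows "pm M x (\<gamma> # ps) = snd M \<gamma> * pm M x ps"
proof (cases ps)
  case Nil
  have "snd M \<gamma> \<in> carrier_mat (fst M (tgt L \<gamma>)) (fst M (src L \<gamma>))" using M g by (auto simp: is_rep_def)
  then show ?thesis using Nil c by (simp add: pm_def)
next
  case (Cons \<delta> qs) then show ?thesis by (simp add: pm_def)
qed

lemma pm_rel_zero:
  assumes bq: "bound_quiver L" and M: "is_rep L M" and c: "qchain L x (src L \<gamma>) ps" and g: "\<gamma> \<in> arrs L"
    and ne: "ps \<noteq> []" and r: "[\<gamma>, hd ps] \<in> rels L"
  shows "snd M \<gamma> * pm M x ps = 0\<^sub>m (fst M (tgt L \<gamma>)) (fst M x)"
proof -
  obtain \<delta> qs where ps: "ps = \<delta> # qs" using ne by (cases ps) auto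
  have h: "\<delta> \<in> arrs L" "tgt L \<delta> = src L \<gamma>" "qchain L x (src L \<delta>) qs" using c ps chain_Cons[OF bq] by auto
  have gc: "snd M \<gamma> \<in> carrier_mat (fst M (tgt L \<gamma>)) (fst M (src L \<gamma>))" using M g by (auto simp: is_rep_def)
  have dc: "snd M \<delta> \<in> carrier_mat (fst M (src L \<gamma>)) (fst M (src L \<delta>))" using M h by (auto simp: is_rep_def)
  have qc: "pm M x qs \<in> carrier_mat (fst M (src L \<delta>)) (fst M x)" by (rule chain_carrier[OF bq M h(3)])
  have z: "snd M \<gamma> * snd M \<delta> = 0\<^sub>m (fst M (tgt L \<gamma>)) (fst M (src L \<delta>))"
    using M r ps unfolding is_rep_def by auto
  have "snd M \<gamma> * pm M x ps = snd M \<gamma> * (snd M \<delta> * pm M x qs)" using pm_Cons[OF bq M h(3) h(1)] ps by simp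
  also have "\<dots> = (snd M \<gamma> * snd M \<delta>) * pm M x qs" using gc dc qc by simp
  also have "\<dots> = 0\<^sub>m (fst M (tgt L \<gamma>)) (fst M x)" using z qc by simp
  finally show ?thesis .
qed

lemma hom_pm:
  assumes bq: "bound_quiver L" and X: "is_rep L X" and Y: "is_rep L Y" and f: "is_hom L X Y f"
    and c: "qchain L x y ps"
  shows "f y * pm X x ps = pm Y x ps * f x"
  using c
proof (induction ps arbitrary: y)
  case Nil
  then have xy: "x = y" "x \<in> verts L" by auto
  then have "f x \<in> carrier_mat (fst Y x) (fst X x)" using f by (simp add: is_hom_def)
  then show ?case using xy by (simp add: pm_def)
next
  case (Cons \<gamma> ps)
  then have h: "\<gamma> \<in> arrs L" "tgt L \<gamma> = y" "qchain L x (src L \<gamma>) ps" using chain_Cons[OF bq] by auto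
  have sv: "src L \<gamma> \<in> verts L" "tgt L \<gamma> \<in> verts L" using bq h by (auto simp: bound_quiver_def)
  have fy: "f y \<in> carrier_mat (fst Y y) (fst X y)" using f sv h by (simp add: is_hom_def)
  have fs: "f (src L \<gamma>) \<in> carrier_mat (fst Y (src L \<gamma>)) (fst X (src L \<gamma>))" using f sv by (simp add: is_hom_def)
  have fx: "x \<in> verts L" by (rule chain_src_verts[OF bq h(3)])
  have Xg: "snd X \<gamma> \<in> carrier_mat (fst X y) (fst X (src L \<gamma>))" using X h by (auto simp: is_rep_def)
  have Yg: "snd Y \<gamma> \<in> carrier_mat (fst Y y) (fst Y (src L \<gamma>))" using Y h by (auto simp: is_rep_def)
  have Xp: "pm X x ps \<in> carrier_mat (fst X (src L \<gamma>)) (fst X x)" by (rule chain_carrier[OF bq X h(3)])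
  have Yp: "pm Y x ps \<in> carrier_mat (fst Y (src L \<gamma>)) (fst Y x)" by (rule chain_carrier[OF bq Y h(3)])
  have fxc: "f x \<in> carrier_mat (fst Y x) (fst X x)" using f fx by (simp add: is_hom_def)
  have comm: "f y * snd X \<gamma> = snd Y \<gamma> * f (src L \<gamma>)" using f h by (auto simp: is_hom_def)
  have "f y * pm X x (\<gamma> # ps) = f y * (snd X \<gamma> * pm X x ps)" using pm_Cons[OF bq X h(3) h(1)] by simp
  also have "\<dots> = (f y * snd X \<gamma>) * pm X x ps" using fy Xg Xp by simp
  also have "\<dots> = (snd Y \<gamma> * f (src L \<gamma>)) * pm X x ps" using comm by simp
  also have "\<dots> = snd Y \<gamma> * (f (src L \<gamma>) * pm X x ps)" using Yg fs Xp by simp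
  also have "\<dots> = snd Y \<gamma> * (pm Y x ps * f x)" using Cons.IH[OF h(3)] by simp
  also have "\<dots> = (snd Y \<gamma> * pm Y x ps) * f x" using Yg Yp fxc by simp
  also have "\<dots> = pm Y x (\<gamma> # ps) * f x" using pm_Cons[OF bq Y h(3) h(1)] by simp
  finally show ?case .
qed


section \<open>Free representations\<close>

definition FB :: "('v,'a,'b) bquiver_scheme \<Rightarrow> 'g set \<Rightarrow> ('g \<Rightarrow> 'v) \<Rightarrow> 'v \<Rightarrow> ('g \<times> 'a list) set" where
  "FB L G v y = {(g,ps). g \<in> G \<and> NP L (v g) y ps}"

definition fK :: "'a \<Rightarrow> ('g \<times> 'a list) \<Rightarrow> ('g \<times> 'a list) \<Rightarrow> 'k::comm_ring_1" where
  "fK \<gamma> c b = (if c = (fst b, \<gamma> # snd b) then 1 else 0)"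

definition frep :: "('v,'a,'b) bquiver_scheme \<Rightarrow> 'g set \<Rightarrow> ('g \<Rightarrow> 'v) \<Rightarrow> ('v,'a,'k::field) qrep" where
  "frep L G v = (\<lambda>y. card (FB L G v y),
     \<lambda>\<gamma>. mkl (enum (FB L G v (tgt L \<gamma>))) (enum (FB L G v (src L \<gamma>))) (fK \<gamma>))"

lemma Lpath_bound:
  assumes g: "gentle L"
  obtains N where "\<And>x y ps. qchain L x y ps \<Longrightarrow> (\<forall>i. Suc i < length ps \<longrightarrow> [ps ! i, ps ! Suc i] \<notin> rels L) \<Longrightarrow> length ps < N"
proof -
  obtain n where n: "n > 0" "\<forall>p. is_qpath L p \<and> length p = n \<longrightarrow> (\<exists>r\<in>rels L. is_subpath r p)"
    using g by (auto simp: gentle_def bound_quiver_def)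
  have "length ps < n" if c: "qchain L x y ps" and nr: "\<forall>i. Suc i < length ps \<longrightarrow> [ps ! i, ps ! Suc i] \<notin> rels L" for x y ps
  proof (rule ccontr)
    assume "\<not> length ps < n"
    then have ln: "length ps \<ge> n" by simp
    then have ne: "ps \<noteq> []" using n by auto
    then have qp: "is_qpath L ps" using c by (auto simp: qchain_def)
    let ?p = "take n ps"
    have "is_qpath L ?p" using qp ln n by (auto simp: is_qpath_def dest: in_set_takeD)
    moreover have "length ?p = n" using ln by simp
    ultimately obtain r where r: "r \<in> rels L" "is_subpath r ?p" using n by blast
    have "length r = 2" using r g by (auto simp: gentle_def)
    then obtain u v where uv: "r = [u,v]" by (auto simp: numeral_2_eq_2 length_Suc_conv)
    obtain as bs where ab: "?p = as @ [u,v] @ bs" using r(2) uv by (auto simp: is_subpath_def)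
    have l: "Suc (length as) < length ?p" using ab by simp
    have "?p ! length as = u" "?p ! Suc (length as) = v" using ab by (auto simp: nth_append)
    then have "ps ! length as = u" "ps ! Suc (length as) = v" "Suc (length as) < length ps"
      using l by auto
    then show False using nr r(1) uv by auto
  qed
  then show ?thesis using that by blast
qed


lemma rel_shapeB:
  assumes "gentle L" "r \<in> rels L"
  shows "\<exists>a b. r = [a,b] \<and> a \<in> arrs L \<and> b \<in> arrs L \<and> src L a = tgt L b"
proof -
  have "is_qpath L r" "length r = 2" using assms by (auto simp: gentle_def bound_quiver_def)
  then obtain a b where "r = [a,b]" by (auto simp: numeral_2_eq_2 length_Suc_conv)
  then show ?thesis using \<open>is_qpath L r\<close> by (auto simp: is_qpath_def)
qed

lemma NP_bound:
  assumes g: "gentle L"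
  obtains N where "\<And>x y ps. NP L x y ps \<Longrightarrow> length ps < N"
  using Lpath_bound[OF g] unfolding NP_def by metis

lemma NP_arrs: "NP L x y ps \<Longrightarrow> set ps \<subseteq> arrs L"
  by (auto simp: NP_def qchain_def is_qpath_def)

lemma FB_finite:
  assumes g: "gentle L" and G: "finite G"
  shows "finite (FB L G v y)"
proof -
  obtain N where N: "\<And>x y ps. NP L x y ps \<Longrightarrow> length ps < N" using NP_bound[OF g] by blast
  have fa: "finite (arrs L)" using g by (simp add: gentle_def bound_quiver_def)
  have "FB L G v y \<subseteq> G \<times> {ps. set ps \<subseteq> arrs L \<and> length ps \<le> N}"
    using N NP_arrs unfolding FB_def by (fastforce simp: less_imp_le)
  moreover have "finite (G \<times> {ps. set ps \<subseteq> arrs L \<and> length ps \<le> N})"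
    using G finite_lists_length_le[OF fa] by simp
  ultimately show ?thesis by (rule finite_subset)
qed

lemma FB_enum:
  assumes g: "gentle L" and G: "finite G"
  shows "set (enum (FB L G v y)) = FB L G v y" "distinct (enum (FB L G v y))"
    "length (enum (FB L G v y)) = card (FB L G v y)"
  using enum_props[OF FB_finite[OF g G]] by auto

lemma frep_fst[simp]: "fst (frep L G v) y = card (FB L G v y)"
  by (simp add: frep_def)

lemma frep_snd: "snd (frep L G v) \<gamma> = mkl (enum (FB L G v (tgt L \<gamma>))) (enum (FB L G v (src L \<gamma>))) (fK \<gamma>)"
  by (simp add: frep_def)

lemma FB_mem: "(g, ps) \<in> FB L G v y \<longleftrightarrow> g \<in> G \<and> NP L (v g) y ps"
  by (simp add: FB_def)

lemma frep_is_rep: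
  assumes g: "gentle L" and G: "finite G"
  shows "is_rep L (frep L G v :: ('v,'a,'k::field) qrep)"
  unfolding is_rep_def
proof (intro conjI ballI)
  have bq: "bound_quiver L" using g by (simp add: gentle_def)
  fix \<gamma> assume "\<gamma> \<in> arrs L"
  show "snd (frep L G v :: ('v,'a,'k) qrep) \<gamma> \<in> carrier_mat (fst (frep L G v :: ('v,'a,'k) qrep) (tgt L \<gamma>)) (fst (frep L G v :: ('v,'a,'k) qrep) (src L \<gamma>))"
    using FB_enum[OF g G] by (simp add: frep_snd)
next
  have bq: "bound_quiver L" using g by (simp add: gentle_def)
  fix r assume r: "r \<in> rels L"
  obtain \<gamma> \<delta> where gd: "r = [\<gamma>,\<delta>]" "\<gamma> \<in> arrs L" "\<delta> \<in> arrs L" "src L \<gamma> = tgt L \<delta>"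
    using rel_shapeB[OF g r] by blast
  let ?e = "\<lambda>y. enum (FB L G v y)"
  have "comp_path (snd (frep L G v :: ('v,'a,'k) qrep)) r =
        mkl (?e (tgt L \<gamma>)) (?e (src L \<gamma>)) (fK \<gamma>) * mkl (?e (src L \<gamma>)) (?e (src L \<delta>)) (fK \<delta>)"
    using gd by (simp add: frep_snd)
  also have "\<dots> = mkl (?e (tgt L \<gamma>)) (?e (src L \<delta>)) (\<lambda>c a. \<Sum>b\<in>FB L G v (src L \<gamma>). (fK \<gamma> c b :: 'k) * fK \<delta> b a)"
    using mkl_mult[OF FB_enum(2)[OF g G]] FB_enum(1)[OF g G] by simp
  also have "\<dots> = mkl (?e (tgt L \<gamma>)) (?e (src L \<delta>)) (\<lambda>c a. 0)"
  proof (rule mkl_cong)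
    fix c a assume c: "c \<in> set (?e (tgt L \<gamma>))" and a: "a \<in> set (?e (src L \<delta>))"
    obtain g0 ps where a': "a = (g0, ps)" by (cases a)
    have "(\<Sum>b\<in>FB L G v (src L \<gamma>). (fK \<gamma> c b :: 'k) * fK \<delta> b a) =
          (\<Sum>b\<in>FB L G v (src L \<gamma>). fK \<gamma> c b * (if b = (g0, \<delta> # ps) then 1 else 0))"
      unfolding fK_def a' by (rule sum.cong) auto
    also have "\<dots> = (if (g0, \<delta> # ps) \<in> FB L G v (src L \<gamma>) then fK \<gamma> c (g0, \<delta> # ps) * 1 else 0)"
      by (rule sum_delta_r[OF FB_finite[OF g G]])
    also have "\<dots> = 0"
    proof -
      have "c \<noteq> (g0, \<gamma> # \<delta> # ps)"
      proof
        assume "c = (g0, \<gamma> # \<delta> # ps)"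
        then have "NP L (v g0) (tgt L \<gamma>) (\<gamma> # \<delta> # ps)" using c FB_enum(1)[OF g G] by (simp add: FB_mem)
        then show False using NP_Cons[OF bq] gd r by auto
      qed
      then show ?thesis by (simp add: fK_def)
    qed
    finally show "(\<Sum>b\<in>FB L G v (src L \<gamma>). (fK \<gamma> c b :: 'k) * fK \<delta> b a) = 0" .
  qed
  also have "\<dots> = 0\<^sub>m (fst (frep L G v :: ('v,'a,'k) qrep) (tgt L (hd r))) (fst (frep L G v :: ('v,'a,'k) qrep) (src L (last r)))"
    using gd FB_enum[OF g G] by (simp add: mkl_zero)
  finally show "comp_path (snd (frep L G v :: ('v,'a,'k) qrep)) r =
     0\<^sub>m (fst (frep L G v :: ('v,'a,'k) qrep) (tgt L (hd r))) (fst (frep L G v :: ('v,'a,'k) qrep) (src L (last r)))" .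
qed

lemma NP_chain: "NP L x y ps \<Longrightarrow> qchain L x y ps" by (simp add: NP_def)

lemma frep_pm_basis:
  assumes g: "gentle L" and G: "finite G" and g0: "g0 \<in> G"
  shows "NP L (v g0) y ps \<Longrightarrow>
    pm (frep L G v :: ('v,'a,'k::field) qrep) (v g0) ps *\<^sub>v vecf (enum (FB L G v (v g0))) (\<lambda>b. if b = (g0,[]) then 1 else 0)
    = vecf (enum (FB L G v y)) (\<lambda>b. if b = (g0,ps) then 1 else 0)"
proof (induction ps arbitrary: y)
  case Nil
  then have y: "y = v g0" by simp
  show ?case using y FB_enum[OF g G] by (simp add: pm_def)
next
  case (Cons \<gamma> ps)
  have bq: "bound_quiver L" using g by (simp add: gentle_def)
  let ?F = "frep L G v :: ('v,'a,'k) qrep"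
  let ?e = "\<lambda>y. enum (FB L G v y)"
  let ?w = "vecf (?e (v g0)) (\<lambda>b. if b = (g0,[]) then 1 else 0) :: 'k vec"
  have h: "\<gamma> \<in> arrs L" "tgt L \<gamma> = y" "NP L (v g0) (src L \<gamma>) ps" using Cons.prems NP_Cons[OF bq] by auto
  have F: "is_rep L ?F" by (rule frep_is_rep[OF g G])
  have pc: "pm ?F (v g0) ps \<in> carrier_mat (fst ?F (src L \<gamma>)) (fst ?F (v g0))"
    by (rule chain_carrier[OF bq F NP_chain[OF h(3)]])
  have Ac: "snd ?F \<gamma> \<in> carrier_mat (fst ?F (tgt L \<gamma>)) (fst ?F (src L \<gamma>))" using F h by (auto simp: is_rep_def)
  have wc: "?w \<in> carrier_vec (fst ?F (v g0))" using FB_enum[OF g G] by (metis frep_fst vecf_carrier(1))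
  have "pm ?F (v g0) (\<gamma> # ps) *\<^sub>v ?w = (snd ?F \<gamma> * pm ?F (v g0) ps) *\<^sub>v ?w"
    using pm_Cons[OF bq F NP_chain[OF h(3)] h(1)] by simp
  also have "\<dots> = snd ?F \<gamma> *\<^sub>v (pm ?F (v g0) ps *\<^sub>v ?w)" using Ac pc wc by simp
  also have "\<dots> = snd ?F \<gamma> *\<^sub>v vecf (?e (src L \<gamma>)) (\<lambda>b. if b = (g0,ps) then 1 else 0)"
    using Cons.IH[OF h(3)] by simp
  also have "\<dots> = vecf (?e (tgt L \<gamma>)) (\<lambda>c. \<Sum>b\<in>FB L G v (src L \<gamma>). fK \<gamma> c b * (if b = (g0,ps) then 1 else 0))"
    using mkl_mult_vecf[OF FB_enum(2)[OF g G]] FB_enum(1)[OF g G] by (simp add: frep_snd)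
  also have "\<dots> = vecf (?e (tgt L \<gamma>)) (\<lambda>c. if c = (g0, \<gamma> # ps) then 1 else 0)"
  proof (rule vecf_cong)
    fix c
    have mem: "(g0, ps) \<in> FB L G v (src L \<gamma>)" using g0 h by (simp add: FB_mem)
    have "(\<Sum>b\<in>FB L G v (src L \<gamma>). fK \<gamma> c b * (if b = (g0,ps) then 1 else 0)) =
       (if (g0,ps) \<in> FB L G v (src L \<gamma>) then fK \<gamma> c (g0,ps) * 1 else (0::'k))"
      by (rule sum_delta_r[OF FB_finite[OF g G]])
    then show "(\<Sum>b\<in>FB L G v (src L \<gamma>). fK \<gamma> c b * (if b = (g0,ps) then 1 else 0)) = (if c = (g0, \<gamma> # ps) then 1 else (0::'k))"
      using mem by (simp add: fK_def)
  qed
  finally show ?case using h by simp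
qed


lemma frep_projective:
  assumes g: "gentle L" and G: "finite G"
  shows "projective_rep L (frep L G v :: ('v,'a,'k::field) qrep)"
  unfolding projective_rep_def
proof (intro conjI allI impI)
  let ?F = "frep L G v :: ('v,'a,'k) qrep"
  let ?e = "\<lambda>y. enum (FB L G v y)"
  have bq: "bound_quiver L" using g by (simp add: gentle_def)
  show F: "is_rep L ?F" by (rule frep_is_rep[OF g G])
  fix X Y :: "('v,'a,'k) qrep" and gm f
  assume H: "is_rep L X \<and> is_rep L Y \<and> surj_hom L X Y gm \<and> is_hom L ?F Y f"
  then have X: "is_rep L X" and Y: "is_rep L Y" and gs: "surj_hom L X Y gm" and f: "is_hom L ?F Y f" by auto
  have gh: "is_hom L X Y gm" using gs by (simp add: surj_hom_def)
  define e0 where "e0 g0 = vecf (?e (v g0)) (\<lambda>b. if b = (g0,[]) then 1 else (0::'k))" for g0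
  define u where "u g0 = (SOME u. u \<in> carrier_vec (fst X (v g0)) \<and> gm (v g0) *\<^sub>v u = f (v g0) *\<^sub>v e0 g0)" for g0
  have e0c: "e0 g0 \<in> carrier_vec (card (FB L G v (v g0)))" for g0
    unfolding e0_def using FB_enum[OF g G] by simp
  have u: "u g0 \<in> carrier_vec (fst X (v g0)) \<and> gm (v g0) *\<^sub>v u g0 = f (v g0) *\<^sub>v e0 g0"
    if vg: "v g0 \<in> verts L" for g0
  proof -
    have "f (v g0) \<in> carrier_mat (fst Y (v g0)) (card (FB L G v (v g0)))" using f vg by (simp add: is_hom_def)
    then have "f (v g0) *\<^sub>v e0 g0 \<in> carrier_vec (fst Y (v g0))" using e0c by simp
    then have "\<exists>u. u \<in> carrier_vec (fst X (v g0)) \<and> gm (v g0) *\<^sub>v u = f (v g0) *\<^sub>v e0 g0"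
      using gs vg unfolding surj_hom_def by blast
    then show ?thesis unfolding u_def by (rule someI_ex)
  qed
  define H where "H r b = (pm X (v (fst b)) (snd b) *\<^sub>v u (fst b)) $ r" for r b
  define h where "h y = mkl [0..<fst X y] (?e y) H" for y
  have hc: "h y \<in> carrier_mat (fst X y) (card (FB L G v y))" for y
    unfolding h_def using FB_enum[OF g G] by simp
  have mem_facts: "g0 \<in> G \<and> NP L (v g0) y ps" if "(g0,ps) \<in> FB L G v y" for g0 ps y
    using that by (simp add: FB_mem)
  have hhom: "is_hom L ?F X h"
    unfolding is_hom_def
  proof (intro conjI ballI)
    fix x assume "x \<in> verts L"
    show "h x \<in> carrier_mat (fst X x) (fst ?F x)" using hc by simp
  next
    fix \<gamma> assume ga: "\<gamma> \<in> arrs L"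
    let ?dy = "fst X (src L \<gamma>)" and ?dz = "fst X (tgt L \<gamma>)"
    have Xg: "snd X \<gamma> \<in> carrier_mat ?dz ?dy" using X ga by (auto simp: is_rep_def)
    have lhs: "h (tgt L \<gamma>) * snd ?F \<gamma> = mkl [0..<?dz] (?e (src L \<gamma>)) (\<lambda>r a. \<Sum>b\<in>FB L G v (tgt L \<gamma>). H r b * fK \<gamma> b a)"
      unfolding h_def frep_snd using mkl_mult[OF FB_enum(2)[OF g G]] FB_enum(1)[OF g G] by simp
    have rhs: "snd X \<gamma> * h (src L \<gamma>) = mkl [0..<?dz] (?e (src L \<gamma>)) (\<lambda>r a. \<Sum>j\<in>{0..<?dy}. snd X \<gamma> $$ (r,j) * H j a)"
    proof -
      have "snd X \<gamma> = mkl [0..<?dz] [0..<?dy] (\<lambda>i j. snd X \<gamma> $$ (i,j))" by (rule mat_as_mkl[OF Xg])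
      then have "snd X \<gamma> * h (src L \<gamma>) = mkl [0..<?dz] [0..<?dy] (\<lambda>i j. snd X \<gamma> $$ (i,j)) * mkl [0..<?dy] (?e (src L \<gamma>)) H"
        unfolding h_def by simp
      also have "\<dots> = mkl [0..<?dz] (?e (src L \<gamma>)) (\<lambda>r a. \<Sum>j\<in>set [0..<?dy]. snd X \<gamma> $$ (r,j) * H j a)"
        by (rule mkl_mult) simp
      finally show ?thesis by simp
    qed
    show "h (tgt L \<gamma>) * snd ?F \<gamma> = snd X \<gamma> * h (src L \<gamma>)"
      unfolding lhs rhs
    proof (rule mkl_cong)
      fix r a assume r: "r \<in> set [0..<?dz]" and a: "a \<in> set (?e (src L \<gamma>))"
      obtain g0 ps where a': "a = (g0,ps)" by (cases a)
      have a'': "g0 \<in> G" "NP L (v g0) (src L \<gamma>) ps" using a a' FB_enum(1)[OF g G] mem_facts by auto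
      have ch: "qchain L (v g0) (src L \<gamma>) ps" using a'' by (simp add: NP_chain)
      have vg: "v g0 \<in> verts L" by (rule chain_src_verts[OF bq ch])
      have uc: "u g0 \<in> carrier_vec (fst X (v g0))" using u[OF vg] by simp
      have pc: "pm X (v g0) ps \<in> carrier_mat ?dy (fst X (v g0))" by (rule chain_carrier[OF bq X ch])
      have rr: "r < ?dz" using r by simp
      have R: "(\<Sum>j\<in>{0..<?dy}. snd X \<gamma> $$ (r,j) * H j a) = ((snd X \<gamma> * pm X (v g0) ps) *\<^sub>v u g0) $ r"
      proof -
        have "((snd X \<gamma> * pm X (v g0) ps) *\<^sub>v u g0) $ r = (snd X \<gamma> *\<^sub>v (pm X (v g0) ps *\<^sub>v u g0)) $ r"
          using Xg pc uc by simp
        also have "\<dots> = (\<Sum>j\<in>{0..<?dy}. snd X \<gamma> $$ (r,j) * (pm X (v g0) ps *\<^sub>v u g0) $ j)"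
          using Xg pc uc rr by (simp add: scalar_prod_def)
        finally show ?thesis by (simp add: H_def a')
      qed
      have L: "(\<Sum>b\<in>FB L G v (tgt L \<gamma>). H r b * fK \<gamma> b a) =
               (if (g0, \<gamma>#ps) \<in> FB L G v (tgt L \<gamma>) then H r (g0, \<gamma>#ps) * 1 else 0)"
      proof -
        have "(\<Sum>b\<in>FB L G v (tgt L \<gamma>). H r b * fK \<gamma> b a) =
              (\<Sum>b\<in>FB L G v (tgt L \<gamma>). H r b * (if b = (g0, \<gamma>#ps) then 1 else 0))"
          by (rule sum.cong) (auto simp: fK_def a')
        also have "\<dots> = (if (g0, \<gamma>#ps) \<in> FB L G v (tgt L \<gamma>) then H r (g0, \<gamma>#ps) * 1 else 0)"
          by (rule sum_delta_r[OF FB_finite[OF g G]])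
        finally show ?thesis .
      qed
      show "(\<Sum>b\<in>FB L G v (tgt L \<gamma>). H r b * fK \<gamma> b a) = (\<Sum>j\<in>{0..<?dy}. snd X \<gamma> $$ (r,j) * H j a)"
      proof (cases "NP L (v g0) (tgt L \<gamma>) (\<gamma>#ps)")
        case True
        then have "(g0, \<gamma>#ps) \<in> FB L G v (tgt L \<gamma>)" using a'' by (simp add: FB_mem)
        moreover have "pm X (v g0) (\<gamma>#ps) = snd X \<gamma> * pm X (v g0) ps" by (rule pm_Cons[OF bq X ch ga])
        ultimately show ?thesis using L R by (simp add: H_def)
      next
        case False
        then have "(g0, \<gamma>#ps) \<notin> FB L G v (tgt L \<gamma>)" by (simp add: FB_mem)
        moreover have ne: "ps \<noteq> [] \<and> [\<gamma>, hd ps] \<in> rels L" using False NP_Cons[OF bq] ga a'' by auto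
        then have "snd X \<gamma> * pm X (v g0) ps = 0\<^sub>m ?dz (fst X (v g0))"
          using pm_rel_zero[OF bq X ch ga] by auto
        ultimately show ?thesis using L R uc rr by simp
      qed
    qed
  qed
  show "\<exists>h. is_hom L ?F X h \<and> (\<forall>x\<in>verts L. gm x * h x = f x)"
  proof (intro exI conjI ballI)
    show "is_hom L ?F X h" by (rule hhom)
    fix x assume x: "x \<in> verts L"
    have gx: "gm x \<in> carrier_mat (fst Y x) (fst X x)" using gh x by (simp add: is_hom_def)
    have fx: "f x \<in> carrier_mat (fst Y x) (card (FB L G v x))" using f x by (simp add: is_hom_def)
    show "gm x * h x = f x"
    proof (rule mat_eq_by_cols)
      show "gm x * h x \<in> carrier_mat (fst Y x) (card (FB L G v x))" using gx hc by simp
      show "f x \<in> carrier_mat (fst Y x) (card (FB L G v x))" by (rule fx)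
      fix j assume j: "j < card (FB L G v x)"
      let ?a = "?e x ! j"
      obtain g0 ps where a': "?a = (g0,ps)" by (cases "?a")
      have amem: "?a \<in> FB L G v x" using j FB_enum[OF g G] by (metis nth_mem)
      then have a'': "g0 \<in> G" "NP L (v g0) x ps" using a' mem_facts by auto
      have ch: "qchain L (v g0) x ps" using a'' by (simp add: NP_chain)
      have vg: "v g0 \<in> verts L" by (rule chain_src_verts[OF bq ch])
      have uc: "u g0 \<in> carrier_vec (fst X (v g0))" using u[OF vg] by simp
      have pc: "pm X (v g0) ps \<in> carrier_mat (fst X x) (fst X (v g0))" by (rule chain_carrier[OF bq X ch])
      have pcY: "pm Y (v g0) ps \<in> carrier_mat (fst Y x) (fst Y (v g0))" by (rule chain_carrier[OF bq Y ch])
      have pcF: "pm ?F (v g0) ps \<in> carrier_mat (card (FB L G v x)) (card (FB L G v (v g0)))"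
        using chain_carrier[OF bq F ch] by simp
      have gv: "gm (v g0) \<in> carrier_mat (fst Y (v g0)) (fst X (v g0))" using gh vg by (simp add: is_hom_def)
      have fv: "f (v g0) \<in> carrier_mat (fst Y (v g0)) (card (FB L G v (v g0)))" using f vg by (simp add: is_hom_def)
      have "vecf (?e x) (\<lambda>b. if b = ?a then 1 else (0::'k)) = unit_vec (length (?e x)) j"
        by (rule vecf_delta_unit) (use j FB_enum(2,3)[OF g G] in auto)
      then have unit: "unit_vec (card (FB L G v x)) j = vecf (?e x) (\<lambda>b. if b = ?a then 1 else (0::'k))"
        using FB_enum(3)[OF g G] by simp
      have hcol: "h x *\<^sub>v unit_vec (card (FB L G v x)) j = pm X (v g0) ps *\<^sub>v u g0"
      proof -
        have "h x *\<^sub>v unit_vec (card (FB L G v x)) j = vecf [0..<fst X x] (\<lambda>r. \<Sum>b\<in>FB L G v x. H r b * (if b = ?a then 1 else 0))"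
          unfolding unit h_def using mkl_mult_vecf[OF FB_enum(2)[OF g G]] FB_enum(1)[OF g G] by simp
        also have "\<dots> = vecf [0..<fst X x] (\<lambda>r. H r ?a)"
          by (rule vecf_cong) (simp add: sum_delta_r[OF FB_finite[OF g G]] amem)
        also have "\<dots> = vecf [0..<fst X x] (\<lambda>r. (pm X (v g0) ps *\<^sub>v u g0) $ r)"
          by (simp add: H_def a')
        also have "\<dots> = pm X (v g0) ps *\<^sub>v u g0"
          using vec_as_vecf[of "pm X (v g0) ps *\<^sub>v u g0" "fst X x"] pc uc by simp
        finally show ?thesis .
      qed
      have "(gm x * h x) *\<^sub>v unit_vec (card (FB L G v x)) j = gm x *\<^sub>v (h x *\<^sub>v unit_vec (card (FB L G v x)) j)"
        by (rule assoc_mult_mat_vec[OF gx hc unit_vec_carrier])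
      also have "\<dots> = gm x *\<^sub>v (pm X (v g0) ps *\<^sub>v u g0)" using hcol by simp
      also have "\<dots> = (gm x * pm X (v g0) ps) *\<^sub>v u g0" using gx pc uc by simp
      also have "\<dots> = (pm Y (v g0) ps * gm (v g0)) *\<^sub>v u g0" using hom_pm[OF bq X Y gh ch] by simp
      also have "\<dots> = pm Y (v g0) ps *\<^sub>v (f (v g0) *\<^sub>v e0 g0)" using pcY gv uc u[OF vg] by simp
      also have "\<dots> = (f x * pm ?F (v g0) ps) *\<^sub>v e0 g0"
        using hom_pm[OF bq F Y f ch] pcY fv e0c by simp
      also have "\<dots> = f x *\<^sub>v (pm ?F (v g0) ps *\<^sub>v e0 g0)" using fx pcF e0c by simp
      also have "\<dots> = f x *\<^sub>v unit_vec (card (FB L G v x)) j"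
      proof -
        have "pm ?F (v g0) ps *\<^sub>v e0 g0 = vecf (?e x) (\<lambda>b. if b = (g0,ps) then 1 else 0)"
          unfolding e0_def by (rule frep_pm_basis[of L G g0 v x ps]) (use g G a'' in auto)
        then show ?thesis using unit a' by simp
      qed
      finally show "(gm x * h x) *\<^sub>v unit_vec (card (FB L G v x)) j = f x *\<^sub>v unit_vec (card (FB L G v x)) j" .
    qed
  qed
qed


lemma chain_snoc:
  assumes bq: "bound_quiver L" and c: "qchain L x y ps" and a: "\<alpha> \<in> arrs L" "tgt L \<alpha> = x"
  shows "qchain L (src L \<alpha>) y (ps @ [\<alpha>])"
  using c
proof (induction ps arbitrary: y)
  case Nil
  then have "y = x" by simp
  then show ?case using a by (simp add: qchain_def is_qpath_def)
next
  case (Cons \<gamma> ps)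
  then have h: "\<gamma> \<in> arrs L" "tgt L \<gamma> = y" "qchain L x (src L \<gamma>) ps" using chain_Cons[OF bq] by auto
  show ?case using Cons.IH[OF h(3)] h chain_Cons[OF bq] by simp
qed

lemma NP_snoc:
  assumes bq: "bound_quiver L" and c: "NP L x y ps" and a: "\<alpha> \<in> arrs L" "tgt L \<alpha> = x"
  shows "NP L (src L \<alpha>) y (ps @ [\<alpha>]) \<longleftrightarrow> (ps = [] \<or> [last ps, \<alpha>] \<notin> rels L)"
  using c
proof (induction ps arbitrary: y)
  case Nil
  then have xy: "x = y" "x \<in> verts L" by auto
  have "qchain L (src L \<alpha>) y ([] @ [\<alpha>])" by (rule chain_snoc[OF bq _ a]) (use xy in simp)
  then show ?case by (simp add: NP_def)
next
  case (Cons \<gamma> ps)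
  then have h: "\<gamma> \<in> arrs L" "tgt L \<gamma> = y" "NP L x (src L \<gamma>) ps" "ps = [] \<or> [\<gamma>, hd ps] \<notin> rels L"
    using NP_Cons[OF bq] by auto
  have "NP L (src L \<alpha>) y ((\<gamma> # ps) @ [\<alpha>]) \<longleftrightarrow> NP L (src L \<alpha>) (src L \<gamma>) (ps @ [\<alpha>]) \<and> [\<gamma>, hd (ps @ [\<alpha>])] \<notin> rels L"
    using NP_Cons[OF bq, of "src L \<alpha>" y \<gamma> "ps @ [\<alpha>]"] h by simp
  also have "\<dots> \<longleftrightarrow> (ps = [] \<or> [last ps, \<alpha>] \<notin> rels L) \<and> [\<gamma>, hd (ps @ [\<alpha>])] \<notin> rels L"
    using Cons.IH[OF h(3)] by simp
  also have "\<dots> \<longleftrightarrow> ((\<gamma> # ps) = [] \<or> [last (\<gamma> # ps), \<alpha>] \<notin> rels L)"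
    using h(4) by (cases ps) auto
  finally show ?case by simp
qed

lemma NP_append_left:
  assumes bq: "bound_quiver L" and c: "NP L x y (qs @ ps)" and ne: "ps \<noteq> []"
  shows "NP L x (src L (last qs)) ps \<or> qs = []"
  using c
proof (induction qs arbitrary: y)
  case Nil then show ?case by simp
next
  case (Cons \<gamma> qs)
  then have h: "NP L x (src L \<gamma>) (qs @ ps)" using NP_Cons[OF bq] by auto
  show ?case
  proof (cases "qs = []")
    case True then show ?thesis using h by simp
  next
    case False then show ?thesis using Cons.IH[OF h] by simp
  qed
qed

lemma NP_prefix:
  assumes bq: "bound_quiver L" and c: "NP L x y (qs @ ps)" and ne: "qs \<noteq> []"
  shows "NP L (src L (last qs)) y qs"
  using c ne
proof (induction qs arbitrary: y)
  case Nil then show ?case by simp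
next
  case (Cons \<gamma> qs)
  then have h: "\<gamma> \<in> arrs L" "tgt L \<gamma> = y" "NP L x (src L \<gamma>) (qs @ ps)" "qs @ ps = [] \<or> [\<gamma>, hd (qs @ ps)] \<notin> rels L"
    using NP_Cons[OF bq] by auto
  show ?case
  proof (cases "qs = []")
    case True
    have "src L \<gamma> \<in> verts L" using h bq by (auto simp: bound_quiver_def)
    then show ?thesis using True h NP_Cons[OF bq] by simp
  next
    case False
    then have "NP L (src L (last qs)) (src L \<gamma>) qs" using Cons.IH[OF h(3)] by simp
    then show ?thesis using False h NP_Cons[OF bq] by simp
  qed
qed

lemma NP_take:
  assumes bq: "bound_quiver L" and c: "NP L x y ps" and k: "k < length ps"
  shows "NP L (tgt L (ps!k)) y (take k ps)"
proof (cases "k = 0")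
  case True
  have "ps \<noteq> []" using k by auto
  then have "tgt L (hd ps) = y" "hd ps \<in> arrs L" using c by (auto simp: NP_def qchain_def is_qpath_def)
  then show ?thesis using True bq k by (auto simp: hd_conv_nth bound_quiver_def)
next
  case False
  have ne': "take k ps \<noteq> []" using False k by auto
  have c': "NP L x y (take k ps @ drop k ps)" using c by simp
  have "NP L (src L (last (take k ps))) y (take k ps)" by (rule NP_prefix[OF bq c' ne'])
  moreover have "src L (last (take k ps)) = tgt L (ps!k)"
  proof -
    have "take k ps \<noteq> []" using False k by auto
    then have "last (take k ps) = take k ps ! (length (take k ps) - 1)" by (simp add: last_conv_nth)
    then have "last (take k ps) = ps ! (k - 1)" using False k by (simp add: min_def)
    moreover have "src L (ps ! (k-1)) = tgt L (ps ! Suc (k-1))"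
      using c k False by (auto simp: NP_def qchain_def is_qpath_def)
    ultimately show ?thesis using False by simp
  qed
  ultimately show ?thesis by simp
qed

lemma chain_drop:
  assumes bq: "bound_quiver L" and c: "qchain L x y ps" and k: "k < length ps"
  shows "qchain L x (src L (ps!k)) (drop (Suc k) ps)"
  using c k
proof (induction ps arbitrary: y k)
  case Nil then show ?case by simp
next
  case (Cons \<gamma> ps)
  then have h: "\<gamma> \<in> arrs L" "tgt L \<gamma> = y" "qchain L x (src L \<gamma>) ps" using chain_Cons[OF bq] by auto
  show ?case
  proof (cases k)
    case 0 then show ?thesis using h by simp
  next
    case (Suc k') then show ?thesis using Cons.IH[OF h(3), of k'] Cons.prems by simp
  qed
qed

lemma NP_butlast:
  assumes bq: "bound_quiver L" and c: "NP L x y ps" and ne: "ps \<noteq> []"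
  shows "NP L (tgt L (last ps)) y (butlast ps)"
proof -
  have "NP L (tgt L (ps ! (length ps - 1))) y (take (length ps - 1) ps)"
    using NP_take[OF bq c] ne by simp
  then show ?thesis using ne by (simp add: last_conv_nth butlast_conv_take)
qed

lemma pm_snoc:
  assumes bq: "bound_quiver L" and M: "is_rep L M" and c: "qchain L x y ps" and a: "\<alpha> \<in> arrs L" "tgt L \<alpha> = x"
  shows "pm M (src L \<alpha>) (ps @ [\<alpha>]) = pm M x ps * snd M \<alpha>"
  using c
proof (induction ps arbitrary: y)
  case Nil
  have "snd M \<alpha> \<in> carrier_mat (fst M x) (fst M (src L \<alpha>))" using M a by (auto simp: is_rep_def)
  then show ?case using Nil by (auto simp: pm_def)
next
  case (Cons \<gamma> ps)
  then have h: "\<gamma> \<in> arrs L" "tgt L \<gamma> = y" "qchain L x (src L \<gamma>) ps" using chain_Cons[OF bq] by auto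
  have c2: "qchain L (src L \<alpha>) (src L \<gamma>) (ps @ [\<alpha>])" by (rule chain_snoc[OF bq h(3) a])
  have Gc: "snd M \<gamma> \<in> carrier_mat (fst M y) (fst M (src L \<gamma>))" using M h by (auto simp: is_rep_def)
  have Pc: "pm M x ps \<in> carrier_mat (fst M (src L \<gamma>)) (fst M x)" by (rule chain_carrier[OF bq M h(3)])
  have Ac: "snd M \<alpha> \<in> carrier_mat (fst M x) (fst M (src L \<alpha>))" using M a by (auto simp: is_rep_def)
  have "pm M (src L \<alpha>) ((\<gamma> # ps) @ [\<alpha>]) = snd M \<gamma> * pm M (src L \<alpha>) (ps @ [\<alpha>])"
    using pm_Cons[OF bq M c2 h(1)] by simp
  also have "\<dots> = snd M \<gamma> * (pm M x ps * snd M \<alpha>)" using Cons.IH[OF h(3)] by simp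
  also have "\<dots> = (snd M \<gamma> * pm M x ps) * snd M \<alpha>" using Gc Pc Ac by simp
  also have "\<dots> = pm M x (\<gamma> # ps) * snd M \<alpha>" using pm_Cons[OF bq M h(3) h(1)] by simp
  finally show ?case .
qed

lemma pm_snoc_zero:
  assumes bq: "bound_quiver L" and M: "is_rep L M" and c: "qchain L x y ps" and a: "\<alpha> \<in> arrs L" "tgt L \<alpha> = x"
    and ne: "ps \<noteq> []" and r: "[last ps, \<alpha>] \<in> rels L"
  shows "pm M x ps * snd M \<alpha> = 0\<^sub>m (fst M y) (fst M (src L \<alpha>))"
  using c ne r
proof (induction ps arbitrary: y)
  case Nil then show ?case by simp
next
  case (Cons \<gamma> ps)
  then have h: "\<gamma> \<in> arrs L" "tgt L \<gamma> = y" "qchain L x (src L \<gamma>) ps" using chain_Cons[OF bq] by auto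
  have Gc: "snd M \<gamma> \<in> carrier_mat (fst M y) (fst M (src L \<gamma>))" using M h by (auto simp: is_rep_def)
  have Ac: "snd M \<alpha> \<in> carrier_mat (fst M x) (fst M (src L \<alpha>))" using M a by (auto simp: is_rep_def)
  show ?case
  proof (cases "ps = []")
    case True
    then have xg: "x = src L \<gamma>" using h by simp
    have r': "[\<gamma>, \<alpha>] \<in> rels L" using Cons.prems True by simp
    then have "comp_path (snd M) [\<gamma>, \<alpha>] = 0\<^sub>m (fst M (tgt L \<gamma>)) (fst M (src L \<alpha>))"
      using M unfolding is_rep_def by fastforce
    then have "snd M \<gamma> * snd M \<alpha> = 0\<^sub>m (fst M y) (fst M (src L \<alpha>))" using h by simp
    then show ?thesis using True Gc by (simp add: pm_def)
  next
    case False
    have Pc: "pm M x ps \<in> carrier_mat (fst M (src L \<gamma>)) (fst M x)" by (rule chain_carrier[OF bq M h(3)])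
    have r': "[last ps, \<alpha>] \<in> rels L" using Cons.prems False by simp
    have "pm M x (\<gamma> # ps) * snd M \<alpha> = (snd M \<gamma> * pm M x ps) * snd M \<alpha>"
      using pm_Cons[OF bq M h(3) h(1)] by simp
    also have "\<dots> = snd M \<gamma> * (pm M x ps * snd M \<alpha>)" using Gc Pc Ac by simp
    also have "\<dots> = snd M \<gamma> * 0\<^sub>m (fst M (src L \<gamma>)) (fst M (src L \<alpha>))"
      using Cons.IH[OF h(3) False r'] by simp
    also have "\<dots> = 0\<^sub>m (fst M y) (fst M (src L \<alpha>))" using Gc by simp
    finally show ?thesis .
  qed
qed

lemma pm_drop:
  assumes bq: "bound_quiver L" and M: "is_rep L M" and c: "qchain L x y ps" and k: "k < length ps"
  shows "pm M x (drop k ps) = snd M (ps!k) * pm M x (drop (Suc k) ps)"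
proof -
  have d: "drop k ps = ps!k # drop (Suc k) ps" using k by (simp add: Cons_nth_drop_Suc)
  have a: "ps!k \<in> arrs L" using c k by (auto simp: qchain_def is_qpath_def)
  show ?thesis unfolding d by (rule pm_Cons[OF bq M chain_drop[OF bq c k] a])
qed


section \<open>The Koszul-type resolution\<close>

definition W :: "('v,'a,'b) bquiver_scheme \<Rightarrow> nat \<Rightarrow> ('v \<times> 'a list) set" where
  "W L i = {(x,ws). length ws = i \<and> (if ws = [] then x \<in> verts L else Lantipath L ws \<and> x = tgt L (hd ws))}"

definition gsrc :: "('v,'a,'b) bquiver_scheme \<Rightarrow> ('v \<times> 'a list) \<Rightarrow> 'v" where
  "gsrc L w = (if snd w = [] then fst w else src L (last (snd w)))"

definition KG :: "('v,'a,'b) bquiver_scheme \<Rightarrow> ('v,'a,'k) qrep \<Rightarrow> nat \<Rightarrow> (('v \<times> 'a list) \<times> nat) set" where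
  "KG L M i = Sigma (W L i) (\<lambda>w. {0..<fst M (gsrc L w)})"

definition TT :: "('v,'a,'b) bquiver_scheme \<Rightarrow> ('v,'a,'k) qrep \<Rightarrow> nat \<Rightarrow> 'v \<Rightarrow> ((('v \<times> 'a list) \<times> nat) \<times> 'a list) set" where
  "TT L M i y = FB L (KG L M i) (\<lambda>g. fst (fst g)) y"

definition KP :: "('v,'a,'b) bquiver_scheme \<Rightarrow> ('v,'a,'k::field) qrep \<Rightarrow> nat \<Rightarrow> ('v,'a,'k) qrep" where
  "KP L M i = frep L (KG L M i) (\<lambda>g. fst (fst g))"

definition dl :: "((('v \<times> 'a list) \<times> nat) \<times> 'a list) \<Rightarrow> ('v \<times> 'a list) \<Rightarrow> nat \<Rightarrow> 'a list \<Rightarrow> 'k::comm_ring_1" where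
  "dl c w j ps = (if c = ((w,j),ps) then 1 else 0)"

fun DK :: "('v,'a,'b) bquiver_scheme \<Rightarrow> ('v,'a,'k::field) qrep \<Rightarrow> nat \<Rightarrow>
    ((('v \<times> 'a list) \<times> nat) \<times> 'a list) \<Rightarrow> ((('v \<times> 'a list) \<times> nat) \<times> 'a list) \<Rightarrow> 'k" where
  "DK L M i c (((x,ws),j),ps) =
     dl c (src L (hd ws), tl ws) j (ps @ [hd ws]) +
     (-1)^i * (\<Sum>j'\<in>{0..<fst M (tgt L (last ws))}. snd M (last ws) $$ (j',j) * dl c (x, butlast ws) j' ps)"

fun EK :: "('v,'a,'k::field) qrep \<Rightarrow> nat \<Rightarrow> ((('v \<times> 'a list) \<times> nat) \<times> 'a list) \<Rightarrow> 'k" where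
  "EK M j' (((x,ws),j),ps) = pm M x ps $$ (j',j)"

definition SmK :: "'v \<Rightarrow> ((('v \<times> 'a list) \<times> nat) \<times> 'a list) \<Rightarrow> nat \<Rightarrow> 'k::comm_ring_1" where
  "SmK y c j = dl c (y,[]) j []"

fun S0K :: "('v,'a,'b) bquiver_scheme \<Rightarrow> ('v,'a,'k::field) qrep \<Rightarrow>
    ((('v \<times> 'a list) \<times> nat) \<times> 'a list) \<Rightarrow> ((('v \<times> 'a list) \<times> nat) \<times> 'a list) \<Rightarrow> 'k" where
  "S0K L M c (((x,ws),j),ps) = (\<Sum>k\<in>{0..<length ps}. \<Sum>j'\<in>{0..<fst M (src L (ps!k))}.
       pm M x (drop (Suc k) ps) $$ (j',j) * dl c (tgt L (ps!k), [ps!k]) j' (take k ps))"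

fun SK :: "('v,'a,'b) bquiver_scheme \<Rightarrow>
    ((('v \<times> 'a list) \<times> nat) \<times> 'a list) \<Rightarrow> ((('v \<times> 'a list) \<times> nat) \<times> 'a list) \<Rightarrow> 'k::comm_ring_1" where
  "SK L c (((x,ws),j),ps) = (if ps = [] then 0 else dl c (tgt L (last ps), last ps # ws) j (butlast ps))"

lemma TT_mem: "(((x,ws),j),ps) \<in> TT L M i y \<longleftrightarrow> (x,ws) \<in> W L i \<and> j < fst M (gsrc L (x,ws)) \<and> NP L x y ps"
  by (simp add: TT_def FB_mem KG_def)

lemma W_mem: "(x,ws) \<in> W L i \<longleftrightarrow> length ws = i \<and> (if ws = [] then x \<in> verts L else Lantipath L ws \<and> x = tgt L (hd ws))"
  by (simp add: W_def)

lemma sum_dl_r: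
  assumes "finite B"
  shows "(\<Sum>b\<in>B. F b * dl b w j ps) = (if ((w,j),ps) \<in> B then F ((w,j),ps) else (0::'k::comm_ring_1))"
  using sum_delta_r[OF assms, of F "((w,j),ps)" 1] by (simp add: dl_def)

lemma sum_dl_collapse:
  "(\<Sum>j''\<in>{0..<n}. f j'' * dl ((w',j'),ps') w j'' ps) = (if w' = w \<and> ps' = ps \<and> j' < n then f j' else (0::'k::comm_ring_1))"
proof -
  have "(\<Sum>j''\<in>{0..<n}. f j'' * dl ((w',j'),ps') w j'' ps) =
        (\<Sum>j''\<in>{0..<n}. if j'' = j' then (if w' = w \<and> ps' = ps then f j' else 0) else 0)"
    by (rule sum.cong) (auto simp: dl_def)
  also have "\<dots> = (if w' = w \<and> ps' = ps \<and> j' < n then f j' else 0)" by (simp add: sum.delta)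
  finally show ?thesis .
qed

lemma dl_eq: "dl ((w',j'),ps') w j ps = (if w' = w \<and> j' = j \<and> ps' = ps then 1 else 0)"
  by (simp add: dl_def)

lemma DK_right:
  assumes "finite B"
  shows "(\<Sum>b\<in>B. F b * DK L M i b (((x,ws),j),ps)) =
    (if (((src L (hd ws), tl ws), j), ps @ [hd ws]) \<in> B then F (((src L (hd ws), tl ws), j), ps @ [hd ws]) else 0) +
    (-1)^i * (\<Sum>j'\<in>{0..<fst M (tgt L (last ws))}. snd M (last ws) $$ (j',j) *
        (if (((x, butlast ws), j'), ps) \<in> B then F (((x, butlast ws), j'), ps) else (0::'k::field)))"
proof -
  have "(\<Sum>b\<in>B. F b * DK L M i b (((x,ws),j),ps)) =
        (\<Sum>b\<in>B. F b * dl b (src L (hd ws), tl ws) j (ps @ [hd ws])) +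
        (-1)^i * (\<Sum>j'\<in>{0..<fst M (tgt L (last ws))}. snd M (last ws) $$ (j',j) * (\<Sum>b\<in>B. F b * dl b (x, butlast ws) j' ps))"
    by (simp add: distrib_left sum.distrib sum_distrib_left mult.assoc mult.left_commute sum.swap[of _ B])
  then show ?thesis using assms by (simp add: sum_dl_r)
qed


lemma Lantipath_Cons:
  "Lantipath L (\<alpha> # rest) \<longleftrightarrow> \<alpha> \<in> arrs L \<and>
     (rest = [] \<or> (Lantipath L rest \<and> src L \<alpha> = tgt L (hd rest) \<and> [\<alpha>, hd rest] \<in> rels L))"
proof (cases rest)
  case Nil then show ?thesis by (simp add: Lantipath_def is_qpath_def)
next
  case (Cons \<beta> r)
  show ?thesis
  proof
    assume A: "Lantipath L (\<alpha> # rest)"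
    have "Lantipath L rest"
      unfolding Lantipath_def is_qpath_def
    proof (intro conjI allI impI)
      show "rest \<noteq> []" using Cons by simp
      show "set rest \<subseteq> arrs L" using A by (auto simp: Lantipath_def is_qpath_def)
      fix i assume "Suc i < length rest"
      then show "src L (rest ! i) = tgt L (rest ! Suc i)" "[rest ! i, rest ! Suc i] \<in> rels L"
        using A unfolding Lantipath_def is_qpath_def by (metis Suc_less_eq length_Cons nth_Cons_Suc)+
    qed
    moreover have "src L \<alpha> = tgt L (hd rest)" "[\<alpha>, hd rest] \<in> rels L" "\<alpha> \<in> arrs L"
      using A Cons unfolding Lantipath_def is_qpath_def by force+
    ultimately show "\<alpha> \<in> arrs L \<and> (rest = [] \<or> (Lantipath L rest \<and> src L \<alpha> = tgt L (hd rest) \<and> [\<alpha>, hd rest] \<in> rels L))"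
      by simp
  next
    assume B: "\<alpha> \<in> arrs L \<and> (rest = [] \<or> (Lantipath L rest \<and> src L \<alpha> = tgt L (hd rest) \<and> [\<alpha>, hd rest] \<in> rels L))"
    then have B': "Lantipath L rest" "src L \<alpha> = tgt L (hd rest)" "[\<alpha>, hd rest] \<in> rels L" "\<alpha> \<in> arrs L"
      using Cons by auto
    show "Lantipath L (\<alpha> # rest)"
      unfolding Lantipath_def is_qpath_def
    proof (intro conjI allI impI)
      show "\<alpha> # rest \<noteq> []" by simp
      show "set (\<alpha> # rest) \<subseteq> arrs L" using B' by (auto simp: Lantipath_def is_qpath_def)
      fix i assume i: "Suc i < length (\<alpha> # rest)"
      show "src L ((\<alpha> # rest) ! i) = tgt L ((\<alpha> # rest) ! Suc i)"
        using B' i Cons by (cases i) (auto simp: Lantipath_def is_qpath_def)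
      show "[(\<alpha> # rest) ! i, (\<alpha> # rest) ! Suc i] \<in> rels L"
        using B' i Cons by (cases i) (auto simp: Lantipath_def)
    qed
  qed
qed

lemma Lantipath_snoc:
  "Lantipath L (ws @ [\<beta>]) \<longleftrightarrow> \<beta> \<in> arrs L \<and>
     (ws = [] \<or> (Lantipath L ws \<and> src L (last ws) = tgt L \<beta> \<and> [last ws, \<beta>] \<in> rels L))"
proof (induction ws)
  case Nil then show ?case by (simp add: Lantipath_Cons)
next
  case (Cons \<alpha> ws)
  show ?case
  proof (cases "ws = []")
    case True then show ?thesis by (auto simp: Lantipath_Cons)
  next
    case False
    then show ?thesis using Cons by (auto simp: Lantipath_Cons hd_append)
  qed
qed

lemma sign_Suc: "((-1::'k::comm_ring_1)^(Suc i)) = - ((-1)^i)" by simp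

locale kz =
  fixes L :: "('v,'a,'b) bquiver_scheme" and M :: "('v,'a,'k::field) qrep"
  assumes g: "gentle L" and M: "is_rep L M"
begin

lemma bq: "bound_quiver L" using g by (simp add: gentle_def)
lemma fin_arrs: "finite (arrs L)" using g by (simp add: gentle_def bound_quiver_def)
lemma fin_verts: "finite (verts L)" using g by (simp add: gentle_def bound_quiver_def)
lemma arr_verts: "\<alpha> \<in> arrs L \<Longrightarrow> src L \<alpha> \<in> verts L \<and> tgt L \<alpha> \<in> verts L"
  using bq by (simp add: bound_quiver_def)

lemma fin_W: "finite (W L i)"
proof -
  have "W L i \<subseteq> verts L \<times> {ws. set ws \<subseteq> arrs L \<and> length ws \<le> i}"
  proof
    fix w assume w: "w \<in> W L i"
    obtain x ws where xw: "w = (x,ws)" by (cases w)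
    show "w \<in> verts L \<times> {ws. set ws \<subseteq> arrs L \<and> length ws \<le> i}"
    proof (cases "ws = []")
      case True then show ?thesis using w xw by (auto simp: W_def)
    next
      case False
      then have "Lantipath L ws" "x = tgt L (hd ws)" "length ws = i" using w xw by (auto simp: W_def)
      moreover then have "hd ws \<in> arrs L" using False by (auto simp: Lantipath_def is_qpath_def)
      ultimately show ?thesis using xw arr_verts by (auto simp: Lantipath_def is_qpath_def)
    qed
  qed
  moreover have "finite (verts L \<times> {ws. set ws \<subseteq> arrs L \<and> length ws \<le> i})"
    using fin_verts finite_lists_length_le[OF fin_arrs] by simp
  ultimately show ?thesis by (rule finite_subset)
qed

lemma fin_KG: "finite (KG L M i)"
  unfolding KG_def using fin_W by (intro finite_SigmaI) auto

lemma fin_TT: "finite (TT L M i y)"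
  unfolding TT_def by (rule FB_finite[OF g fin_KG])

lemma eT: "set (enum (TT L M i y)) = TT L M i y" "distinct (enum (TT L M i y))"
  "length (enum (TT L M i y)) = card (TT L M i y)"
  using enum_props[OF fin_TT] by auto

lemma KP_fst[simp]: "fst (KP L M i) y = card (TT L M i y)"
  by (simp add: KP_def TT_def)

lemma KP_snd: "snd (KP L M i) \<gamma> = mkl (enum (TT L M i (tgt L \<gamma>))) (enum (TT L M i (src L \<gamma>))) (fK \<gamma>)"
  by (simp add: KP_def TT_def frep_snd)

lemma KP_rep: "is_rep L (KP L M i)"
  unfolding KP_def by (rule frep_is_rep[OF g fin_KG])

lemma KP_proj: "projective_rep L (KP L M i)"
  unfolding KP_def by (rule frep_projective[OF g fin_KG])

lemma W_tail:
  assumes w: "(x, ws) \<in> W L (Suc i)"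
  shows "(src L (hd ws), tl ws) \<in> W L i" "gsrc L (src L (hd ws), tl ws) = gsrc L (x, ws)"
    "x = tgt L (hd ws)" "hd ws \<in> arrs L" "ws \<noteq> []"
proof -
  have ne: "ws \<noteq> []" and ap: "Lantipath L ws" and x: "x = tgt L (hd ws)" and l: "length ws = Suc i"
    using w by (auto simp: W_def split: if_splits)
  obtain \<alpha> rest where ws: "ws = \<alpha> # rest" using ne by (cases ws) auto
  have A: "\<alpha> \<in> arrs L \<and> (rest = [] \<or> (Lantipath L rest \<and> src L \<alpha> = tgt L (hd rest) \<and> [\<alpha>, hd rest] \<in> rels L))"
    using ap ws Lantipath_Cons by metis
  show "(src L (hd ws), tl ws) \<in> W L i"
    using A ws l arr_verts by (auto simp: W_def)
  show "gsrc L (src L (hd ws), tl ws) = gsrc L (x, ws)" using ws by (simp add: gsrc_def)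
  show "x = tgt L (hd ws)" by (rule x)
  show "hd ws \<in> arrs L" using A ws by simp
  show "ws \<noteq> []" by (rule ne)
qed

lemma W_init:
  assumes w: "(x, ws) \<in> W L (Suc i)"
  shows "(x, butlast ws) \<in> W L i" "gsrc L (x, butlast ws) = tgt L (last ws)" "last ws \<in> arrs L"
proof -
  have ne: "ws \<noteq> []" and ap: "Lantipath L ws" and x: "x = tgt L (hd ws)" and l: "length ws = Suc i"
    using w by (auto simp: W_def split: if_splits)
  obtain ws' \<beta> where ws: "ws = ws' @ [\<beta>]" using ne by (metis append_butlast_last_id)
  have A: "\<beta> \<in> arrs L \<and> (ws' = [] \<or> (Lantipath L ws' \<and> src L (last ws') = tgt L \<beta> \<and> [last ws', \<beta>] \<in> rels L))"
    using ap ws Lantipath_snoc by metis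
  show "(x, butlast ws) \<in> W L i"
    using A ws l x arr_verts by (auto simp: W_def hd_append split: if_splits)
  show "gsrc L (x, butlast ws) = tgt L (last ws)" using A ws x by (auto simp: gsrc_def)
  show "last ws \<in> arrs L" using A ws by simp
qed

lemma W_cons:
  assumes w: "(x, ws) \<in> W L i" and np: "NP L x y ps" and ne: "ps \<noteq> []"
  shows "(tgt L (last ps), last ps # ws) \<in> W L (Suc i) \<longleftrightarrow> (ws = [] \<or> [last ps, hd ws] \<in> rels L)"
    "gsrc L (tgt L (last ps), last ps # ws) = gsrc L (x, ws)"
proof -
  have lp: "last ps \<in> arrs L" "src L (last ps) = x" using np ne by (auto simp: NP_def qchain_def is_qpath_def)
  show "(tgt L (last ps), last ps # ws) \<in> W L (Suc i) \<longleftrightarrow> (ws = [] \<or> [last ps, hd ws] \<in> rels L)"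
  proof (cases "ws = []")
    case True then show ?thesis using w lp by (simp add: W_def Lantipath_Cons)
  next
    case False
    then have "Lantipath L ws" "x = tgt L (hd ws)" "length ws = i" using w by (auto simp: W_def)
    then show ?thesis using False lp by (auto simp: W_def Lantipath_Cons)
  qed
  show "gsrc L (tgt L (last ps), last ps # ws) = gsrc L (x, ws)" using lp by (simp add: gsrc_def)
qed

end


lemma mat_mult_entry:
  fixes A :: "'k::comm_ring_1 mat"
  assumes "A \<in> carrier_mat n m" "B \<in> carrier_mat m p" "i < n" "j < p"
  shows "(A * B) $$ (i,j) = (\<Sum>k\<in>{0..<m}. A $$ (i,k) * B $$ (k,j))"
  using assms by (simp add: scalar_prod_def)

context kz begin

lemma dl_nz_mem:
  assumes c: "c \<in> TT L M i y" and nz: "dl c w j ps \<noteq> (0::'k)"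
  shows "c = ((w,j),ps)" "w \<in> W L i" "NP L (fst w) y ps" "j < fst M (gsrc L w)"
proof -
  show ceq: "c = ((w,j),ps)" using nz by (simp add: dl_def split: if_splits)
  obtain x ws where w: "w = (x,ws)" by (cases w)
  show "w \<in> W L i" "NP L (fst w) y ps" "j < fst M (gsrc L w)" using c ceq w by (auto simp: TT_mem)
qed

lemma dl_zero_if:
  assumes c: "c \<in> TT L M i y" and nm: "\<not> NP L (fst w) y ps"
  shows "dl c w j ps = (0::'k)"
  using dl_nz_mem[OF c] nm by blast

lemma Hm:
  assumes y: "y \<in> verts L" and j: "j < fst M y" and j': "j' < fst M y"
  shows "(\<Sum>b\<in>TT L M 0 y. EK M j' b * SmK y b j) = (if j' = j then 1 else (0::'k))"
proof -
  have mem: "(((y,[]),j),[]) \<in> TT L M 0 y" using y j by (simp add: TT_mem W_mem gsrc_def)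
  have "(\<Sum>b\<in>TT L M 0 y. EK M j' b * SmK y b j) = EK M j' (((y,[]),j),[])"
    unfolding SmK_def using sum_dl_r[OF fin_TT, of "EK M j'"] mem by simp
  also have "\<dots> = (if j' = j then 1 else 0)" using j j' by (simp add: pm_def)
  finally show ?thesis .
qed

lemma Homeps:
  assumes ga: "\<gamma> \<in> arrs L" and a: "a \<in> TT L M 0 (src L \<gamma>)" and j': "j' < fst M (tgt L \<gamma>)"
  shows "(\<Sum>b\<in>TT L M 0 (tgt L \<gamma>). EK M j' b * fK \<gamma> b a) = (\<Sum>j\<in>{0..<fst M (src L \<gamma>)}. snd M \<gamma> $$ (j',j) * EK M j a)"
proof -
  obtain x ws j ps where a': "a = (((x,ws),j),ps)" by (metis prod.collapse)
  have am: "(x,ws) \<in> W L 0" "j < fst M (gsrc L (x,ws))" "NP L x (src L \<gamma>) ps" using a a' by (auto simp: TT_mem)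
  have ch: "qchain L x (src L \<gamma>) ps" using am by (simp add: NP_chain)
  have Gc: "snd M \<gamma> \<in> carrier_mat (fst M (tgt L \<gamma>)) (fst M (src L \<gamma>))" using M ga by (auto simp: is_rep_def)
  have Pc: "pm M x ps \<in> carrier_mat (fst M (src L \<gamma>)) (fst M x)" by (rule chain_carrier[OF bq M ch])
  have jx: "j < fst M x" using am by (simp add: W_mem gsrc_def)
  have "(\<Sum>b\<in>TT L M 0 (tgt L \<gamma>). EK M j' b * fK \<gamma> b a) = (\<Sum>b\<in>TT L M 0 (tgt L \<gamma>). EK M j' b * dl b (x,ws) j (\<gamma>#ps))"
    by (rule sum.cong) (auto simp: fK_def dl_def a')
  also have "\<dots> = (if (((x,ws),j),\<gamma>#ps) \<in> TT L M 0 (tgt L \<gamma>) then pm M x (\<gamma>#ps) $$ (j',j) else 0)"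
    by (simp add: sum_dl_r[OF fin_TT])
  also have "\<dots> = (snd M \<gamma> * pm M x ps) $$ (j',j)"
  proof (cases "NP L x (tgt L \<gamma>) (\<gamma>#ps)")
    case True
    then have "(((x,ws),j),\<gamma>#ps) \<in> TT L M 0 (tgt L \<gamma>)" using am by (simp add: TT_mem)
    then show ?thesis using pm_Cons[OF bq M ch ga] by simp
  next
    case False
    then have "ps \<noteq> [] \<and> [\<gamma>, hd ps] \<in> rels L" using NP_Cons[OF bq] ga am by auto
    then have "snd M \<gamma> * pm M x ps = 0\<^sub>m (fst M (tgt L \<gamma>)) (fst M x)" using pm_rel_zero[OF bq M ch ga] by auto
    moreover have "(((x,ws),j),\<gamma>#ps) \<notin> TT L M 0 (tgt L \<gamma>)" using False by (simp add: TT_mem)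
    ultimately show ?thesis using j' jx by simp
  qed
  also have "\<dots> = (\<Sum>j''\<in>{0..<fst M (src L \<gamma>)}. snd M \<gamma> $$ (j',j'') * pm M x ps $$ (j'',j))"
    by (rule mat_mult_entry[OF Gc Pc j' jx])
  also have "\<dots> = (\<Sum>j''\<in>{0..<fst M (src L \<gamma>)}. snd M \<gamma> $$ (j',j'') * EK M j'' a)"
    by (simp add: a')
  finally show ?thesis .
qed

lemma Zeps:
  assumes y: "y \<in> verts L" and a: "a \<in> TT L M 1 y" and j': "j' < fst M y"
  shows "(\<Sum>b\<in>TT L M 0 y. EK M j' b * DK L M 1 b a) = (0::'k)"
proof -
  obtain x ws j ps where a': "a = (((x,ws),j),ps)" by (metis prod.collapse)
  have am: "(x,ws) \<in> W L 1" "j < fst M (gsrc L (x,ws))" "NP L x y ps" using a a' by (auto simp: TT_mem)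
  obtain \<alpha> where ws: "ws = [\<alpha>]" using am(1) by (auto simp: W_mem length_Suc_conv)
  have al: "\<alpha> \<in> arrs L" "tgt L \<alpha> = x" using am(1) ws by (auto simp: W_mem Lantipath_def is_qpath_def)
  have ch: "qchain L x y ps" using am by (simp add: NP_chain)
  have xv: "x \<in> verts L" using al arr_verts by auto
  have Pc: "pm M x ps \<in> carrier_mat (fst M y) (fst M x)" by (rule chain_carrier[OF bq M ch])
  have Ac: "snd M \<alpha> \<in> carrier_mat (fst M x) (fst M (src L \<alpha>))" using M al by (auto simp: is_rep_def)
  have jx: "j < fst M (src L \<alpha>)" using am ws by (simp add: gsrc_def)
  let ?n = "fst M (tgt L (last ws))"
  have "(\<Sum>b\<in>TT L M 0 y. EK M j' b * DK L M 1 b a) =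
    (if (((src L (hd ws), tl ws), j), ps @ [hd ws]) \<in> TT L M 0 y then EK M j' (((src L (hd ws), tl ws), j), ps @ [hd ws]) else 0) +
    (-1)^1 * (\<Sum>j''\<in>{0..<?n}. snd M (last ws) $$ (j'',j) *
        (if (((x, butlast ws), j''), ps) \<in> TT L M 0 y then EK M j' (((x, butlast ws), j''), ps) else 0))"
    unfolding a' by (rule DK_right[OF fin_TT])
  also have "(\<Sum>j''\<in>{0..<?n}. snd M (last ws) $$ (j'',j) *
        (if (((x, butlast ws), j''), ps) \<in> TT L M 0 y then EK M j' (((x, butlast ws), j''), ps) else 0)) =
      (\<Sum>j''\<in>{0..<fst M x}. pm M x ps $$ (j',j'') * snd M \<alpha> $$ (j'',j))"
  proof (rule sum.cong)
    show "{0..<?n} = {0..<fst M x}" using ws al by simp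
    fix j'' assume "j'' \<in> {0..<fst M x}"
    then have "(((x, butlast ws), j''), ps) \<in> TT L M 0 y" using xv am(3) ws by (simp add: TT_mem W_mem gsrc_def)
    then show "snd M (last ws) $$ (j'',j) *
        (if (((x, butlast ws), j''), ps) \<in> TT L M 0 y then EK M j' (((x, butlast ws), j''), ps) else 0) =
        pm M x ps $$ (j',j'') * snd M \<alpha> $$ (j'',j)" using ws by simp
  qed
  also have "\<dots> = (pm M x ps * snd M \<alpha>) $$ (j',j)" by (rule mat_mult_entry[OF Pc Ac j' jx, symmetric])
  finally have E: "(\<Sum>b\<in>TT L M 0 y. EK M j' b * DK L M 1 b a) =
    (if (((src L \<alpha>, []), j), ps @ [\<alpha>]) \<in> TT L M 0 y then pm M (src L \<alpha>) (ps @ [\<alpha>]) $$ (j',j) else 0) -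
    (pm M x ps * snd M \<alpha>) $$ (j',j)" using ws by simp
  show ?thesis
  proof (cases "NP L (src L \<alpha>) y (ps @ [\<alpha>])")
    case True
    then have "(((src L \<alpha>, []), j), ps @ [\<alpha>]) \<in> TT L M 0 y"
      using jx al arr_verts by (simp add: TT_mem W_mem gsrc_def)
    then show ?thesis using E pm_snoc[OF bq M ch al] by simp
  next
    case False
    then have nr: "ps \<noteq> [] \<and> [last ps, \<alpha>] \<in> rels L" using NP_snoc[OF bq am(3) al] by auto
    have "(((src L \<alpha>, []), j), ps @ [\<alpha>]) \<notin> TT L M 0 y" using False by (simp add: TT_mem)
    moreover have "pm M x ps * snd M \<alpha> = 0\<^sub>m (fst M y) (fst M (src L \<alpha>))"
      using pm_snoc_zero[OF bq M ch al] nr by auto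
    ultimately show ?thesis using E j' jx by simp
  qed
qed

end


context kz begin

lemma NP_last_src:
  assumes "NP L x y ps" "ps \<noteq> []"
  shows "src L (last ps) = x"
  using assms by (auto simp: NP_def qchain_def)

lemma Homd:
  assumes ga: "\<gamma> \<in> arrs L" and c: "c \<in> TT L M i (tgt L \<gamma>)" and a: "a \<in> TT L M (Suc i) (src L \<gamma>)"
  shows "(\<Sum>b\<in>TT L M (Suc i) (tgt L \<gamma>). DK L M (Suc i) c b * fK \<gamma> b a) =
         (\<Sum>b\<in>TT L M i (src L \<gamma>). fK \<gamma> c b * DK L M (Suc i) b a)"
proof -
  obtain x ws j ps where a': "a = (((x,ws),j),ps)" by (metis prod.collapse)
  have am: "(x,ws) \<in> W L (Suc i)" "j < fst M (gsrc L (x,ws))" "NP L x (src L \<gamma>) ps" using a a' by (auto simp: TT_mem)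
  note wt = W_tail[OF am(1)] and wi = W_init[OF am(1)]
  let ?n = "fst M (tgt L (last ws))"
  let ?A = "dl c (src L (hd ws), tl ws) j (\<gamma> # ps @ [hd ws]) :: 'k"
  let ?B = "\<Sum>j''\<in>{0..<?n}. snd M (last ws) $$ (j'',j) * (dl c (x, butlast ws) j'' (\<gamma> # ps) :: 'k)"
  let ?s = "(-1::'k)^(Suc i)"
  have L: "(\<Sum>b\<in>TT L M (Suc i) (tgt L \<gamma>). DK L M (Suc i) c b * fK \<gamma> b a) =
       (if (((x,ws),j),\<gamma>#ps) \<in> TT L M (Suc i) (tgt L \<gamma>) then ?A + ?s * ?B else 0)"
  proof -
    have "(\<Sum>b\<in>TT L M (Suc i) (tgt L \<gamma>). DK L M (Suc i) c b * fK \<gamma> b a) =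
          (\<Sum>b\<in>TT L M (Suc i) (tgt L \<gamma>). DK L M (Suc i) c b * dl b (x,ws) j (\<gamma>#ps))"
      by (rule sum.cong) (auto simp: fK_def dl_def a')
    also have "\<dots> = (if (((x,ws),j),\<gamma>#ps) \<in> TT L M (Suc i) (tgt L \<gamma>) then DK L M (Suc i) c (((x,ws),j),\<gamma>#ps) else 0)"
      by (rule sum_dl_r[OF fin_TT])
    finally show ?thesis by simp
  qed
  have R: "(\<Sum>b\<in>TT L M i (src L \<gamma>). fK \<gamma> c b * DK L M (Suc i) b a) =
      (if (((src L (hd ws), tl ws), j), ps @ [hd ws]) \<in> TT L M i (src L \<gamma>) then ?A else 0) + ?s * ?B"
  proof -
    have "(\<Sum>b\<in>TT L M i (src L \<gamma>). fK \<gamma> c b * DK L M (Suc i) b a) =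
      (if (((src L (hd ws), tl ws), j), ps @ [hd ws]) \<in> TT L M i (src L \<gamma>) then fK \<gamma> c (((src L (hd ws), tl ws), j), ps @ [hd ws]) else 0) +
      ?s * (\<Sum>j'\<in>{0..<?n}. snd M (last ws) $$ (j',j) *
        (if (((x, butlast ws), j'), ps) \<in> TT L M i (src L \<gamma>) then fK \<gamma> c (((x, butlast ws), j'), ps) else 0))"
      unfolding a' by (rule DK_right[OF fin_TT])
    also have "(\<Sum>j'\<in>{0..<?n}. snd M (last ws) $$ (j',j) *
        (if (((x, butlast ws), j'), ps) \<in> TT L M i (src L \<gamma>) then fK \<gamma> c (((x, butlast ws), j'), ps) else 0)) = ?B"
    proof (rule sum.cong)
      fix j' assume j': "j' \<in> {0..<?n}"
      then have "(((x, butlast ws), j'), ps) \<in> TT L M i (src L \<gamma>)" using wi am(3) by (simp add: TT_mem)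
      then show "snd M (last ws) $$ (j',j) *
        (if (((x, butlast ws), j'), ps) \<in> TT L M i (src L \<gamma>) then fK \<gamma> c (((x, butlast ws), j'), ps) else 0) =
        snd M (last ws) $$ (j',j) * dl c (x, butlast ws) j' (\<gamma> # ps)" by (simp add: fK_def dl_def)
    qed simp
    finally show ?thesis by (simp add: fK_def dl_def)
  qed
  have mem1: "(((src L (hd ws), tl ws), j), ps @ [hd ws]) \<in> TT L M i (src L \<gamma>) \<longleftrightarrow>
              NP L (src L (hd ws)) (src L \<gamma>) (ps @ [hd ws])"
    using wt am by (simp add: TT_mem)
  have xl: "(if ps = [] then src L \<gamma> else src L (last ps)) = x" using am(3) NP_last_src by auto
  show ?thesis
  proof (cases "NP L x (tgt L \<gamma>) (\<gamma>#ps)")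
    case True
    then have "(((x,ws),j),\<gamma>#ps) \<in> TT L M (Suc i) (tgt L \<gamma>)" using am by (simp add: TT_mem)
    moreover have "(if (((src L (hd ws), tl ws), j), ps @ [hd ws]) \<in> TT L M i (src L \<gamma>) then ?A else 0) = ?A"
    proof (cases "?A = 0")
      case False
      then have "NP L (src L (hd ws)) (tgt L \<gamma>) (\<gamma> # ps @ [hd ws])" using dl_nz_mem(3)[OF c] by fastforce
      then have "NP L (src L (hd ws)) (src L \<gamma>) (ps @ [hd ws])" using NP_Cons[OF bq] by blast
      then show ?thesis using mem1 by simp
    qed simp
    ultimately show ?thesis using L R by simp
  next
    case False
    have A0: "?A = 0"
    proof (rule ccontr)
      assume "?A \<noteq> 0"
      then have "NP L (src L (hd ws)) (tgt L \<gamma>) ((\<gamma> # ps) @ [hd ws])" using dl_nz_mem(3)[OF c] by fastforce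
      then have "NP L (src L (last (\<gamma> # ps))) (tgt L \<gamma>) (\<gamma> # ps)" using NP_prefix[OF bq] by blast
      then show False using False xl by (cases "ps = []") auto
    qed
    have B0: "?B = 0"
    proof (rule sum.neutral, rule ballI)
      fix j' show "snd M (last ws) $$ (j',j) * dl c (x, butlast ws) j' (\<gamma> # ps) = (0::'k)"
        using dl_zero_if[OF c, of "(x, butlast ws)" "\<gamma> # ps" j'] False by simp
    qed
    have "(((x,ws),j),\<gamma>#ps) \<notin> TT L M (Suc i) (tgt L \<gamma>)" using False by (simp add: TT_mem)
    then show ?thesis using L R A0 B0 by simp
  qed
qed

end


context kz begin

lemma NP_snoc2:
  assumes "NP L z y (qs @ [a,b])"
  shows "[a,b] \<notin> rels L"
proof -
  have "(qs @ [a,b]) ! length qs = a" "(qs @ [a,b]) ! Suc (length qs) = b" by (auto simp: nth_append)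
  moreover have "Suc (length qs) < length (qs @ [a,b])" by simp
  ultimately show ?thesis using assms unfolding NP_def by metis
qed

lemma Zd:
  assumes y: "y \<in> verts L" and c: "c \<in> TT L M i y" and a: "a \<in> TT L M (Suc (Suc i)) y"
  shows "(\<Sum>b\<in>TT L M (Suc i) y. DK L M (Suc i) c b * DK L M (Suc (Suc i)) b a) = (0::'k)"
proof -
  obtain x ws j ps where a': "a = (((x,ws),j),ps)" by (metis prod.collapse)
  have am: "(x,ws) \<in> W L (Suc (Suc i))" "j < fst M (gsrc L (x,ws))" "NP L x y ps" using a a' by (auto simp: TT_mem)
  note wt = W_tail[OF am(1)] and wi = W_init[OF am(1)]
  have lw: "length ws = Suc (Suc i)" and apw: "Lantipath L ws" using am(1) by (auto simp: W_mem split: if_splits)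
  obtain \<alpha>1 \<alpha>2 r where ws: "ws = \<alpha>1 # \<alpha>2 # r" using lw by (metis length_Suc_conv)
  have "Lantipath L (\<alpha>1 # \<alpha>2 # r)" using apw ws by simp
  then have r12: "[\<alpha>1, \<alpha>2] \<in> rels L" by (subst (asm) Lantipath_Cons) simp
  have bl: "butlast ws = \<alpha>1 # butlast (\<alpha>2 # r)" "last ws = last (\<alpha>2 # r)" using ws by auto
  have lbl: "[last (butlast ws), last ws] \<in> rels L"
  proof -
    have "Suc (length ws - 2) < length ws" using lw by simp
    then have "[ws ! (length ws - 2), ws ! Suc (length ws - 2)] \<in> rels L" using apw by (simp add: Lantipath_def)
    moreover have "ws ! (length ws - 2) = last (butlast ws)"
    proof -
      have "butlast ws \<noteq> []" using lw by (cases ws) auto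
      then have "last (butlast ws) = butlast ws ! (length (butlast ws) - 1)" by (simp add: last_conv_nth)
      also have "\<dots> = ws ! i" using lw by (simp add: nth_butlast)
      finally show ?thesis using lw by simp
    qed
    moreover have "ws ! Suc (length ws - 2) = last ws"
    proof -
      have "ws \<noteq> []" using lw by auto
      then have "last ws = ws ! (length ws - 1)" by (simp add: last_conv_nth)
      then show ?thesis using lw by simp
    qed
    ultimately show ?thesis by simp
  qed
  let ?n = "fst M (tgt L (last ws))"
  let ?m = "snd M (last ws)"
  let ?m' = "snd M (last (butlast ws))"
  let ?n' = "fst M (tgt L (last (butlast ws)))"
  let ?s = "(-1::'k)^(Suc i)"
  let ?X = "\<Sum>j''\<in>{0..<?n}. ?m $$ (j'',j) * (dl c (src L \<alpha>1, butlast (\<alpha>2 # r)) j'' (ps @ [\<alpha>1]) :: 'k)"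
  let ?Y = "\<Sum>j''\<in>{0..<?n}. ?m $$ (j'',j) * (\<Sum>j'''\<in>{0..<?n'}. ?m' $$ (j''',j'') * (dl c (x, butlast (butlast ws)) j''' ps :: 'k))"
  have mem1: "(((src L (hd ws), tl ws), j), ps @ [hd ws]) \<in> TT L M (Suc i) y \<longleftrightarrow> NP L (src L \<alpha>1) y (ps @ [\<alpha>1])"
    using wt am ws by (simp add: TT_mem)
  have S: "(\<Sum>b\<in>TT L M (Suc i) y. DK L M (Suc i) c b * DK L M (Suc (Suc i)) b a) =
      (if NP L (src L \<alpha>1) y (ps @ [\<alpha>1]) then
         dl c (src L \<alpha>2, r) j (ps @ [\<alpha>1, \<alpha>2]) + ?s * ?X else 0) +
      (- ?s) * (?X + ?s * ?Y)"
  proof -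
    have "(\<Sum>b\<in>TT L M (Suc i) y. DK L M (Suc i) c b * DK L M (Suc (Suc i)) b a) =
      (if (((src L (hd ws), tl ws), j), ps @ [hd ws]) \<in> TT L M (Suc i) y then DK L M (Suc i) c (((src L (hd ws), tl ws), j), ps @ [hd ws]) else 0) +
      (-1)^(Suc (Suc i)) * (\<Sum>j'\<in>{0..<?n}. ?m $$ (j',j) *
        (if (((x, butlast ws), j'), ps) \<in> TT L M (Suc i) y then DK L M (Suc i) c (((x, butlast ws), j'), ps) else 0))"
      unfolding a' by (rule DK_right[OF fin_TT])
    also have "(\<Sum>j'\<in>{0..<?n}. ?m $$ (j',j) *
        (if (((x, butlast ws), j'), ps) \<in> TT L M (Suc i) y then DK L M (Suc i) c (((x, butlast ws), j'), ps) else 0)) =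
        (\<Sum>j'\<in>{0..<?n}. ?m $$ (j',j) * DK L M (Suc i) c (((x, butlast ws), j'), ps))"
    proof (rule sum.cong)
      fix j' assume "j' \<in> {0..<?n}"
      then have "(((x, butlast ws), j'), ps) \<in> TT L M (Suc i) y" using wi am(3) by (simp add: TT_mem)
      then show "?m $$ (j',j) * (if (((x, butlast ws), j'), ps) \<in> TT L M (Suc i) y then DK L M (Suc i) c (((x, butlast ws), j'), ps) else 0) =
          ?m $$ (j',j) * DK L M (Suc i) c (((x, butlast ws), j'), ps)" by simp
    qed simp
    also have "(\<Sum>j'\<in>{0..<?n}. ?m $$ (j',j) * DK L M (Suc i) c (((x, butlast ws), j'), ps)) = ?X + ?s * ?Y"
    proof -
      have hb: "hd (butlast ws) = \<alpha>1" "tl (butlast ws) = butlast (\<alpha>2 # r)" using bl(1) by simp_all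
      have DKe: "DK L M (Suc i) c (((x, butlast ws), j'), ps) = dl c (src L \<alpha>1, butlast (\<alpha>2 # r)) j' (ps @ [\<alpha>1]) +
          ?s * (\<Sum>j'''\<in>{0..<?n'}. ?m' $$ (j''',j') * dl c (x, butlast (butlast ws)) j''' ps)" for j'
        by (simp only: DK.simps hb)
      show ?thesis unfolding DKe by (simp add: distrib_left sum.distrib sum_distrib_left mult.left_commute)
    qed
    finally show ?thesis using mem1 ws by (simp add: mult.assoc)
  qed
  have T1: "dl c (src L \<alpha>2, r) j (ps @ [\<alpha>1, \<alpha>2]) = (0::'k)"
  proof -
    have "\<not> NP L (src L \<alpha>2) y (ps @ [\<alpha>1, \<alpha>2])" using NP_snoc2[of "src L \<alpha>2" y ps \<alpha>1 \<alpha>2] r12 by blast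
    then show ?thesis using dl_zero_if[OF c, of "(src L \<alpha>2, r)" "ps @ [\<alpha>1, \<alpha>2]" j] by simp
  qed
  have X: "(if NP L (src L \<alpha>1) y (ps @ [\<alpha>1]) then ?X else 0) = ?X"
  proof (cases "NP L (src L \<alpha>1) y (ps @ [\<alpha>1])")
    case False
    have "?X = 0"
    proof (rule sum.neutral, rule ballI)
      fix j'' show "?m $$ (j'',j) * dl c (src L \<alpha>1, butlast (\<alpha>2 # r)) j'' (ps @ [\<alpha>1]) = (0::'k)"
        using dl_zero_if[OF c, of "(src L \<alpha>1, butlast (\<alpha>2 # r))" "ps @ [\<alpha>1]" j''] False by simp
    qed
    then show ?thesis by simp
  qed simp
  have Y: "?Y = 0"
  proof -
    have "?Y = (\<Sum>j'''\<in>{0..<?n'}. (\<Sum>j''\<in>{0..<?n}. ?m' $$ (j''',j'') * ?m $$ (j'',j)) * dl c (x, butlast (butlast ws)) j''' ps)"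
      by (simp add: sum_distrib_left sum_distrib_right sum.swap[of _ "{0..<?n}"] mult.assoc mult.left_commute)
    also have "\<dots> = 0"
    proof (rule sum.neutral, rule ballI)
      fix j''' assume j''': "j''' \<in> {0..<?n'}"
      have la: "last ws \<in> arrs L" "last (butlast ws) \<in> arrs L" "src L (last (butlast ws)) = tgt L (last ws)"
        using rel_shapeB[OF g lbl] by auto
      have C1: "?m' \<in> carrier_mat ?n' (fst M (src L (last (butlast ws))))" using M la by (auto simp: is_rep_def)
      have C2: "?m \<in> carrier_mat ?n (fst M (src L (last ws)))" using M la by (auto simp: is_rep_def)
      have z: "?m' * ?m = 0\<^sub>m ?n' (fst M (src L (last ws)))"
        using M lbl unfolding is_rep_def by fastforce
      have jl: "j < fst M (src L (last ws))" using am(2) ws by (simp add: gsrc_def)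
      have "(\<Sum>j''\<in>{0..<?n}. ?m' $$ (j''',j'') * ?m $$ (j'',j)) = (?m' * ?m) $$ (j''',j)"
        using mat_mult_entry[OF C1, of ?m "fst M (src L (last ws))" j''' j] C2 la j''' jl by simp
      then show "(\<Sum>j''\<in>{0..<?n}. ?m' $$ (j''',j'') * ?m $$ (j'',j)) * dl c (x, butlast (butlast ws)) j''' ps = (0::'k)"
        using z j''' jl by simp
    qed
    finally show ?thesis .
  qed
  have e1: "(if NP L (src L \<alpha>1) y (ps @ [\<alpha>1]) then
         dl c (src L \<alpha>2, r) j (ps @ [\<alpha>1, \<alpha>2]) + ?s * ?X else 0) = ?s * ?X"
  proof (cases "NP L (src L \<alpha>1) y (ps @ [\<alpha>1])")
    case True then show ?thesis using T1 by simp
  next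
    case False then show ?thesis using X by simp
  qed
  show ?thesis unfolding S e1 Y by (simp add: algebra_simps)
qed

end


context kz begin

lemma SK_right:
  assumes "finite B"
  shows "(\<Sum>b\<in>B. F b * SK L b (((x,ws),j),ps)) =
    (if ps = [] then 0 else if (((tgt L (last ps), last ps # ws), j), butlast ps) \<in> B
       then F (((tgt L (last ps), last ps # ws), j), butlast ps) else (0::'k))"
  using assms by (simp add: sum_dl_r)

lemma Hi:
  assumes y: "y \<in> verts L" and c: "c \<in> TT L M (Suc (Suc k)) y" and a: "a \<in> TT L M (Suc (Suc k)) y"
  shows "(\<Sum>b\<in>TT L M (Suc (Suc (Suc k))) y. DK L M (Suc (Suc (Suc k))) c b * SK L b a) +
         (\<Sum>b\<in>TT L M (Suc k) y. SK L c b * DK L M (Suc (Suc k)) b a) = (if c = a then 1 else (0::'k))"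
proof -
  obtain x ws j ps where a': "a = (((x,ws),j),ps)" by (metis prod.collapse)
  have am: "(x,ws) \<in> W L (Suc (Suc k))" "j < fst M (gsrc L (x,ws))" "NP L x y ps" using a a' by (auto simp: TT_mem)
  note wt = W_tail[OF am(1)] and wi = W_init[OF am(1)]
  have lw: "length ws = Suc (Suc k)" using am(1) by (auto simp: W_mem split: if_splits)
  obtain \<alpha>1 rest where ws: "ws = \<alpha>1 # rest" using lw by (metis length_Suc_conv)
  have bne: "butlast ws \<noteq> []" "hd (butlast ws) = \<alpha>1" using lw ws by (cases rest; auto)+
  let ?n = "fst M (tgt L (last ws))"
  let ?m = "snd M (last ws)"
  let ?s = "(-1::'k)^(Suc (Suc k))"
  let ?Z = "\<Sum>j''\<in>{0..<?n}. ?m $$ (j'',j) * (dl c (tgt L (last ps), last ps # butlast ws) j'' (butlast ps) :: 'k)"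
  let ?d = "dl c (x,ws) j ps :: 'k"
  have d: "?d = (if c = a then 1 else 0)" by (simp add: dl_def a')
  have F: "(\<Sum>b\<in>TT L M (Suc (Suc (Suc k))) y. DK L M (Suc (Suc (Suc k))) c b * SK L b a) =
      (if ps = [] then 0 else if [last ps, \<alpha>1] \<in> rels L then ?d + (- ?s) * ?Z else 0)"
  proof (cases "ps = []")
    case True then show ?thesis unfolding a' SK_right[OF fin_TT] by simp
  next
    case False
    have lp: "src L (last ps) = x" using NP_last_src[OF am(3) False] .
    have mem: "(((tgt L (last ps), last ps # ws), j), butlast ps) \<in> TT L M (Suc (Suc (Suc k))) y \<longleftrightarrow> [last ps, \<alpha>1] \<in> rels L"
      using W_cons[OF am(1) am(3) False] am(2) NP_butlast[OF bq am(3) False] ws by (simp add: TT_mem)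
    have DKb: "DK L M (Suc (Suc (Suc k))) c (((tgt L (last ps), last ps # ws), j), butlast ps) = ?d + (- ?s) * ?Z"
      using False lp ws by (simp add: snoc_eq_iff_butlast)
    show ?thesis unfolding a' SK_right[OF fin_TT] using False mem DKb by simp
  qed
  have S: "(\<Sum>b\<in>TT L M (Suc k) y. SK L c b * DK L M (Suc (Suc k)) b a) =
     (if ps = [] \<or> [last ps, \<alpha>1] \<notin> rels L then ?d else 0) + ?s * (if ps = [] then 0 else ?Z)"
  proof -
    have "(\<Sum>b\<in>TT L M (Suc k) y. SK L c b * DK L M (Suc (Suc k)) b a) =
      (if (((src L (hd ws), tl ws), j), ps @ [hd ws]) \<in> TT L M (Suc k) y then SK L c (((src L (hd ws), tl ws), j), ps @ [hd ws]) else 0) +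
      ?s * (\<Sum>j'\<in>{0..<?n}. ?m $$ (j',j) *
        (if (((x, butlast ws), j'), ps) \<in> TT L M (Suc k) y then SK L c (((x, butlast ws), j'), ps) else 0))"
      unfolding a' by (rule DK_right[OF fin_TT])
    also have "(\<Sum>j'\<in>{0..<?n}. ?m $$ (j',j) *
        (if (((x, butlast ws), j'), ps) \<in> TT L M (Suc k) y then SK L c (((x, butlast ws), j'), ps) else 0)) =
        (if ps = [] then 0 else ?Z)"
    proof -
      have "(\<Sum>j'\<in>{0..<?n}. ?m $$ (j',j) *
        (if (((x, butlast ws), j'), ps) \<in> TT L M (Suc k) y then SK L c (((x, butlast ws), j'), ps) else 0)) =
        (\<Sum>j'\<in>{0..<?n}. ?m $$ (j',j) * SK L c (((x, butlast ws), j'), ps))"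
      proof (rule sum.cong)
        fix j' assume "j' \<in> {0..<?n}"
        then have "(((x, butlast ws), j'), ps) \<in> TT L M (Suc k) y" using wi am(3) by (simp add: TT_mem)
        then show "?m $$ (j',j) * (if (((x, butlast ws), j'), ps) \<in> TT L M (Suc k) y then SK L c (((x, butlast ws), j'), ps) else 0) =
          ?m $$ (j',j) * SK L c (((x, butlast ws), j'), ps)" by simp
      qed simp
      then show ?thesis by simp
    qed
    also have "(if (((src L (hd ws), tl ws), j), ps @ [hd ws]) \<in> TT L M (Suc k) y then SK L c (((src L (hd ws), tl ws), j), ps @ [hd ws]) else 0)
      = (if ps = [] \<or> [last ps, \<alpha>1] \<notin> rels L then ?d else 0)"
    proof -
      have "(((src L (hd ws), tl ws), j), ps @ [hd ws]) \<in> TT L M (Suc k) y \<longleftrightarrow> NP L (src L \<alpha>1) y (ps @ [\<alpha>1])"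
        using wt am ws by (simp add: TT_mem)
      also have "\<dots> \<longleftrightarrow> (ps = [] \<or> [last ps, \<alpha>1] \<notin> rels L)"
        using NP_snoc[OF bq am(3)] wt ws by simp
      finally have mem: "(((src L (hd ws), tl ws), j), ps @ [hd ws]) \<in> TT L M (Suc k) y \<longleftrightarrow> (ps = [] \<or> [last ps, \<alpha>1] \<notin> rels L)" .
      have "SK L c (((src L (hd ws), tl ws), j), ps @ [hd ws]) = ?d" using wt ws by simp
      then show ?thesis using mem by simp
    qed
    finally show ?thesis .
  qed
  have Z0: "?Z = 0" if "ps \<noteq> []" "[last ps, \<alpha>1] \<notin> rels L"
  proof (rule sum.neutral, rule ballI)
    fix j''
    show "?m $$ (j'',j) * dl c (tgt L (last ps), last ps # butlast ws) j'' (butlast ps) = (0::'k)"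
    proof (cases "dl c (tgt L (last ps), last ps # butlast ws) j'' (butlast ps) = (0::'k)")
      case False
      then have "(tgt L (last ps), last ps # butlast ws) \<in> W L (Suc (Suc k))" using dl_nz_mem(2)[OF c] by blast
      then have "Lantipath L (last ps # butlast ws)" by (simp add: W_mem)
      then have "[last ps, \<alpha>1] \<in> rels L" using bne by (simp add: Lantipath_Cons)
      then show ?thesis using that by simp
    qed simp
  qed
  show ?thesis
  proof (cases "ps = []")
    case True then show ?thesis using F S d by simp
  next
    case False
    show ?thesis
    proof (cases "[last ps, \<alpha>1] \<in> rels L")
      case True then show ?thesis using F S d False by (simp add: algebra_simps)
    next
      case nr: False then show ?thesis using F S d False Z0 by simp
    qed
  qed
qed

end


context kz begin

lemma sum_one_col:
  assumes "j < n"
  shows "(\<Sum>j'\<in>{0..<n}. 1\<^sub>m n $$ (j',j) * f j') = (f j :: 'k)"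
proof -
  have "(\<Sum>j'\<in>{0..<n}. 1\<^sub>m n $$ (j',j) * f j') = (\<Sum>j'\<in>{0..<n}. if j' = j then f j' else 0)"
    using assms by (intro sum.cong) auto
  then show ?thesis using assms by simp
qed

lemma S0K_snoc:
  assumes ch: "qchain L x y ps" and al: "\<alpha> \<in> arrs L" "tgt L \<alpha> = x" and j: "j < fst M (src L \<alpha>)"
  shows "S0K L M c (((src L \<alpha>, ws), j), ps @ [\<alpha>]) = dl c (x, [\<alpha>]) j ps +
    (\<Sum>k\<in>{0..<length ps}. \<Sum>j'\<in>{0..<fst M (src L (ps!k))}.
       (pm M x (drop (Suc k) ps) * snd M \<alpha>) $$ (j',j) * dl c (tgt L (ps!k), [ps!k]) j' (take k ps))"
proof -
  have last: "(\<Sum>j'\<in>{0..<fst M (src L ((ps @ [\<alpha>]) ! length ps))}.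
       pm M (src L \<alpha>) (drop (Suc (length ps)) (ps @ [\<alpha>])) $$ (j',j) *
       dl c (tgt L ((ps @ [\<alpha>]) ! length ps), [(ps @ [\<alpha>]) ! length ps]) j' (take (length ps) (ps @ [\<alpha>])))
     = dl c (x, [\<alpha>]) j ps"
    using sum_one_col[OF j, of "\<lambda>j'. dl c (tgt L \<alpha>, [\<alpha>]) j' ps"] al by (simp add: pm_def)
  have rest: "(\<Sum>k\<in>{0..<length ps}. \<Sum>j'\<in>{0..<fst M (src L ((ps @ [\<alpha>]) ! k))}.
       pm M (src L \<alpha>) (drop (Suc k) (ps @ [\<alpha>])) $$ (j',j) *
       dl c (tgt L ((ps @ [\<alpha>]) ! k), [(ps @ [\<alpha>]) ! k]) j' (take k (ps @ [\<alpha>]))) =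
     (\<Sum>k\<in>{0..<length ps}. \<Sum>j'\<in>{0..<fst M (src L (ps!k))}.
       (pm M x (drop (Suc k) ps) * snd M \<alpha>) $$ (j',j) * dl c (tgt L (ps!k), [ps!k]) j' (take k ps))"
  proof (rule sum.cong)
    fix k assume k: "k \<in> {0..<length ps}"
    then have k': "k < length ps" by simp
    have "pm M (src L \<alpha>) (drop (Suc k) ps @ [\<alpha>]) = pm M x (drop (Suc k) ps) * snd M \<alpha>"
      by (rule pm_snoc[OF bq M chain_drop[OF bq ch k'] al])
    then show "(\<Sum>j'\<in>{0..<fst M (src L ((ps @ [\<alpha>]) ! k))}.
       pm M (src L \<alpha>) (drop (Suc k) (ps @ [\<alpha>])) $$ (j',j) *
       dl c (tgt L ((ps @ [\<alpha>]) ! k), [(ps @ [\<alpha>]) ! k]) j' (take k (ps @ [\<alpha>]))) =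
      (\<Sum>j'\<in>{0..<fst M (src L (ps!k))}.
       (pm M x (drop (Suc k) ps) * snd M \<alpha>) $$ (j',j) * dl c (tgt L (ps!k), [ps!k]) j' (take k ps))"
      using k' by (simp add: nth_append)
  qed simp
  show ?thesis
    unfolding S0K.simps length_append_singleton sum.atLeast0_lessThan_Suc last rest by simp
qed

lemma H1:
  assumes y: "y \<in> verts L" and c: "c \<in> TT L M 1 y" and a: "a \<in> TT L M 1 y"
  shows "(\<Sum>b\<in>TT L M 2 y. DK L M 2 c b * SK L b a) +
         (\<Sum>b\<in>TT L M 0 y. S0K L M c b * DK L M 1 b a) = (if c = a then 1 else (0::'k))"
proof -
  obtain x ws j ps where a': "a = (((x,ws),j),ps)" by (metis prod.collapse)
  have am: "(x,ws) \<in> W L 1" "j < fst M (gsrc L (x,ws))" "NP L x y ps" using a a' by (auto simp: TT_mem)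
  obtain \<alpha> where ws: "ws = [\<alpha>]" using am(1) by (auto simp: W_mem length_Suc_conv)
  have al: "\<alpha> \<in> arrs L" "tgt L \<alpha> = x" using am(1) ws by (auto simp: W_mem Lantipath_def is_qpath_def)
  have xv: "x \<in> verts L" using al arr_verts by auto
  have jx: "j < fst M (src L \<alpha>)" using am(2) ws by (simp add: gsrc_def)
  have ch: "qchain L x y ps" using am(3) by (simp add: NP_chain)
  have Ac: "snd M \<alpha> \<in> carrier_mat (fst M x) (fst M (src L \<alpha>))" using M al by (auto simp: is_rep_def)
  let ?d = "dl c (x,ws) j ps :: 'k"
  let ?Z = "\<Sum>j''\<in>{0..<fst M (tgt L \<alpha>)}. snd M \<alpha> $$ (j'',j) * (dl c (tgt L (last ps), [last ps]) j'' (butlast ps) :: 'k)"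
  let ?Y = "\<Sum>k\<in>{0..<length ps}. \<Sum>j'\<in>{0..<fst M (src L (ps!k))}.
       (pm M x (drop (Suc k) ps) * snd M \<alpha>) $$ (j',j) * (dl c (tgt L (ps!k), [ps!k]) j' (take k ps) :: 'k)"
  have d: "?d = (if c = a then 1 else 0)" by (simp add: dl_def a')
  have F: "(\<Sum>b\<in>TT L M 2 y. DK L M 2 c b * SK L b a) =
      (if ps = [] then 0 else if [last ps, \<alpha>] \<in> rels L then ?d + ?Z else 0)"
  proof (cases "ps = []")
    case True then show ?thesis unfolding a' SK_right[OF fin_TT] by simp
  next
    case False
    have lp: "src L (last ps) = x" using NP_last_src[OF am(3) False] .
    have mem: "(((tgt L (last ps), last ps # ws), j), butlast ps) \<in> TT L M 2 y \<longleftrightarrow> [last ps, \<alpha>] \<in> rels L"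
      using W_cons[OF am(1) am(3) False] am(2) NP_butlast[OF bq am(3) False] ws by (simp add: TT_mem numeral_2_eq_2)
    have DKb: "DK L M 2 c (((tgt L (last ps), last ps # ws), j), butlast ps) = ?d + ?Z"
      using False lp ws by (simp add: snoc_eq_iff_butlast)
    show ?thesis unfolding a' SK_right[OF fin_TT] using False mem DKb by simp
  qed
  have S: "(\<Sum>b\<in>TT L M 0 y. S0K L M c b * DK L M 1 b a) =
      (if ps = [] \<or> [last ps, \<alpha>] \<notin> rels L then ?d + ?Y else 0) - ?Y"
  proof -
    have "(\<Sum>b\<in>TT L M 0 y. S0K L M c b * DK L M 1 b a) =
      (if (((src L (hd ws), tl ws), j), ps @ [hd ws]) \<in> TT L M 0 y then S0K L M c (((src L (hd ws), tl ws), j), ps @ [hd ws]) else 0) +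
      (-1)^1 * (\<Sum>j'\<in>{0..<fst M (tgt L (last ws))}. snd M (last ws) $$ (j',j) *
        (if (((x, butlast ws), j'), ps) \<in> TT L M 0 y then S0K L M c (((x, butlast ws), j'), ps) else 0))"
      unfolding a' by (rule DK_right[OF fin_TT])
    also have "(\<Sum>j'\<in>{0..<fst M (tgt L (last ws))}. snd M (last ws) $$ (j',j) *
        (if (((x, butlast ws), j'), ps) \<in> TT L M 0 y then S0K L M c (((x, butlast ws), j'), ps) else 0)) = ?Y"
    proof -
      have "(\<Sum>j'\<in>{0..<fst M (tgt L (last ws))}. snd M (last ws) $$ (j',j) *
        (if (((x, butlast ws), j'), ps) \<in> TT L M 0 y then S0K L M c (((x, butlast ws), j'), ps) else 0)) =
        (\<Sum>j''\<in>{0..<fst M x}. snd M \<alpha> $$ (j'',j) * (\<Sum>k\<in>{0..<length ps}. \<Sum>j'\<in>{0..<fst M (src L (ps!k))}.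
          pm M x (drop (Suc k) ps) $$ (j',j'') * dl c (tgt L (ps!k), [ps!k]) j' (take k ps)))"
      proof (rule sum.cong)
        show "{0..<fst M (tgt L (last ws))} = {0..<fst M x}" using ws al by simp
        fix j'' assume "j'' \<in> {0..<fst M x}"
        then have "(((x, butlast ws), j''), ps) \<in> TT L M 0 y" using xv am(3) ws by (simp add: TT_mem W_mem gsrc_def)
        then show "snd M (last ws) $$ (j'',j) *
          (if (((x, butlast ws), j''), ps) \<in> TT L M 0 y then S0K L M c (((x, butlast ws), j''), ps) else 0) =
          snd M \<alpha> $$ (j'',j) * (\<Sum>k\<in>{0..<length ps}. \<Sum>j'\<in>{0..<fst M (src L (ps!k))}.
          pm M x (drop (Suc k) ps) $$ (j',j'') * dl c (tgt L (ps!k), [ps!k]) j' (take k ps))"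
          using ws by simp
      qed
      also have "\<dots> = (\<Sum>k\<in>{0..<length ps}. \<Sum>j'\<in>{0..<fst M (src L (ps!k))}.
          (\<Sum>j''\<in>{0..<fst M x}. pm M x (drop (Suc k) ps) $$ (j',j'') * snd M \<alpha> $$ (j'',j)) *
            dl c (tgt L (ps!k), [ps!k]) j' (take k ps))"
        by (simp add: sum_distrib_left sum_distrib_right mult.assoc mult.left_commute sum.swap[of _ "{0..<fst M x}"])
      also have "\<dots> = ?Y"
      proof (intro sum.cong refl)
        fix k j' assume k: "k \<in> {0..<length ps}" and j': "j' \<in> {0..<fst M (src L (ps!k))}"
        have Pc: "pm M x (drop (Suc k) ps) \<in> carrier_mat (fst M (src L (ps!k))) (fst M x)"
          using chain_carrier[OF bq M chain_drop[OF bq ch]] k by simp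
        have "(\<Sum>j''\<in>{0..<fst M x}. pm M x (drop (Suc k) ps) $$ (j',j'') * snd M \<alpha> $$ (j'',j)) =
              (pm M x (drop (Suc k) ps) * snd M \<alpha>) $$ (j',j)"
          using mat_mult_entry[OF Pc Ac, of j' j] j' jx by simp
        then show "(\<Sum>j''\<in>{0..<fst M x}. pm M x (drop (Suc k) ps) $$ (j',j'') * snd M \<alpha> $$ (j'',j)) *
            dl c (tgt L (ps!k), [ps!k]) j' (take k ps) =
            (pm M x (drop (Suc k) ps) * snd M \<alpha>) $$ (j',j) * dl c (tgt L (ps!k), [ps!k]) j' (take k ps)" by simp
      qed
      finally show ?thesis .
    qed
    also have "(if (((src L (hd ws), tl ws), j), ps @ [hd ws]) \<in> TT L M 0 y then S0K L M c (((src L (hd ws), tl ws), j), ps @ [hd ws]) else 0)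
       = (if ps = [] \<or> [last ps, \<alpha>] \<notin> rels L then ?d + ?Y else 0)"
    proof -
      have "(((src L (hd ws), tl ws), j), ps @ [hd ws]) \<in> TT L M 0 y \<longleftrightarrow> NP L (src L \<alpha>) y (ps @ [\<alpha>])"
        using ws jx al arr_verts by (simp add: TT_mem W_mem gsrc_def)
      also have "\<dots> \<longleftrightarrow> (ps = [] \<or> [last ps, \<alpha>] \<notin> rels L)" using NP_snoc[OF bq am(3) al] .
      finally have mem: "(((src L (hd ws), tl ws), j), ps @ [hd ws]) \<in> TT L M 0 y \<longleftrightarrow> (ps = [] \<or> [last ps, \<alpha>] \<notin> rels L)" .
      have "S0K L M c (((src L (hd ws), tl ws), j), ps @ [hd ws]) = ?d + ?Y"
        using S0K_snoc[OF ch al jx, of c "[]"] ws by simp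
      then show ?thesis using mem by simp
    qed
    finally show ?thesis by simp
  qed
  have YZ: "?Y = ?Z" if ne: "ps \<noteq> []" and r: "[last ps, \<alpha>] \<in> rels L"
  proof -
    obtain m where m: "length ps = Suc m" using ne by (cases ps) auto
    have "?Y = (\<Sum>k\<in>{0..<m}. \<Sum>j'\<in>{0..<fst M (src L (ps!k))}.
       (pm M x (drop (Suc k) ps) * snd M \<alpha>) $$ (j',j) * dl c (tgt L (ps!k), [ps!k]) j' (take k ps)) +
       (\<Sum>j'\<in>{0..<fst M (src L (ps!m))}.
       (pm M x (drop (Suc m) ps) * snd M \<alpha>) $$ (j',j) * dl c (tgt L (ps!m), [ps!m]) j' (take m ps))"
      unfolding m by (rule sum.atLeast0_lessThan_Suc)
    also have "(\<Sum>k\<in>{0..<m}. \<Sum>j'\<in>{0..<fst M (src L (ps!k))}.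
       (pm M x (drop (Suc k) ps) * snd M \<alpha>) $$ (j',j) * dl c (tgt L (ps!k), [ps!k]) j' (take k ps)) = 0"
    proof (intro sum.neutral ballI)
      fix k j' assume k: "k \<in> {0..<m}" and j': "j' \<in> {0..<fst M (src L (ps!k))}"
      have k': "k < length ps" using k m by simp
      have ne': "drop (Suc k) ps \<noteq> []" using k m by simp
      have ld: "last (drop (Suc k) ps) = last ps" using ne' by (simp add: last_drop)
      have "pm M x (drop (Suc k) ps) * snd M \<alpha> = 0\<^sub>m (fst M (src L (ps!k))) (fst M (src L \<alpha>))"
        using pm_snoc_zero[OF bq M chain_drop[OF bq ch k'] al ne'] r ld by simp
      then show "(pm M x (drop (Suc k) ps) * snd M \<alpha>) $$ (j',j) * dl c (tgt L (ps!k), [ps!k]) j' (take k ps) = (0::'k)"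
        using j' jx by simp
    qed
    also have "(\<Sum>j'\<in>{0..<fst M (src L (ps!m))}.
       (pm M x (drop (Suc m) ps) * snd M \<alpha>) $$ (j',j) * dl c (tgt L (ps!m), [ps!m]) j' (take m ps)) = ?Z"
    proof -
      have pl: "ps!m = last ps" "take m ps = butlast ps" "drop (Suc m) ps = []" using m ne
        by (auto simp: last_conv_nth butlast_conv_take)
      have sx: "src L (last ps) = x" using NP_last_src[OF am(3) ne] .
      have "pm M x (drop (Suc m) ps) * snd M \<alpha> = snd M \<alpha>" using pl(3) Ac by (simp add: pm_def)
      then show ?thesis using pl sx al by simp
    qed
    finally show ?thesis by simp
  qed
  show ?thesis
  proof (cases "ps = [] \<or> [last ps, \<alpha>] \<notin> rels L")
    case True then show ?thesis using F S d by auto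
  next
    case False
    then have ne: "ps \<noteq> []" and r: "[last ps, \<alpha>] \<in> rels L" by auto
    show ?thesis using F S d YZ[OF ne r] ne r by simp
  qed
qed

lemma sum_right_nested:
  assumes "finite B"
  shows "(\<Sum>b\<in>B. F b * (\<Sum>k\<in>K. \<Sum>j''\<in>J k. cf k j'' * dl b (w k) j'' (p k))) =
    (\<Sum>k\<in>K. \<Sum>j''\<in>J k. cf k j'' * (if ((w k, j''), p k) \<in> B then F ((w k, j''), p k) else (0::'k)))"
proof -
  have "(\<Sum>b\<in>B. F b * (\<Sum>k\<in>K. \<Sum>j''\<in>J k. cf k j'' * dl b (w k) j'' (p k))) =
        (\<Sum>k\<in>K. \<Sum>j''\<in>J k. cf k j'' * (\<Sum>b\<in>B. F b * dl b (w k) j'' (p k)))"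
    by (simp add: sum_distrib_left sum.swap[of _ B] mult.left_commute)
  then show ?thesis by (simp add: sum_dl_r[OF assms])
qed

lemma H0:
  assumes y: "y \<in> verts L" and c: "c \<in> TT L M 0 y" and a: "a \<in> TT L M 0 y"
  shows "(\<Sum>b\<in>TT L M 1 y. DK L M 1 c b * S0K L M b a) +
         (\<Sum>j'\<in>{0..<fst M y}. SmK y c j' * EK M j' a) = (if c = a then 1 else (0::'k))"
proof -
  obtain x ws j ps where a': "a = (((x,ws),j),ps)" by (metis prod.collapse)
  have am: "(x,ws) \<in> W L 0" "j < fst M (gsrc L (x,ws))" "NP L x y ps" using a a' by (auto simp: TT_mem)
  have ws: "ws = []" and xv: "x \<in> verts L" using am(1) by (auto simp: W_mem)
  have jx: "j < fst M x" using am(2) ws by (simp add: gsrc_def)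
  have ch: "qchain L x y ps" using am(3) by (simp add: NP_chain)
  define vk where "vk k = (if k < length ps then tgt L (ps!k) else x)" for k
  define F where "F k = (\<Sum>j''\<in>{0..<fst M (vk k)}. pm M x (drop k ps) $$ (j'',j) * (dl c (vk k, []) j'' (take k ps) :: 'k))" for k
  have pk: "ps!k \<in> arrs L" if "k < length ps" for k using am(3) that by (auto simp: NP_def qchain_def is_qpath_def)
  have A: "(\<Sum>b\<in>TT L M 1 y. DK L M 1 c b * S0K L M b a) =
     (\<Sum>k\<in>{0..<length ps}. \<Sum>j''\<in>{0..<fst M (src L (ps!k))}.
        pm M x (drop (Suc k) ps) $$ (j'',j) * DK L M 1 c (((tgt L (ps!k), [ps!k]), j''), take k ps))"
  proof -
    have "(\<Sum>b\<in>TT L M 1 y. DK L M 1 c b * S0K L M b a) =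
      (\<Sum>k\<in>{0..<length ps}. \<Sum>j''\<in>{0..<fst M (src L (ps!k))}. pm M x (drop (Suc k) ps) $$ (j'',j) *
        (if (((tgt L (ps!k), [ps!k]), j''), take k ps) \<in> TT L M 1 y then DK L M 1 c (((tgt L (ps!k), [ps!k]), j''), take k ps) else 0))"
      unfolding a' S0K.simps by (rule sum_right_nested[OF fin_TT])
    also have "\<dots> = (\<Sum>k\<in>{0..<length ps}. \<Sum>j''\<in>{0..<fst M (src L (ps!k))}.
        pm M x (drop (Suc k) ps) $$ (j'',j) * DK L M 1 c (((tgt L (ps!k), [ps!k]), j''), take k ps))"
    proof (intro sum.cong refl)
      fix k j'' assume k: "k \<in> {0..<length ps}" and j'': "j'' \<in> {0..<fst M (src L (ps!k))}"
      have "(((tgt L (ps!k), [ps!k]), j''), take k ps) \<in> TT L M 1 y"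
        using k j'' pk NP_take[OF bq am(3)] by (simp add: TT_mem W_mem gsrc_def Lantipath_def is_qpath_def)
      then show "pm M x (drop (Suc k) ps) $$ (j'',j) *
        (if (((tgt L (ps!k), [ps!k]), j''), take k ps) \<in> TT L M 1 y then DK L M 1 c (((tgt L (ps!k), [ps!k]), j''), take k ps) else 0) =
        pm M x (drop (Suc k) ps) $$ (j'',j) * DK L M 1 c (((tgt L (ps!k), [ps!k]), j''), take k ps)" by simp
    qed
    finally show ?thesis .
  qed
  have B: "(\<Sum>j''\<in>{0..<fst M (src L (ps!k))}.
        pm M x (drop (Suc k) ps) $$ (j'',j) * DK L M 1 c (((tgt L (ps!k), [ps!k]), j''), take k ps)) = F (Suc k) - F k"
    if k: "k < length ps" for k
  proof -
    let ?Mk = "snd M (ps!k)"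
    let ?P = "pm M x (drop (Suc k) ps)"
    have Mc: "?Mk \<in> carrier_mat (fst M (tgt L (ps!k))) (fst M (src L (ps!k)))" using M pk[OF k] by (auto simp: is_rep_def)
    have Pc: "?P \<in> carrier_mat (fst M (src L (ps!k))) (fst M x)"
      by (rule chain_carrier[OF bq M chain_drop[OF bq ch k]])
    have vs: "vk (Suc k) = src L (ps!k)"
    proof (cases "Suc k < length ps")
      case True
      then have "src L (ps!k) = tgt L (ps!Suc k)" using am(3) by (auto simp: NP_def qchain_def is_qpath_def)
      then show ?thesis using True by (simp add: vk_def)
    next
      case False
      then have "Suc k = length ps" using k by simp
      then have "ps!k = last ps" by (metis diff_Suc_1 last_conv_nth list.size(3) nat.distinct(1))
      moreover have "ps \<noteq> []" using k by auto
      ultimately show ?thesis using NP_last_src[OF am(3)] False k by (auto simp: vk_def)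
    qed
    have vk: "vk k = tgt L (ps!k)" using k by (simp add: vk_def)
    have tk: "take k ps @ [ps!k] = take (Suc k) ps" using k by (simp add: take_Suc_conv_app_nth)
    have DKe: "DK L M 1 c (((tgt L (ps!k), [ps!k]), j''), take k ps) =
        dl c (src L (ps!k), []) j'' (take (Suc k) ps) -
        (\<Sum>j'''\<in>{0..<fst M (tgt L (ps!k))}. ?Mk $$ (j''',j'') * dl c (tgt L (ps!k), []) j''' (take k ps))" for j''
      using tk by simp
    have "(\<Sum>j''\<in>{0..<fst M (src L (ps!k))}. ?P $$ (j'',j) * DK L M 1 c (((tgt L (ps!k), [ps!k]), j''), take k ps)) =
      (\<Sum>j''\<in>{0..<fst M (src L (ps!k))}. ?P $$ (j'',j) * dl c (src L (ps!k), []) j'' (take (Suc k) ps)) -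
      (\<Sum>j'''\<in>{0..<fst M (tgt L (ps!k))}. (\<Sum>j''\<in>{0..<fst M (src L (ps!k))}. ?Mk $$ (j''',j'') * ?P $$ (j'',j)) *
           dl c (tgt L (ps!k), []) j''' (take k ps))"
      unfolding DKe
      by (simp add: right_diff_distrib sum_subtractf sum_distrib_left sum_distrib_right sum.swap[of _ "{0..<fst M (src L (ps!k))}"] mult.left_commute mult.assoc)
    also have "(\<Sum>j''\<in>{0..<fst M (src L (ps!k))}. ?P $$ (j'',j) * dl c (src L (ps!k), []) j'' (take (Suc k) ps)) = F (Suc k)"
      unfolding F_def vs by simp
    also have "(\<Sum>j'''\<in>{0..<fst M (tgt L (ps!k))}. (\<Sum>j''\<in>{0..<fst M (src L (ps!k))}. ?Mk $$ (j''',j'') * ?P $$ (j'',j)) *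
           dl c (tgt L (ps!k), []) j''' (take k ps)) = F k"
      unfolding F_def vk
    proof (intro sum.cong refl)
      fix j''' assume j''': "j''' \<in> {0..<fst M (tgt L (ps!k))}"
      have "(\<Sum>j''\<in>{0..<fst M (src L (ps!k))}. ?Mk $$ (j''',j'') * ?P $$ (j'',j)) = (?Mk * ?P) $$ (j''',j)"
        using mat_mult_entry[OF Mc Pc, of j''' j] j''' jx by simp
      also have "?Mk * ?P = pm M x (drop k ps)" using pm_drop[OF bq M ch k] by simp
      finally show "(\<Sum>j''\<in>{0..<fst M (src L (ps!k))}. ?Mk $$ (j''',j'') * ?P $$ (j'',j)) *
           dl c (tgt L (ps!k), []) j''' (take k ps) = pm M x (drop k ps) $$ (j''',j) * dl c (tgt L (ps!k), []) j''' (take k ps)"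
        by simp
    qed
    finally show ?thesis .
  qed
  have C: "(\<Sum>j'\<in>{0..<fst M y}. SmK y c j' * EK M j' a) = F 0"
  proof -
    have v0: "vk 0 = y"
    proof (cases "ps = []")
      case True then show ?thesis using am(3) by (simp add: vk_def)
    next
      case False
      then have "tgt L (hd ps) = y" using am(3) by (auto simp: NP_def qchain_def)
      then show ?thesis using False by (simp add: vk_def hd_conv_nth)
    qed
    show ?thesis unfolding F_def v0 SmK_def a' by (simp add: mult.commute)
  qed
  have D: "F (length ps) = (if c = a then 1 else 0)"
  proof -
    have "F (length ps) = (\<Sum>j''\<in>{0..<fst M x}. 1\<^sub>m (fst M x) $$ (j'',j) * dl c (x, []) j'' ps)"
      by (simp add: F_def vk_def pm_def)
    also have "\<dots> = dl c (x, []) j ps" by (rule sum_one_col[OF jx])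
    finally show ?thesis by (simp add: dl_def a' ws)
  qed
  have "(\<Sum>b\<in>TT L M 1 y. DK L M 1 c b * S0K L M b a) = (\<Sum>k<length ps. F (Suc k) - F k)"
    unfolding A using B by (simp add: atLeast0LessThan)
  also have "\<dots> = F (length ps) - F 0" by (rule sum_lessThan_telescope)
  finally show ?thesis using C D by simp
qed

end


context kz begin

definition eps :: "'v \<Rightarrow> 'k mat" where
  "eps y = mkl [0..<fst M y] (enum (TT L M 0 y)) (EK M)"
definition dd :: "nat \<Rightarrow> 'v \<Rightarrow> 'k mat" where
  "dd i y = mkl (enum (TT L M (i-1) y)) (enum (TT L M i y)) (DK L M i)"
definition Sm :: "'v \<Rightarrow> 'k mat" where
  "Sm y = mkl (enum (TT L M 0 y)) [0..<fst M y] (SmK y)"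
definition SS :: "nat \<Rightarrow> 'v \<Rightarrow> 'k mat" where
  "SS i y = mkl (enum (TT L M (Suc i) y)) (enum (TT L M i y)) (if i = 0 then S0K L M else SK L)"

lemma Mc: "\<gamma> \<in> arrs L \<Longrightarrow> snd M \<gamma> \<in> carrier_mat (fst M (tgt L \<gamma>)) (fst M (src L \<gamma>))"
  using M by (auto simp: is_rep_def)

lemma eps_hom: "is_hom L (KP L M 0) M eps"
  unfolding is_hom_def
proof (intro conjI ballI)
  fix x assume "x \<in> verts L"
  show "eps x \<in> carrier_mat (fst M x) (fst (KP L M 0) x)" unfolding eps_def using eT by simp
next
  fix \<gamma> assume ga: "\<gamma> \<in> arrs L"
  have "eps (tgt L \<gamma>) * snd (KP L M 0) \<gamma> =
     mkl [0..<fst M (tgt L \<gamma>)] (enum (TT L M 0 (src L \<gamma>))) (\<lambda>j' a. \<Sum>b\<in>TT L M 0 (tgt L \<gamma>). EK M j' b * fK \<gamma> b a)"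
    unfolding eps_def KP_snd using mkl_mult[OF eT(2)] eT(1) by simp
  also have "\<dots> = mkl [0..<fst M (tgt L \<gamma>)] (enum (TT L M 0 (src L \<gamma>)))
        (\<lambda>j' a. \<Sum>j\<in>set [0..<fst M (src L \<gamma>)]. snd M \<gamma> $$ (j',j) * EK M j a)"
    by (rule mkl_cong) (use Homeps[OF ga] eT(1) in auto)
  also have "\<dots> = mkl [0..<fst M (tgt L \<gamma>)] [0..<fst M (src L \<gamma>)] (\<lambda>i j. snd M \<gamma> $$ (i,j)) * eps (src L \<gamma>)"
    unfolding eps_def by (rule mkl_mult[symmetric]) simp
  also have "\<dots> = snd M \<gamma> * eps (src L \<gamma>)" using mat_as_mkl[OF Mc[OF ga]] by simp
  finally show "eps (tgt L \<gamma>) * snd (KP L M 0) \<gamma> = snd M \<gamma> * eps (src L \<gamma>)" .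
qed

lemma dd_hom: "is_hom L (KP L M (Suc i)) (KP L M i) (dd (Suc i))"
  unfolding is_hom_def
proof (intro conjI ballI)
  fix x assume "x \<in> verts L"
  show "dd (Suc i) x \<in> carrier_mat (fst (KP L M i) x) (fst (KP L M (Suc i)) x)" unfolding dd_def using eT by simp
next
  fix \<gamma> assume ga: "\<gamma> \<in> arrs L"
  have "dd (Suc i) (tgt L \<gamma>) * snd (KP L M (Suc i)) \<gamma> =
     mkl (enum (TT L M i (tgt L \<gamma>))) (enum (TT L M (Suc i) (src L \<gamma>)))
       (\<lambda>c a. \<Sum>b\<in>TT L M (Suc i) (tgt L \<gamma>). DK L M (Suc i) c b * fK \<gamma> b a)"
    unfolding dd_def KP_snd by (simp add: mkl_mult[OF eT(2)] eT(1))
  also have "\<dots> = mkl (enum (TT L M i (tgt L \<gamma>))) (enum (TT L M (Suc i) (src L \<gamma>)))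
       (\<lambda>c a. \<Sum>b\<in>TT L M i (src L \<gamma>). fK \<gamma> c b * DK L M (Suc i) b a)"
    by (rule mkl_cong) (use Homd[OF ga] eT(1) in auto)
  also have "\<dots> = snd (KP L M i) \<gamma> * dd (Suc i) (src L \<gamma>)"
    unfolding dd_def KP_snd by (simp add: mkl_mult[OF eT(2)] eT(1))
  finally show "dd (Suc i) (tgt L \<gamma>) * snd (KP L M (Suc i)) \<gamma> = snd (KP L M i) \<gamma> * dd (Suc i) (src L \<gamma>)" .
qed

lemma h_m: "x \<in> verts L \<Longrightarrow> eps x * Sm x = 1\<^sub>m (fst M x)"
proof -
  assume x: "x \<in> verts L"
  have "eps x * Sm x = mkl [0..<fst M x] [0..<fst M x] (\<lambda>j' j. \<Sum>b\<in>TT L M 0 x. EK M j' b * SmK x b j)"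
    unfolding eps_def Sm_def using mkl_mult[OF eT(2)] eT(1) by simp
  also have "\<dots> = mkl [0..<fst M x] [0..<fst M x] (\<lambda>j' j. if j' = j then 1 else 0)"
    by (rule mkl_cong) (use Hm[OF x] in auto)
  also have "\<dots> = 1\<^sub>m (fst M x)" using mkl_one[of "[0..<fst M x]"] by simp
  finally show ?thesis .
qed

lemma z0: "x \<in> verts L \<Longrightarrow> eps x * dd 1 x = 0\<^sub>m (fst M x) (fst (KP L M 1) x)"
proof -
  assume x: "x \<in> verts L"
  have "eps x * dd 1 x = mkl [0..<fst M x] (enum (TT L M 1 x)) (\<lambda>j' a. \<Sum>b\<in>TT L M 0 x. EK M j' b * DK L M 1 b a)"
    unfolding eps_def dd_def using mkl_mult[OF eT(2)] eT(1) by simp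
  also have "\<dots> = mkl [0..<fst M x] (enum (TT L M 1 x)) (\<lambda>j' a. 0)"
    by (rule mkl_cong) (use Zeps[OF x] eT(1) in auto)
  also have "\<dots> = 0\<^sub>m (fst M x) (fst (KP L M 1) x)" by (simp add: mkl_zero eT(3))
  finally show ?thesis .
qed

lemma zi: "x \<in> verts L \<Longrightarrow> dd (Suc i) x * dd (Suc (Suc i)) x = 0\<^sub>m (fst (KP L M i) x) (fst (KP L M (Suc (Suc i))) x)"
proof -
  assume x: "x \<in> verts L"
  have "dd (Suc i) x * dd (Suc (Suc i)) x = mkl (enum (TT L M i x)) (enum (TT L M (Suc (Suc i)) x))
      (\<lambda>c a. \<Sum>b\<in>TT L M (Suc i) x. DK L M (Suc i) c b * DK L M (Suc (Suc i)) b a)"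
    unfolding dd_def using mkl_mult[OF eT(2)] eT(1) by simp
  also have "\<dots> = mkl (enum (TT L M i x)) (enum (TT L M (Suc (Suc i)) x)) (\<lambda>c a. 0)"
    by (rule mkl_cong) (use Zd[OF x] eT(1) in auto)
  also have "\<dots> = 0\<^sub>m (fst (KP L M i) x) (fst (KP L M (Suc (Suc i))) x)" by (simp add: mkl_zero eT(3))
  finally show ?thesis .
qed

lemma h0: "x \<in> verts L \<Longrightarrow> dd 1 x * SS 0 x + Sm x * eps x = 1\<^sub>m (fst (KP L M 0) x)"
proof -
  assume x: "x \<in> verts L"
  have "dd 1 x * SS 0 x + Sm x * eps x = mkl (enum (TT L M 0 x)) (enum (TT L M 0 x))
     (\<lambda>c a. (\<Sum>b\<in>TT L M 1 x. DK L M 1 c b * S0K L M b a) + (\<Sum>j'\<in>set [0..<fst M x]. SmK x c j' * EK M j' a))"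
    unfolding dd_def SS_def Sm_def eps_def by (simp add: mkl_mult[OF eT(2)] mkl_mult[of "[0..<fst M x]"] eT(1) mkl_add)
  also have "\<dots> = mkl (enum (TT L M 0 x)) (enum (TT L M 0 x)) (\<lambda>c a. if c = a then 1 else 0)"
    by (rule mkl_cong) (use H0[OF x] eT(1) in auto)
  also have "\<dots> = 1\<^sub>m (fst (KP L M 0) x)" using mkl_one[OF eT(2)] eT(3) by simp
  finally show ?thesis .
qed

lemma h1: "x \<in> verts L \<Longrightarrow> dd 2 x * SS 1 x + SS 0 x * dd 1 x = 1\<^sub>m (fst (KP L M 1) x)"
proof -
  assume x: "x \<in> verts L"
  have "dd 2 x * SS 1 x + SS 0 x * dd 1 x = mkl (enum (TT L M 1 x)) (enum (TT L M 1 x))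
     (\<lambda>c a. (\<Sum>b\<in>TT L M 2 x. DK L M 2 c b * SK L b a) + (\<Sum>b\<in>TT L M 0 x. S0K L M c b * DK L M 1 b a))"
    unfolding dd_def SS_def by (simp add: mkl_mult[OF eT(2)] eT(1) mkl_add numeral_2_eq_2)
  also have "\<dots> = mkl (enum (TT L M 1 x)) (enum (TT L M 1 x)) (\<lambda>c a. if c = a then 1 else 0)"
    by (rule mkl_cong) (use H1[OF x] eT(1) in auto)
  also have "\<dots> = 1\<^sub>m (fst (KP L M 1) x)" using mkl_one[OF eT(2)] eT(3) by simp
  finally show ?thesis .
qed

lemma hk: "x \<in> verts L \<Longrightarrow> dd (Suc (Suc (Suc k))) x * SS (Suc (Suc k)) x + SS (Suc k) x * dd (Suc (Suc k)) x
   = 1\<^sub>m (fst (KP L M (Suc (Suc k))) x)"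
proof -
  assume x: "x \<in> verts L"
  have "dd (Suc (Suc (Suc k))) x * SS (Suc (Suc k)) x + SS (Suc k) x * dd (Suc (Suc k)) x =
     mkl (enum (TT L M (Suc (Suc k)) x)) (enum (TT L M (Suc (Suc k)) x))
     (\<lambda>c a. (\<Sum>b\<in>TT L M (Suc (Suc (Suc k))) x. DK L M (Suc (Suc (Suc k))) c b * SK L b a) +
            (\<Sum>b\<in>TT L M (Suc k) x. SK L c b * DK L M (Suc (Suc k)) b a))"
    unfolding dd_def SS_def by (simp add: mkl_mult[OF eT(2)] eT(1) mkl_add)
  also have "\<dots> = mkl (enum (TT L M (Suc (Suc k)) x)) (enum (TT L M (Suc (Suc k)) x)) (\<lambda>c a. if c = a then 1 else 0)"
    by (rule mkl_cong) (use Hi[OF x] eT(1) in auto)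
  also have "\<dots> = 1\<^sub>m (fst (KP L M (Suc (Suc k))) x)" using mkl_one[OF eT(2)] eT(3) by simp
  finally show ?thesis .
qed

lemma TT_empty:
  assumes bnd: "\<And>xs. Lantipath L xs \<Longrightarrow> length xs \<le> card (arrs L)"
  shows "TT L M (Suc (card (arrs L))) y = {}"
proof -
  have "W L (Suc (card (arrs L))) = {}"
  proof (rule equals0I)
    fix w assume w: "w \<in> W L (Suc (card (arrs L)))"
    obtain x ws where xw: "w = (x,ws)" by (cases w)
    have "length ws = Suc (card (arrs L))" "ws \<noteq> []" "Lantipath L ws" using w xw by (auto simp: W_def split: if_splits)
    then show False using bnd[of ws] by simp
  qed
  then show ?thesis by (auto simp: TT_def FB_def KG_def)
qed

theorem pd_bound:
  assumes bnd: "\<And>xs. Lantipath L xs \<Longrightarrow> length xs \<le> card (arrs L)"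
  shows "pd_le L M (Suc (card (arrs L)))"
proof (rule homotopy_pd_le[where P = "KP L M" and \<epsilon> = eps and dd = dd and Sm = Sm and S = SS])
  let ?n = "Suc (card (arrs L))"
  show "1 \<le> ?n" by simp
  show "\<And>i. i \<le> ?n \<Longrightarrow> projective_rep L (KP L M i)" by (rule KP_proj)
  show "is_hom L (KP L M 0) M eps" by (rule eps_hom)
  show "\<And>i. 1 \<le> i \<Longrightarrow> i \<le> ?n \<Longrightarrow> is_hom L (KP L M i) (KP L M (i - 1)) (dd i)"
  proof -
    fix i :: nat assume "1 \<le> i"
    then obtain i' where "i = Suc i'" by (cases i) auto
    then show "is_hom L (KP L M i) (KP L M (i - 1)) (dd i)" using dd_hom by simp
  qed
  show "\<And>x. x \<in> verts L \<Longrightarrow> Sm x \<in> carrier_mat (fst (KP L M 0) x) (fst M x)"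
    unfolding Sm_def using eT by simp
  show "\<And>x i. x \<in> verts L \<Longrightarrow> i < ?n \<Longrightarrow> SS i x \<in> carrier_mat (fst (KP L M (Suc i)) x) (fst (KP L M i) x)"
    unfolding SS_def using eT by simp
  show "\<And>x. x \<in> verts L \<Longrightarrow> eps x * Sm x = 1\<^sub>m (fst M x)" by (rule h_m)
  show "\<And>x. x \<in> verts L \<Longrightarrow> eps x * dd 1 x = 0\<^sub>m (fst M x) (fst (KP L M 1) x)" by (rule z0)
  show "\<And>x i. x \<in> verts L \<Longrightarrow> 1 \<le> i \<Longrightarrow> i < ?n \<Longrightarrow>
      dd i x * dd (Suc i) x = 0\<^sub>m (fst (KP L M (i - 1)) x) (fst (KP L M (Suc i)) x)"
  proof -
    fix x and i :: nat assume x: "x \<in> verts L" and "1 \<le> i"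
    then obtain i' where "i = Suc i'" by (cases i) auto
    then show "dd i x * dd (Suc i) x = 0\<^sub>m (fst (KP L M (i - 1)) x) (fst (KP L M (Suc i)) x)" using zi[OF x] by simp
  qed
  show "\<And>x. x \<in> verts L \<Longrightarrow> dd 1 x * SS 0 x + Sm x * eps x = 1\<^sub>m (fst (KP L M 0) x)" by (rule h0)
  show "\<And>x i. x \<in> verts L \<Longrightarrow> 1 \<le> i \<Longrightarrow> i < ?n \<Longrightarrow>
      dd (Suc i) x * SS i x + SS (i - 1) x * dd i x = 1\<^sub>m (fst (KP L M i) x)"
  proof -
    fix x and i :: nat assume x: "x \<in> verts L" and i: "1 \<le> i"
    show "dd (Suc i) x * SS i x + SS (i - 1) x * dd i x = 1\<^sub>m (fst (KP L M i) x)"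
    proof (cases "i = 1")
      case True then show ?thesis using h1[OF x] by (simp add: numeral_2_eq_2)
    next
      case False
      then obtain k where "i = Suc (Suc k)" using i by (metis One_nat_def Suc_le_D le_SucE le_zero_eq not0_implies_Suc)
      then show ?thesis using hk[OF x] by simp
    qed
  qed
  show "\<And>x. x \<in> verts L \<Longrightarrow> SS (?n - 1) x * dd ?n x = 1\<^sub>m (fst (KP L M ?n) x)"
  proof -
    fix x assume x: "x \<in> verts L"
    have z: "fst (KP L M ?n) x = 0" using TT_empty[OF bnd] by simp
    have e: "enum (TT L M ?n x) = []" using eT(3)[of ?n x] TT_empty[OF bnd] by simp
    have c1: "SS (?n - 1) x \<in> carrier_mat 0 (card (TT L M (?n - 1) x))"
      unfolding SS_def using e eT(3) by simp
    have c2: "dd ?n x \<in> carrier_mat (card (TT L M (?n - 1) x)) 0"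
      unfolding dd_def using e eT(3) by simp
    have "SS (?n - 1) x * dd ?n x \<in> carrier_mat 0 0" using c1 c2 by simp
    then show "SS (?n - 1) x * dd ?n x = 1\<^sub>m (fst (KP L M ?n) x)" unfolding z by (auto intro!: eq_matI)
  qed
qed

end


theorem lemma1p1:
  fixes L :: "('v,'a) bquiver"
  assumes "alg_closed TYPE('k::field)"
    and "gentle L"
    and "AG_norm L = 1"
  shows "finite_gldim L TYPE('k)"
proof -
  have bnd: "\<And>xs. Lantipath L xs \<Longrightarrow> length xs \<le> card (arrs L)"
    using AG_bounded[OF assms(2) assms(3)] by blast
  show ?thesis
    unfolding finite_gldim_def
  proof (intro exI allI impI)
    fix M :: "('v,'a,'k) qrep" assume M: "is_rep L M"
    interpret kz L M using assms(2) M by unfold_locales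
    show "pd_le L M (Suc (card (arrs L)))" by (rule pd_bound[OF bnd])
  qed
qed


end
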